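(* Let $D$ and $D'$ be oriented knotoid diagrams representing the same spherical knotoid. Then $\langle D\rangle_L=\langle D'\rangle_L$ in the module $S(G)$.
   Context: A knotoid diagram is the image of a generic immersion of $[0,1]$ in $\mathbb{R}^2$ (endpoints distinct from double points) with every double point endowed with over/under crossing information; it is oriented from $0$ to $1$. A spherical knotoid is an equivalence class of knotoid diagrams, viewed in $S^2=\mathbb{R}^2\cup\{\infty\}$, modulo isotopy and Reidemeister moves in $S^2$ (performed in disks not containing the endpoints); equivalently, planar knotoids modulo the additional "pulling over infinity" move, which moves an arc of the diagram across the point $\infty$. Knotoid label graphs. A knotoid label graph is a planar connected graph having $2n$ trivalent vertices ($n$ a nonnegative integer) and, in addition, two univalent endpoint vertices: a tail, whose single (thick) edge leaves it, and a head, whose single (thick) edge enters it. Each trivalent vertex is an empty or a solid circle; each edge is thin or thick, exactly one thin edge at each trivalent vertex; thick edges are oriented (closed thick loops allowed). At a trivalent vertex either the thick edges are coherently oriented and the thin edge unoriented, or both thick edges enter or both leave and the thin edge is oriented so that the in-degree is $0$ or $3$. Smoothing. For an oriented knotoid diagram $D$ with $n$ crossings: at a crossing, the oriented smoothing (arcs coherently oriented) and the disoriented smoothing (one arc has both ends pointing towards the site, the other both away). For a positive crossing the $A$-smoothing is oriented and the $B$-smoothing disoriented; for a negative crossing the $A$-smoothing is disoriented and $B$ oriented. Smoothing: replace the crossing by a smoothing (thick arcs, inherited orientations), join the arcs by a new thin segment whose endpoints are new vertices, both empty for $A$, both solid for $B$; unoriented for the oriented smoothing, otherwise oriented from the vertex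 whose thick edges both leave to the vertex whose thick edges both enter. A state $s$ chooses $A$ or $B$ at each crossing; $G_s(D)$ is the resulting knotoid label graph. For a tangle $T$ in a disk, $\langle T\rangle$ is the formal sum over states of its smoothed pictures. $S(G)$ is the $\mathbb{Z}$-module generated by knotoid label graphs modulo the "pulling over infinity" move for graphs (moving an edge across $\infty$) and the local relations $\langle T\rangle=\langle T'\rangle$ for (R1.1) $T$ a one-crossing curl with positive crossing, $T'$ an arc; (R1.2) same with negative crossing; (R2.1)–(R2.4) $T$ the two-crossing tangle of the second Reidemeister move, $T'$ two crossingless strands, in four oriented versions (same direction, either on top; opposite, either on top); (R3.1) $T,T'$ the two sides of an oriented third Reidemeister move, orientations fixed so that these oriented moves generate all oriented Reidemeister moves. The label bracket is $\langle D\rangle_L=\sum_s G_s(D)\in S(G)$ over all $2^n$ states. *)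

theory Defs
  imports Main "HOL-Library.Function_Algebras"
begin

text \<open>
All diagrams and graphs living in the 2-sphere are encoded as
decorated combinatorial maps (rotation systems): a finite set of darts (half-edges),
a fixed-point-free involution alph (the two halves of an edge), and a permutation sig
(counterclockwise rotation of the darts around their vertex).  A connected map is
embedded in the sphere iff V - E + F = 2; two embedded graphs are isotopic in the
sphere iff the maps are isomorphic.  This automatically builds in the
"pulling over infinity" move.  Bivalent vertices of kind Mark are auxiliary
subdivision points of an edge (the quotient by subdivision is always imposed).
\<close>

datatype vkind = Tail | Head | Cross | EmptyV | SolidV | Mark | Bdry

text \<open>Direction of the edge seen from a dart: Out = the edge leaves the vertex of the
dart, In = it enters it, Unor = unoriented edge.\<close>
datatype edir = In | Out | Unor

fun opp :: "edir \<Rightarrow> edir" where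
  "opp In = Out" | "opp Out = In" | "opp Unor = Unor"

record dmap =
  darts :: "nat set"
  alph :: "nat \<Rightarrow> nat"
  sig :: "nat \<Rightarrow> nat"
  vk :: "nat \<Rightarrow> vkind"      \<comment> \<open>kind of the vertex the dart is attached to\<close>
  dr :: "nat \<Rightarrow> edir"
  thick :: "nat \<Rightarrow> bool"
  over :: "nat \<Rightarrow> bool"     \<comment> \<open>at a crossing: the dart belongs to the over strand\<close>

definition orb :: "(nat \<Rightarrow> nat) \<Rightarrow> nat \<Rightarrow> nat set" where
  "orb f d = range (\<lambda>n. (f ^^ n) d)"

definition deg :: "dmap \<Rightarrow> nat \<Rightarrow> nat" where
  "deg M d = card (orb (sig M) d)"

definition adj :: "dmap \<Rightarrow> (nat \<times> nat) set" where
  "adj M = {(x, sig M x) | x. x \<in> darts M} \<union> {(x, alph M x) | x. x \<in> darts M}"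

definition connected_map :: "dmap \<Rightarrow> bool" where
  "connected_map M \<longleftrightarrow> (\<forall>d\<in>darts M. \<forall>e\<in>darts M. (d, e) \<in> (adj M)\<^sup>*)"

definition spherical_map :: "dmap \<Rightarrow> bool" where
  "spherical_map M \<longleftrightarrow>
     int (card (orb (sig M) ` darts M)) - int (card (darts M) div 2)
       + int (card (orb (sig M \<circ> alph M) ` darts M)) = 2"

definition wf_map :: "dmap \<Rightarrow> bool" where
  "wf_map M \<longleftrightarrow>
     finite (darts M) \<and>
     (\<forall>d\<in>darts M. alph M d \<in> darts M \<and> alph M (alph M d) = d \<and> alph M d \<noteq> d) \<and>
     bij_betw (sig M) (darts M) (darts M) \<and>
     (\<forall>d\<in>darts M. vk M (sig M d) = vk M d \<and> thick M (alph M d) = thick M d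
                    \<and> dr M (alph M d) = opp (dr M d)) \<and>
     connected_map M \<and> spherical_map M"

text \<open>Isomorphism of decorated maps = orientation preserving homeomorphism of the sphere
(= isotopy in S^2) respecting all decorations.\<close>
definition iso :: "dmap \<Rightarrow> dmap \<Rightarrow> bool" where
  "iso M M' \<longleftrightarrow> (\<exists>\<phi>. bij_betw \<phi> (darts M) (darts M') \<and>
     (\<forall>d\<in>darts M. \<phi> (alph M d) = alph M' (\<phi> d) \<and> \<phi> (sig M d) = sig M' (\<phi> d)
        \<and> vk M' (\<phi> d) = vk M d \<and> dr M' (\<phi> d) = dr M d
        \<and> thick M' (\<phi> d) = thick M d \<and> over M' (\<phi> d) = over M d))"

subsection \<open>Knotoid diagrams\<close>

text \<open>Traversal of the curve: along an edge in its direction, and straight through a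
crossing (to the opposite dart) or through a subdivision point.\<close>
definition trav :: "dmap \<Rightarrow> (nat \<times> nat) set" where
  "trav M = {(x, alph M x) | x. x \<in> darts M \<and> dr M x = Out}
          \<union> {(x, sig M (sig M x)) | x. x \<in> darts M \<and> dr M x = In \<and> vk M x = Cross}
          \<union> {(x, sig M x) | x. x \<in> darts M \<and> dr M x = In \<and> vk M x = Mark}"

text \<open>Oriented knotoid diagram in S^2 (possibly carrying subdivision points Mark).\<close>
definition is_kd :: "dmap \<Rightarrow> bool" where
  "is_kd M \<longleftrightarrow> wf_map M \<and>
     (\<forall>d\<in>darts M. vk M d \<in> {Tail, Head, Cross, Mark} \<and> thick M d \<and> dr M d \<noteq> Unor) \<and>
     (\<exists>!d. d \<in> darts M \<and> vk M d = Tail) \<and> (\<exists>!d. d \<in> darts M \<and> vk M d = Head) \<and>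
     (\<forall>d\<in>darts M. vk M d = Tail \<longrightarrow> deg M d = 1 \<and> dr M d = Out) \<and>
     (\<forall>d\<in>darts M. vk M d = Head \<longrightarrow> deg M d = 1 \<and> dr M d = In) \<and>
     (\<forall>d\<in>darts M. vk M d = Cross \<longrightarrow> deg M d = 4
         \<and> dr M (sig M (sig M d)) = opp (dr M d)
         \<and> over M (sig M (sig M d)) = over M d \<and> over M (sig M d) \<noteq> over M d) \<and>
     (\<forall>d\<in>darts M. vk M d = Mark \<longrightarrow> deg M d = 2 \<and> dr M (sig M d) = opp (dr M d)) \<and>
     (\<forall>d\<in>darts M. vk M d \<noteq> Cross \<longrightarrow> \<not> over M d) \<and>
     (\<forall>t\<in>darts M. vk M t = Tail \<longrightarrow> darts M \<subseteq> (trav M)\<^sup>* `` {t})"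

definition no_marks :: "dmap \<Rightarrow> bool" where
  "no_marks M \<longleftrightarrow> (\<forall>d\<in>darts M. vk M d \<noteq> Mark)"

subsection \<open>Knotoid label graphs\<close>

definition is_lg :: "dmap \<Rightarrow> bool" where
  "is_lg G \<longleftrightarrow> wf_map G \<and>
     (\<forall>d\<in>darts G. vk G d \<in> {Tail, Head, EmptyV, SolidV, Mark} \<and> \<not> over G d) \<and>
     (\<forall>d\<in>darts G. thick G d \<longrightarrow> dr G d \<noteq> Unor) \<and>
     (\<exists>!d. d \<in> darts G \<and> vk G d = Tail) \<and> (\<exists>!d. d \<in> darts G \<and> vk G d = Head) \<and>
     (\<forall>d\<in>darts G. vk G d = Tail \<longrightarrow> deg G d = 1 \<and> thick G d \<and> dr G d = Out) \<and>
     (\<forall>d\<in>darts G. vk G d = Head \<longrightarrow> deg G d = 1 \<and> thick G d \<and> dr G d = In) \<and>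
     (\<forall>d\<in>darts G. vk G d \<in> {EmptyV, SolidV} \<longrightarrow> deg G d = 3 \<and>
         card {e \<in> orb (sig G) d. \<not> thick G e} = 1 \<and>
         (\<forall>e\<in>orb (sig G) d. \<not> thick G e \<longrightarrow>
            (let a = sig G e; b = sig G (sig G e) in
              (dr G a = opp (dr G b) \<and> dr G e = Unor) \<or> (dr G a = dr G b \<and> dr G e = dr G a)))) \<and>
     (\<forall>d\<in>darts G. vk G d = Mark \<longrightarrow> deg G d = 2 \<and> thick G (sig G d) = thick G d
                                   \<and> dr G (sig G d) = opp (dr G d))"

subsection \<open>Subdivision (insertion of a bivalent point into the edge of dart x)\<close>

definition subdivide :: "dmap \<Rightarrow> nat \<Rightarrow> nat \<Rightarrow> nat \<Rightarrow> dmap" where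
  "subdivide M x a b =
     M\<lparr>darts := darts M \<union> {a, b},
       alph := (\<lambda>d. if d = x then a else if d = a then x else if d = b then alph M x
                    else if d = alph M x then b else alph M d),
       sig := (\<lambda>d. if d = a then b else if d = b then a else sig M d),
       vk := (\<lambda>d. if d = a \<or> d = b then Mark else vk M d),
       dr := (\<lambda>d. if d = a then opp (dr M x) else if d = b then dr M x else dr M d),
       thick := (\<lambda>d. if d = a \<or> d = b then thick M x else thick M d),
       over := (\<lambda>d. if d = a \<or> d = b then False else over M d)\<rparr>"

definition subdiv :: "dmap \<Rightarrow> dmap \<Rightarrow> bool" where
  "subdiv M M' \<longleftrightarrow> (\<exists>x a b. x \<in> darts M \<and> a \<notin> darts M \<and> b \<notin> darts M \<and> a \<noteq> b
                          \<and> iso M' (subdivide M x a b))"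

subsection \<open>Gluing a tangle into a context\<close>

text \<open>A tangle in a disk is a map in which the complement of the disk is collapsed to one
vertex of kind Bdry; a context is a map in which the disk is collapsed to one vertex of
kind Bdry.  Gluing = connected sum at these two vertices, matching the boundary darts by
m with reversed cyclic order.\<close>

definition bdarts :: "dmap \<Rightarrow> nat set" where
  "bdarts M = {d \<in> darts M. vk M d = Bdry}"

definition glue_ok :: "dmap \<Rightarrow> dmap \<Rightarrow> (nat \<Rightarrow> nat) \<Rightarrow> bool" where
  "glue_ok T C m \<longleftrightarrow> wf_map T \<and> wf_map C \<and>
     (\<exists>x\<in>bdarts T. bdarts T = orb (sig T) x) \<and>
     bij_betw m (bdarts T) (bdarts C) \<and>
     (\<forall>x\<in>bdarts T. sig C (m (sig T x)) = m x) \<and>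
     (\<forall>x\<in>bdarts T. alph T x \<notin> bdarts T) \<and>
     (darts T - bdarts T) \<inter> (darts C - bdarts C) = {}"

definition minv :: "dmap \<Rightarrow> (nat \<Rightarrow> nat) \<Rightarrow> nat \<Rightarrow> nat" where
  "minv T m z = (THE x. x \<in> bdarts T \<and> m x = z)"

definition glue :: "dmap \<Rightarrow> dmap \<Rightarrow> (nat \<Rightarrow> nat) \<Rightarrow> dmap" where
  "glue T C m =
    \<lparr>darts = (darts T - bdarts T) \<union> (darts C - bdarts C),
     alph = (\<lambda>x. if x \<in> darts T then
                   (let y = alph T x in
                     if y \<in> bdarts T then
                       (let z = alph C (m y) in if z \<in> bdarts C then alph T (minv T m z) else z)
                     else y)
                 else (let z = alph C x in if z \<in> bdarts C then alph T (minv T m z) else z)),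
     sig = (\<lambda>x. if x \<in> darts T then sig T x else sig C x),
     vk = (\<lambda>x. if x \<in> darts T then vk T x else vk C x),
     dr = (\<lambda>x. if x \<in> darts T then dr T x else dr C x),
     thick = (\<lambda>x. if x \<in> darts T then thick T x else thick C x),
     over = (\<lambda>x. if x \<in> darts T then over T x else over C x)\<rparr>"

text \<open>M' arises from M by replacing the tangle T by T' (same boundary).\<close>
definition rmove :: "dmap \<Rightarrow> dmap \<Rightarrow> dmap \<Rightarrow> dmap \<Rightarrow> bool" where
  "rmove T T' M M' \<longleftrightarrow> (\<exists>C m. glue_ok T C m \<and> glue_ok T' C m
                          \<and> iso M (glue T C m) \<and> iso M' (glue T' C m))"

subsection \<open>The Reidemeister tangles\<close>

definition inv_of :: "(nat \<times> nat) list \<Rightarrow> nat \<Rightarrow> nat" where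
  "inv_of ps d = (case map_of (ps @ map (\<lambda>(a, b). (b, a)) ps) d of Some e \<Rightarrow> e | None \<Rightarrow> d)"

definition cyc_of :: "nat list list \<Rightarrow> nat \<Rightarrow> nat" where
  "cyc_of cs d = (case map_of (concat (map (\<lambda>c. zip c (tl c @ [hd c])) cs)) d of
                    Some e \<Rightarrow> e | None \<Rightarrow> d)"

text \<open>R1: boundary darts 0,1 (boundary points p0,p1); crossing darts 2,3,4,5 in ccw order,
2 pointing to p0.  side selects on which side the loop lies, fw the orientation
(fw: from p0 to p1), ov whether the strand through 2,4 is over.\<close>
definition tR1 :: "bool \<Rightarrow> bool \<Rightarrow> bool \<Rightarrow> dmap" where
  "tR1 side fw ov =
    \<lparr>darts = {0..5},
     alph = inv_of (if side then [(0,2),(3,4),(5,1)] else [(0,2),(4,5),(3,1)]),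
     sig = cyc_of [[0,1],[2,3,4,5]],
     vk = (\<lambda>d. if d < 2 then Bdry else Cross),
     dr = (\<lambda>d. if (d \<in> (if side then {0,4,5} else {0,3,4})) = fw then Out else In),
     thick = (\<lambda>d. True),
     over = (\<lambda>d. if d \<in> {2,4} then ov else if d \<in> {3,5} then \<not> ov else False)\<rparr>"

definition tR1' :: "bool \<Rightarrow> dmap" where
  "tR1' fw =
    \<lparr>darts = {0..3},
     alph = inv_of [(0,2),(3,1)],
     sig = cyc_of [[0,1],[2,3]],
     vk = (\<lambda>d. if d < 2 then Bdry else Mark),
     dr = (\<lambda>d. if (d \<in> {0,3}) = fw then Out else In),
     thick = (\<lambda>d. True),
     over = (\<lambda>d. False)\<rparr>"

text \<open>R2: boundary points p0..p3 (ccw), strand A joins p0,p1 and strand B joins p3,p2;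
crossings X = darts 4..7, Y = darts 8..11.  dA: A runs p0 -> p1; dB: B runs p3 -> p2;
ovA: A is on top.\<close>
definition tR2 :: "bool \<Rightarrow> bool \<Rightarrow> bool \<Rightarrow> dmap" where
  "tR2 dA dB ovA =
    \<lparr>darts = {0..11},
     alph = inv_of [(0,7),(5,9),(11,1),(3,6),(4,10),(8,2)],
     sig = cyc_of [[3,2,1,0],[4,5,6,7],[8,9,10,11]],
     vk = (\<lambda>d. if d < 4 then Bdry else Cross),
     dr = (\<lambda>d. if d \<in> {0,7,5,9,11,1} then (if (d \<in> {0,5,11}) = dA then Out else In)
               else (if (d \<in> {3,4,8}) = dB then Out else In)),
     thick = (\<lambda>d. True),
     over = (\<lambda>d. if d \<in> {5,7,9,11} then ovA else if d \<in> {4,6,8,10} then \<not> ovA else False)\<rparr>"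

definition tR2' :: "bool \<Rightarrow> bool \<Rightarrow> dmap" where
  "tR2' dA dB =
    \<lparr>darts = {0..7},
     alph = inv_of [(0,4),(5,1),(2,6),(7,3)],
     sig = cyc_of [[3,2,1,0],[4,5],[6,7]],
     vk = (\<lambda>d. if d < 4 then Bdry else Mark),
     dr = (\<lambda>d. if d \<in> {0,4,5,1} then (if (d \<in> {0,5}) = dA then Out else In)
               else (if (d \<in> {3,6}) = dB then Out else In)),
     thick = (\<lambda>d. True),
     over = (\<lambda>d. False)\<rparr>"

text \<open>R3: boundary points p0..p5 (ccw), strands s=0,1,2 join p_s and p_(s+3); crossings
X01 = darts 6..9, X02 = darts 10..13, X12 = darts 14..17; the two configurations cfg
are the two sides of the move; ht gives the heights of the strands, or3 s says that
strand s runs from p_s to p_(s+3).\<close>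
definition strand3 :: "nat \<Rightarrow> nat" where
  "strand3 d = (if d \<in> {0,3,6,8,10,12} then 0 else if d \<in> {1,4,7,9,14,16} then 1 else 2)"

definition xstr3 :: "nat \<Rightarrow> nat set" where
  "xstr3 d = (if d \<in> {6..9} then {0,1} else if d \<in> {10..13} then {0,2} else {1,2})"

definition tR3 :: "bool \<Rightarrow> (nat \<Rightarrow> nat) \<Rightarrow> (nat \<Rightarrow> bool) \<Rightarrow> dmap" where
  "tR3 cfg ht or3 =
    \<lparr>darts = {0..17},
     alph = inv_of (if cfg then [(0,10),(12,6),(8,3),(1,14),(16,7),(9,4),(2,15),(17,11),(13,5)]
                    else [(0,6),(8,10),(12,3),(1,7),(9,14),(16,4),(2,11),(13,15),(17,5)]),
     sig = cyc_of [[5,4,3,2,1,0],[6,7,8,9],[10,11,12,13],[14,15,16,17]],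
     vk = (\<lambda>d. if d < 6 then Bdry else Cross),
     dr = (\<lambda>d. if (((d \<in> {0,6,10,1,7,14,2,11,15}) = (d < 6)) = or3 (strand3 d)) then Out else In),
     thick = (\<lambda>d. True),
     over = (\<lambda>d. 6 \<le> d \<and> (\<forall>s\<in>xstr3 d - {strand3 d}. ht s < ht (strand3 d)))\<rparr>"

definition heights_ok :: "(nat \<Rightarrow> nat) \<Rightarrow> bool" where
  "heights_ok ht \<longleftrightarrow> inj_on ht {0,1,2}"

text \<open>Sign of a crossing (dart d at a crossing vertex): positive iff turning the outgoing
over-strand dart counterclockwise gives the outgoing under-strand dart.\<close>
definition positive :: "dmap \<Rightarrow> nat \<Rightarrow> bool" where
  "positive M d \<longleftrightarrow> (\<exists>e\<in>orb (sig M) d. over M e \<and> dr M e = Out \<and> dr M (sig M e) = Out)"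

definition all_moves :: "(dmap \<times> dmap) set" where
  "all_moves =
     {(tR1 s fw ov, tR1' fw) | s fw ov. True}
   \<union> {(tR2 dA dB ov, tR2' dA dB) | dA dB ov. True}
   \<union> {(tR3 True ht or3, tR3 False ht or3) | ht or3. heights_ok ht}"

text \<open>The moves used in the definition of S(G): R1.1 (positive curl on side s1),
R1.2 (negative curl on side s2), R2.1-R2.4 (all oriented R2), R3.1 (one oriented R3
move given by ht, or3).\<close>
definition chosen_moves :: "bool \<Rightarrow> bool \<Rightarrow> (nat \<Rightarrow> nat) \<Rightarrow> (nat \<Rightarrow> bool) \<Rightarrow> (dmap \<times> dmap) set" where
  "chosen_moves s1 s2 ht or3 =
     {(tR1 s1 True ov, tR1' True) | ov. positive (tR1 s1 True ov) 2}
   \<union> {(tR1 s2 True ov, tR1' True) | ov. \<not> positive (tR1 s2 True ov) 2}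
   \<union> {(tR2 dA dB ov, tR2' dA dB) | dA dB ov. True}
   \<union> {(tR3 True ht or3, tR3 False ht or3)}"

definition kd_step :: "(dmap \<times> dmap) set \<Rightarrow> dmap \<Rightarrow> dmap \<Rightarrow> bool" where
  "kd_step S M M' \<longleftrightarrow> is_kd M \<and> is_kd M' \<and>
     (iso M M' \<or> subdiv M M' \<or> (\<exists>(T, T')\<in>S. rmove T T' M M'))"

text \<open>Same spherical knotoid: isotopy in S^2 and all Reidemeister moves away from the
endpoints.\<close>
definition same_sph_knotoid :: "dmap \<Rightarrow> dmap \<Rightarrow> bool" where
  "same_sph_knotoid D D' \<longleftrightarrow> equivclp (kd_step all_moves) D D'"

definition generating :: "bool \<Rightarrow> bool \<Rightarrow> (nat \<Rightarrow> nat) \<Rightarrow> (nat \<Rightarrow> bool) \<Rightarrow> bool" where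
  "generating s1 s2 ht or3 \<longleftrightarrow>
     (\<forall>M M'. same_sph_knotoid M M' \<longrightarrow> equivclp (kd_step (chosen_moves s1 s2 ht or3)) M M')"

subsection \<open>Smoothing and the label bracket\<close>

definition states :: "dmap \<Rightarrow> nat set set" where
  "states M = {F. F \<subseteq> {d \<in> darts M. vk M d = Cross} \<and>
     (\<forall>d\<in>darts M. vk M d = Cross \<longrightarrow>
        (d \<in> F \<longleftrightarrow> sig M (sig M d) \<in> F) \<and> (d \<in> F \<longleftrightarrow> sig M d \<notin> F))}"

text \<open>A-smoothing at the crossing of the first dart x of a state (x and sig x are joined):
oriented for positive, disoriented for negative crossings.\<close>
definition smA :: "dmap \<Rightarrow> nat \<Rightarrow> bool" where
  "smA M x \<longleftrightarrow> (positive M x \<longleftrightarrow> dr M x \<noteq> dr M (sig M x))"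

definition firstd :: "dmap \<Rightarrow> nat set \<Rightarrow> nat \<Rightarrow> nat" where
  "firstd M F d = (if d \<in> F then d else (sig M ^^ 3) d)"

text \<open>Smoothing in state F: old dart d becomes 2d; for x in F the darts x, sig x form a new
trivalent vertex together with the new thin dart 2x+1.\<close>
definition smooth :: "dmap \<Rightarrow> nat set \<Rightarrow> dmap" where
  "smooth M F =
    \<lparr>darts = (\<lambda>d. 2 * d) ` darts M \<union> (\<lambda>x. 2 * x + 1) ` F,
     alph = (\<lambda>n. if even n then 2 * alph M (n div 2) else 2 * sig M (sig M (n div 2)) + 1),
     sig = (\<lambda>n. if even n then
                  (let d = n div 2 in
                    if vk M d = Cross \<and> d \<notin> F then 2 * (sig M ^^ 3) d + 1 else 2 * sig M d)
                else n - 1),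
     vk = (\<lambda>n. let d = n div 2 in
                if vk M d = Cross then (if smA M (firstd M F d) then EmptyV else SolidV)
                else vk M d),
     dr = (\<lambda>n. if even n then dr M (n div 2)
               else (let x = n div 2 in if dr M x = dr M (sig M x) then dr M x else Unor)),
     thick = (\<lambda>n. if even n then thick M (n div 2) else False),
     over = (\<lambda>n. False)\<rparr>"

definition gen :: "dmap \<Rightarrow> (dmap \<Rightarrow> int)" where
  "gen G = (\<lambda>H. if H = G then 1 else 0)"

text \<open>Label bracket, an element of the free Z-module on decorated maps.\<close>
definition lbracket :: "dmap \<Rightarrow> (dmap \<Rightarrow> int)" where
  "lbracket M = (\<Sum>F\<in>states M. gen (smooth M F))"

text \<open>The submodule of relations defining S(G).\<close>
inductive_set lrel :: "bool \<Rightarrow> bool \<Rightarrow> (nat \<Rightarrow> nat) \<Rightarrow> (nat \<Rightarrow> bool) \<Rightarrow> (dmap \<Rightarrow> int) set"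
  for s1 s2 ht or3 where
  rel_iso: "is_lg G \<Longrightarrow> is_lg G' \<Longrightarrow> iso G G' \<Longrightarrow> gen G - gen G' \<in> lrel s1 s2 ht or3"
| rel_sub: "is_lg G \<Longrightarrow> is_lg G' \<Longrightarrow> subdiv G G' \<Longrightarrow> gen G - gen G' \<in> lrel s1 s2 ht or3"
| rel_loc: "(T, T') \<in> chosen_moves s1 s2 ht or3 \<Longrightarrow> glue_ok T C m \<Longrightarrow> glue_ok T' C m \<Longrightarrow>
            \<forall>d\<in>darts C. vk C d \<noteq> Cross \<Longrightarrow>
            \<forall>F\<in>states (glue T C m). is_lg (smooth (glue T C m) F) \<Longrightarrow>
            \<forall>F\<in>states (glue T' C m). is_lg (smooth (glue T' C m) F) \<Longrightarrow>
            lbracket (glue T C m) - lbracket (glue T' C m) \<in> lrel s1 s2 ht or3"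
| rel_zero: "0 \<in> lrel s1 s2 ht or3"
| rel_add: "a \<in> lrel s1 s2 ht or3 \<Longrightarrow> b \<in> lrel s1 s2 ht or3 \<Longrightarrow> a + b \<in> lrel s1 s2 ht or3"
| rel_neg: "a \<in> lrel s1 s2 ht or3 \<Longrightarrow> - a \<in> lrel s1 s2 ht or3"

definition SG_eq :: "bool \<Rightarrow> bool \<Rightarrow> (nat \<Rightarrow> nat) \<Rightarrow> (nat \<Rightarrow> bool) \<Rightarrow> (dmap \<Rightarrow> int) \<Rightarrow> (dmap \<Rightarrow> int) \<Rightarrow> bool" where
  "SG_eq s1 s2 ht or3 a b \<longleftrightarrow> a - b \<in> lrel s1 s2 ht or3"

end

theory Submission
  imports Defs
begin

lemma orb_self[simp]: "d \<in> orb f d"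
  unfolding orb_def by (metis funpow_0 rangeI)

lemma orb_step: "e \<in> orb f d \<Longrightarrow> f e \<in> orb f d"
  unfolding orb_def by (auto simp: image_iff) (metis funpow.simps(2) o_apply)

lemma orb_iter: "(f ^^ n) d \<in> orb f d"
  unfolding orb_def by auto

lemma orb_sub_closed: "d \<in> S \<Longrightarrow> (\<And>x. x \<in> S \<Longrightarrow> f x \<in> S) \<Longrightarrow> orb f d \<subseteq> S"
proof -
  assume a: "d \<in> S" "\<And>x. x \<in> S \<Longrightarrow> f x \<in> S"
  have "(f ^^ n) d \<in> S" for n by (induction n) (auto simp: a)
  thus ?thesis unfolding orb_def by auto
qed

lemma orb_trans: "e \<in> orb f d \<Longrightarrow> orb f e \<subseteq> orb f d"
  by (rule orb_sub_closed) (auto intro: orb_step)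

lemma orb_agree:
  assumes "d \<in> S" "\<And>x. x \<in> S \<Longrightarrow> f x \<in> S" "\<And>x. x \<in> S \<Longrightarrow> f x = g x"
  shows "orb f d = orb g d"
proof -
  have "(f ^^ n) d = (g ^^ n) d \<and> (f ^^ n) d \<in> S" for n
  proof (induction n)
    case (Suc n) then show ?case using assms(2,3) by (metis funpow.simps(2) o_apply)
  qed (simp add: assms)
  thus ?thesis unfolding orb_def by (metis (mono_tags, lifting) image_cong)
qed

lemma funpow_in: "bij_betw f A A \<Longrightarrow> d \<in> A \<Longrightarrow> (f ^^ n) d \<in> A"
  by (induction n) (auto simp: bij_betw_def)

lemma orb_subset_A: "bij_betw f A A \<Longrightarrow> d \<in> A \<Longrightarrow> orb f d \<subseteq> A"
  by (rule orb_sub_closed) (auto simp: bij_betw_def)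

lemma cancel_iter:
  assumes b: "bij_betw f A A" and d: "d \<in> A"
  shows "i < j \<Longrightarrow> (f ^^ i) d = (f ^^ j) d \<Longrightarrow> (f ^^ (j - i)) d = d"
proof (induction i arbitrary: j)
  case 0 then show ?case by simp
next
  case (Suc i)
  obtain j' where j': "j = Suc j'" using Suc.prems by (cases j) auto
  have "f ((f ^^ i) d) = f ((f ^^ j') d)" using Suc.prems j' by simp
  moreover have "inj_on f A" using b by (simp add: bij_betw_def)
  ultimately have "(f ^^ i) d = (f ^^ j') d"
    using funpow_in[OF b d] by (meson inj_on_def)
  then show ?case using Suc.IH[of j'] Suc.prems j' by simp
qed

lemma period_exists:
  assumes b: "bij_betw f A A" and fin: "finite A" and d: "d \<in> A"
  shows "\<exists>n>0. (f ^^ n) d = d"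
proof -
  let ?g = "\<lambda>i. (f ^^ i) d"
  have sub: "?g ` {0..card A} \<subseteq> A" using funpow_in[OF b d] by auto
  have "\<not> inj_on ?g {0..card A}"
  proof
    assume "inj_on ?g {0..card A}"
    hence "card (?g ` {0..card A}) = Suc (card A)" by (simp add: card_image)
    moreover have "card (?g ` {0..card A}) \<le> card A" by (rule card_mono[OF fin sub])
    ultimately show False by simp
  qed
  then obtain i j where ij: "i \<noteq> j" "?g i = ?g j"
    unfolding inj_on_def by blast
  show ?thesis
  proof (cases "i < j")
    case True
    then show ?thesis using cancel_iter[OF b d True] ij by (intro exI[of _ "j - i"]) auto
  next
    case False
    hence "j < i" using ij by simp
    then show ?thesis using cancel_iter[OF b d \<open>j < i\<close>] ij by (intro exI[of _ "i - j"]) auto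
  qed
qed

lemma funpow_period: "(f ^^ n) d = d \<Longrightarrow> (f ^^ (n * k)) d = d"
proof (induction k)
  case (Suc k)
  have "(f ^^ (n * Suc k)) d = (f ^^ n) ((f ^^ (n * k)) d)"
    by (metis funpow_add mult_Suc_right o_apply)
  then show ?case using Suc by simp
qed simp

lemma orb_sym:
  assumes b: "bij_betw f A A" and fin: "finite A" and d: "d \<in> A" and e: "e \<in> orb f d"
  shows "d \<in> orb f e"
proof -
  obtain n where n: "n > 0" "(f ^^ n) d = d" using period_exists[OF b fin d] by blast
  obtain k where k: "e = (f ^^ k) d" using e unfolding orb_def by auto
  have "(f ^^ (n * Suc k - k)) e = (f ^^ (n * Suc k - k + k)) d" using k by (metis funpow_add o_apply)
  also have "n * Suc k - k + k = n * Suc k"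
  proof -
    have "1 * Suc k \<le> n * Suc k" using n by (intro mult_le_mono1) simp
    hence "k \<le> n * Suc k" unfolding mult.left_neutral by (rule Suc_leD)
    thus ?thesis by (rule le_add_diff_inverse2)
  qed
  finally have "(f ^^ (n * Suc k - k)) e = d" using funpow_period[OF n(2), of "Suc k"] by (simp only:)
  thus ?thesis unfolding orb_def by (rule range_eqI[OF sym])
qed

lemma orb_eq:
  assumes "bij_betw f A A" "finite A" "d \<in> A" "e \<in> orb f d"
  shows "orb f e = orb f d"
  using orb_trans[OF assms(4)] orb_trans[OF orb_sym[OF assms]] by blast

lemma funpow3: "(f ^^ 3) x = f (f (f x))"
  by (simp add: numeral_3_eq_3)

lemma orb_image:
  assumes "d \<in> S" "\<And>x. x \<in> S \<Longrightarrow> f x \<in> S" "\<And>x. x \<in> S \<Longrightarrow> g (h x) = h (f x)"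
  shows "orb g (h d) = h ` orb f d"
proof -
  have "(g ^^ n) (h d) = h ((f ^^ n) d) \<and> (f ^^ n) d \<in> S" for n
  proof (induction n)
    case (Suc n) then show ?case using assms(2,3) by (metis funpow.simps(2) o_apply)
  qed (simp add: assms)
  thus ?thesis unfolding orb_def by (auto simp: image_iff)
qed

lemma card_eq_kernel:
  assumes "\<And>x y. x \<in> A \<Longrightarrow> y \<in> A \<Longrightarrow> (f x = f y) \<longleftrightarrow> (g x = g y)"
  shows "card (f ` A) = card (g ` A)"
proof -
  define h where "h = (\<lambda>Y. f (SOME x. x \<in> A \<and> g x = Y))"
  have hg: "h (g x) = f x" if "x \<in> A" for x
  proof -
    have "\<exists>y. y \<in> A \<and> g y = g x" using that by blast
    hence "(SOME y. y \<in> A \<and> g y = g x) \<in> A \<and> g (SOME y. y \<in> A \<and> g y = g x) = g x"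
      by (rule someI_ex)
    thus ?thesis unfolding h_def using assms that by blast
  qed
  have "h ` (g ` A) = f ` A" using hg by (auto simp: image_iff)
  moreover have "inj_on h (g ` A)"
    unfolding inj_on_def using hg assms by auto
  ultimately show ?thesis by (metis card_image)
qed

definition cross_ok :: "dmap \<Rightarrow> bool" where
  "cross_ok M \<longleftrightarrow> (\<forall>d\<in>darts M. vk M d = Cross \<longrightarrow>
     sig M (sig M (sig M (sig M d))) = d \<and> sig M d \<noteq> d \<and> sig M (sig M d) \<noteq> d
     \<and> sig M (sig M (sig M d)) \<noteq> d
     \<and> dr M (sig M (sig M d)) = opp (dr M d) \<and> dr M d \<noteq> Unor)"

lemma sm_darts: "darts (smooth M F) = (\<lambda>d. 2 * d) ` darts M \<union> (\<lambda>x. 2 * x + 1) ` F"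
  by (simp add: smooth_def)
lemma sm_alph_e[simp]: "alph (smooth M F) (2 * d) = 2 * alph M d"
  by (simp add: smooth_def)
lemma sm_alph_o[simp]: "alph (smooth M F) (Suc (2 * x)) = Suc (2 * sig M (sig M x))"
  by (simp add: smooth_def)
lemma sm_sig_e[simp]: "sig (smooth M F) (2 * d) =
   (if vk M d = Cross \<and> d \<notin> F then Suc (2 * sig M (sig M (sig M d))) else 2 * sig M d)"
  by (simp add: smooth_def funpow3)
lemma sm_sig_o[simp]: "sig (smooth M F) (Suc (2 * x)) = 2 * x"
  by (simp add: smooth_def)
lemma sm_vk_e[simp]: "vk (smooth M F) (2 * d) =
   (if vk M d = Cross then (if smA M (firstd M F d) then EmptyV else SolidV) else vk M d)"
  by (simp add: smooth_def)
lemma sm_vk_o[simp]: "vk (smooth M F) (Suc (2 * d)) =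
   (if vk M d = Cross then (if smA M (firstd M F d) then EmptyV else SolidV) else vk M d)"
  by (simp add: smooth_def)
lemma sm_dr_e[simp]: "dr (smooth M F) (2 * d) = dr M d"
  by (simp add: smooth_def)
lemma sm_dr_o[simp]: "dr (smooth M F) (Suc (2 * x)) =
   (if dr M x = dr M (sig M x) then dr M x else Unor)"
  by (simp add: smooth_def)
lemma sm_thick_e[simp]: "thick (smooth M F) (2 * d) = thick M d"
  by (simp add: smooth_def)
lemma sm_thick_o[simp]: "thick (smooth M F) (Suc (2 * d)) = False"
  by (simp add: smooth_def)
lemma sm_over[simp]: "over (smooth M F) n = False"
  by (simp add: smooth_def)

lemma firstd_simp: "firstd M F d = (if d \<in> F then d else sig M (sig M (sig M d)))"
  by (simp add: firstd_def funpow3)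

lemma opp_opp[simp]: "opp (opp x) = x" by (cases x) auto
lemma opp_eq_iff[simp]: "opp x = opp y \<longleftrightarrow> x = y" by (cases x; cases y) auto

locale sctx =
  fixes M :: dmap and F :: "nat set"
  assumes wf: "wf_map M" and cok: "cross_ok M" and st: "F \<in> states M"
begin

abbreviation "s \<equiv> sig M"
abbreviation "a \<equiv> alph M"
abbreviation "D \<equiv> darts M"
abbreviation "M' \<equiv> smooth M F"

lemma fin: "finite D" using wf by (simp add: wf_map_def)
lemma a_in: "d \<in> D \<Longrightarrow> a d \<in> D" using wf by (simp add: wf_map_def)
lemma a_a[simp]: "d \<in> D \<Longrightarrow> a (a d) = d" using wf by (simp add: wf_map_def)
lemma a_neq: "d \<in> D \<Longrightarrow> a d \<noteq> d" using wf by (simp add: wf_map_def)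
lemma s_bij: "bij_betw s D D" using wf by (simp add: wf_map_def)
lemma s_in: "d \<in> D \<Longrightarrow> s d \<in> D" using s_bij by (meson bij_betwE)
lemma s_inj: "d \<in> D \<Longrightarrow> e \<in> D \<Longrightarrow> s d = s e \<Longrightarrow> d = e"
  using s_bij by (meson bij_betw_imp_inj_on inj_onD)
lemma vk_s[simp]: "d \<in> D \<Longrightarrow> vk M (s d) = vk M d" using wf by (simp add: wf_map_def)
lemma thick_a[simp]: "d \<in> D \<Longrightarrow> thick M (a d) = thick M d" using wf by (simp add: wf_map_def)
lemma dr_a[simp]: "d \<in> D \<Longrightarrow> dr M (a d) = opp (dr M d)" using wf by (simp add: wf_map_def)

lemma c4[simp]: "d \<in> D \<Longrightarrow> vk M d = Cross \<Longrightarrow> s (s (s (s d))) = d"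
  using cok by (simp add: cross_ok_def)
lemma c5[simp]: "d \<in> D \<Longrightarrow> vk M d = Cross \<Longrightarrow> s (s (s (s (s d)))) = s d"
  using c4 s_in vk_s by metis
lemma c_ne1: "d \<in> D \<Longrightarrow> vk M d = Cross \<Longrightarrow> s d \<noteq> d"
  using cok by (simp add: cross_ok_def)
lemma c_ne2: "d \<in> D \<Longrightarrow> vk M d = Cross \<Longrightarrow> s (s d) \<noteq> d"
  using cok by (simp add: cross_ok_def)
lemma c_ne3: "d \<in> D \<Longrightarrow> vk M d = Cross \<Longrightarrow> s (s (s d)) \<noteq> d"
  using cok by (simp add: cross_ok_def)
lemma c_dr2[simp]: "d \<in> D \<Longrightarrow> vk M d = Cross \<Longrightarrow> dr M (s (s d)) = opp (dr M d)"
  using cok by (simp add: cross_ok_def)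
lemma c_drU: "d \<in> D \<Longrightarrow> vk M d = Cross \<Longrightarrow> dr M d \<noteq> Unor"
  using cok by (simp add: cross_ok_def)

lemma F_sub: "x \<in> F \<Longrightarrow> x \<in> D \<and> vk M x = Cross"
  using st by (auto simp: states_def)
lemma F_s2: "d \<in> D \<Longrightarrow> vk M d = Cross \<Longrightarrow> (s (s d) \<in> F) = (d \<in> F)"
  using st by (auto simp: states_def)
lemma F_s1: "d \<in> D \<Longrightarrow> vk M d = Cross \<Longrightarrow> (s d \<in> F) = (d \<notin> F)"
  using st by (auto simp: states_def)

end

lemma par1[simp]: "Suc (2 * a) \<noteq> 2 * b" by presburger
lemma par2[simp]: "2 * b \<noteq> Suc (2 * a)" by presburger

context sctx begin

lemma in_e[simp]: "2 * d \<in> darts M' \<longleftrightarrow> d \<in> D"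
  by (auto simp: sm_darts)
lemma in_o[simp]: "Suc (2 * x) \<in> darts M' \<longleftrightarrow> x \<in> F"
  by (auto simp: sm_darts)
lemma dcases: "n \<in> darts M' \<Longrightarrow> (\<And>d. d \<in> D \<Longrightarrow> n = 2 * d \<Longrightarrow> P) \<Longrightarrow>
   (\<And>x. x \<in> F \<Longrightarrow> n = Suc (2 * x) \<Longrightarrow> P) \<Longrightarrow> P"
  by (auto simp: sm_darts)

lemma finM': "finite (darts M')"
  using fin F_sub by (auto simp: sm_darts intro: finite_subset[of F D])

lemma alph_ok: "n \<in> darts M' \<Longrightarrow> alph M' n \<in> darts M' \<and> alph M' (alph M' n) = n \<and> alph M' n \<noteq> n"
proof (erule dcases)
  fix d assume "d \<in> D" "n = 2 * d" thus ?thesis using a_in a_neq by simp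
next
  fix x assume x: "x \<in> F" "n = Suc (2 * x)"
  have "x \<in> D" "vk M x = Cross" using F_sub x by auto
  thus ?thesis using x F_s2 c_ne2 by simp
qed

lemma sig_in: "n \<in> darts M' \<Longrightarrow> sig M' n \<in> darts M'"
proof (erule dcases)
  fix d assume d: "d \<in> D" "n = 2 * d"
  show ?thesis
  proof (cases "vk M d = Cross \<and> d \<notin> F")
    case True
    hence "s d \<in> F" using F_s1 d by auto
    hence "s (s (s d)) \<in> F" using F_s2 d s_in True by auto
    then show ?thesis using True d by simp
  next
    case False
    hence "sig M' n = 2 * s d" using d by (simp only: sm_sig_e if_False)
    then show ?thesis using d s_in by simp
  qed
next
  fix x assume "x \<in> F" "n = Suc (2 * x)" thus ?thesis using F_sub by simp
qed

lemma s_inj3: "d \<in> D \<Longrightarrow> e \<in> D \<Longrightarrow> s (s (s d)) = s (s (s e)) \<Longrightarrow> d = e"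
  using s_inj s_in by metis

lemma sig_inj: "n \<in> darts M' \<Longrightarrow> n' \<in> darts M' \<Longrightarrow> sig M' n = sig M' n' \<Longrightarrow> n = n'"
proof (erule dcases; erule dcases)
  fix d e assume d: "d \<in> D" "n = 2 * d" and e: "e \<in> D" "n' = 2 * e" and eq: "sig M' n = sig M' n'"
  show "n = n'"
    using eq d e s_inj s_inj3 by (auto split: if_splits)
next
  fix d x assume d: "d \<in> D" "n = 2 * d" and x: "x \<in> F" "n' = Suc (2 * x)" and eq: "sig M' n = sig M' n'"
  have xc: "x \<in> D" "vk M x = Cross" using F_sub x by auto
  have "\<not> (vk M d = Cross \<and> d \<notin> F)" using eq d x by (auto split: if_splits)
  hence sd: "s d = x" using eq d x by (auto split: if_splits)
  show "n = n'"
  proof (cases "vk M d = Cross")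
    case True
    hence "d \<in> F" using \<open>\<not> _\<close> by simp
    thus ?thesis using F_s1[OF d(1) True] sd x by simp
  next
    case False
    thus ?thesis using vk_s[OF d(1)] sd xc by simp
  qed
next
  fix x d assume d: "d \<in> D" "n' = 2 * d" and x: "x \<in> F" "n = Suc (2 * x)" and eq: "sig M' n = sig M' n'"
  have xc: "x \<in> D" "vk M x = Cross" using F_sub x by auto
  have "\<not> (vk M d = Cross \<and> d \<notin> F)" using eq d x by (auto split: if_splits)
  hence sd: "s d = x" using eq d x by (auto split: if_splits)
  show "n = n'"
  proof (cases "vk M d = Cross")
    case True
    hence "d \<in> F" using \<open>\<not> _\<close> by simp
    thus ?thesis using F_s1[OF d(1) True] sd x by simp
  next
    case False
    thus ?thesis using vk_s[OF d(1)] sd xc by simp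
  qed
next
  fix x y assume "n = Suc (2 * x)" "n' = Suc (2 * y)" "sig M' n = sig M' n'"
  thus "n = n'" by simp
qed

lemma sig_bij: "bij_betw (sig M') (darts M') (darts M')"
proof -
  have "inj_on (sig M') (darts M')" using sig_inj by (auto simp: inj_on_def)
  moreover have "sig M' ` darts M' \<subseteq> darts M'" using sig_in by auto
  ultimately show ?thesis using endo_inj_surj[OF finM'] by (simp add: bij_betw_def)
qed

end

context sctx begin

lemma vk_sig': "n \<in> darts M' \<Longrightarrow> vk M' (sig M' n) = vk M' n"
proof (erule dcases)
  fix d assume d: "d \<in> D" "n = 2 * d"
  show ?thesis
  proof (cases "vk M d = Cross")
    case c: True
    show ?thesis
    proof (cases "d \<in> F")
      case True
      have "s d \<notin> F" using F_s1 d c True by auto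
      hence "firstd M F (s d) = d" using d c by (simp add: firstd_simp)
      moreover have "firstd M F d = d" using True by (simp add: firstd_simp)
      ultimately show ?thesis using d c True s_in by simp
    next
      case False
      have "s (s (s d)) \<in> F" using F_s1 F_s2 d c False s_in vk_s by metis
      hence "firstd M F (s (s (s d))) = s (s (s d))" by (simp add: firstd_simp)
      moreover have "firstd M F d = s (s (s d))" using False by (simp add: firstd_simp)
      ultimately show ?thesis using d c False s_in by simp
    qed
  next
    case False
    then show ?thesis using d s_in by simp
  qed
next
  fix x assume "x \<in> F" "n = Suc (2 * x)" thus ?thesis by simp
qed

lemma thick_alph': "n \<in> darts M' \<Longrightarrow> thick M' (alph M' n) = thick M' n"
  by (erule dcases) auto

lemma dr_alph': "n \<in> darts M' \<Longrightarrow> dr M' (alph M' n) = opp (dr M' n)"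
proof (erule dcases)
  fix d assume "d \<in> D" "n = 2 * d" thus ?thesis by simp
next
  fix x assume x: "x \<in> F" "n = Suc (2 * x)"
  have xc: "x \<in> D" "vk M x = Cross" using F_sub x by auto
  have "dr M (s (s (s x))) = opp (dr M (s x))" using c_dr2[of "s x"] xc s_in by simp
  thus ?thesis using x xc by auto
qed

end

lemma adj_sig: "x \<in> darts N \<Longrightarrow> (x, sig N x) \<in> adj N"
  by (auto simp: adj_def)
lemma adj_alph: "x \<in> darts N \<Longrightarrow> (x, alph N x) \<in> adj N"
  by (auto simp: adj_def)

context sctx begin

lemma conn_M: "d \<in> D \<Longrightarrow> e \<in> D \<Longrightarrow> (d, e) \<in> (adj M)\<^sup>*"
  using wf by (simp add: wf_map_def connected_map_def)

lemma lift_step: "e \<in> D \<Longrightarrow> (e, f) \<in> adj M \<Longrightarrow> (2 * e, 2 * f) \<in> (adj M')\<^sup>*"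
proof -
  assume e: "e \<in> D" and ef: "(e, f) \<in> adj M"
  hence "f = s e \<or> f = a e" by (auto simp: adj_def)
  thus ?thesis
  proof
    assume f: "f = a e"
    have "(2 * e, alph M' (2 * e)) \<in> adj M'" using e by (intro adj_alph) simp
    thus ?thesis using f by simp
  next
    assume f: "f = s e"
    show ?thesis
    proof (cases "vk M e = Cross \<and> e \<notin> F")
      case True
      have sF: "s (s (s e)) \<in> F" using F_s1 F_s2 e True s_in vk_s by metis
      have 1: "(2 * e, Suc (2 * s (s (s e)))) \<in> adj M'"
        using adj_sig[of "2 * e" M'] e True by simp
      have 2: "(Suc (2 * s (s (s e))), Suc (2 * s e)) \<in> adj M'"
        using adj_alph[of "Suc (2 * s (s (s e)))" M'] sF True e by simp
      have 3: "(Suc (2 * s e), 2 * s e) \<in> adj M'"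
        using adj_sig[of "Suc (2 * s e)" M'] F_s1 e True by simp
      show ?thesis using 1 2 3 f by (meson converse_rtrancl_into_rtrancl r_into_rtrancl)
    next
      case False
      have "(2 * e, sig M' (2 * e)) \<in> adj M'" using e by (intro adj_sig) simp
      moreover have "sig M' (2 * e) = 2 * s e" using False by (simp only: sm_sig_e if_False)
      ultimately show ?thesis using f by simp
    qed
  qed
qed

lemma adj_in: "(e, f) \<in> adj M \<Longrightarrow> f \<in> D"
  by (auto simp: adj_def s_in a_in)

lemma lift: "(d, e) \<in> (adj M)\<^sup>* \<Longrightarrow> d \<in> D \<Longrightarrow> (2 * d, 2 * e) \<in> (adj M')\<^sup>* \<and> e \<in> D"
proof (induction rule: rtrancl_induct)
  case base then show ?case by simp
next
  case (step e f)
  then show ?case using lift_step adj_in by (meson rtrancl_trans)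
qed

lemma conn': "connected_map M'"
  unfolding connected_map_def
proof (intro ballI)
  fix n n' assume n: "n \<in> darts M'" and n': "n' \<in> darts M'"
  obtain d where d: "d \<in> D" "(n, 2 * d) \<in> (adj M')\<^sup>*"
  proof (rule dcases[OF n])
    fix d assume "d \<in> D" "n = 2 * d" thus ?thesis using that by blast
  next
    fix x assume x: "x \<in> F" "n = Suc (2 * x)"
    have "(n, 2 * x) \<in> adj M'" using adj_sig[OF n] x by simp
    thus ?thesis using that F_sub x by blast
  qed
  obtain e where e: "e \<in> D" "(2 * e, n') \<in> (adj M')\<^sup>*"
  proof (rule dcases[OF n'])
    fix d assume "d \<in> D" "n' = 2 * d" thus ?thesis using that by blast
  next
    fix x assume x: "x \<in> F" "n' = Suc (2 * x)"
    have xc: "x \<in> D" "vk M x = Cross" using F_sub x by auto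
    have "s x \<notin> F" using F_s1 xc x by simp
    hence "sig M' (2 * s x) = n'" using x xc s_in by simp
    hence "(2 * s x, n') \<in> adj M'" using adj_sig[of "2 * s x" M'] xc s_in by simp
    thus ?thesis using that xc s_in by blast
  qed
  have "(2 * d, 2 * e) \<in> (adj M')\<^sup>*" using lift[OF conn_M[OF d(1) e(1)] d(1)] by simp
  thus "(n, n') \<in> (adj M')\<^sup>*" using d e by (meson rtrancl_trans)
qed

end

lemma invol_bij: "finite A \<Longrightarrow> (\<And>x. x \<in> A \<Longrightarrow> f x \<in> A \<and> f (f x) = x) \<Longrightarrow> bij_betw f A A"
proof -
  assume fin: "finite A" and h: "\<And>x. x \<in> A \<Longrightarrow> f x \<in> A \<and> f (f x) = x"
  have "inj_on f A" unfolding inj_on_def using h by metis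
  moreover have "f ` A \<subseteq> A" using h by auto
  ultimately show ?thesis using endo_inj_surj[OF fin] by (simp add: bij_betw_def)
qed

context sctx begin

abbreviation "ph \<equiv> s \<circ> a"
abbreviation "ph' \<equiv> sig M' \<circ> alph M'"

lemma a_bij: "bij_betw a D D" using invol_bij[OF fin] a_in a_a by blast
lemma ph_bij: "bij_betw ph D D" using bij_betw_trans[OF a_bij s_bij] .
lemma alph'_bij: "bij_betw (alph M') (darts M') (darts M')"
  using invol_bij[OF finM'] alph_ok by blast
lemma ph'_bij: "bij_betw ph' (darts M') (darts M')" using bij_betw_trans[OF alph'_bij sig_bij] .

lemma ph'_step: "e \<in> D \<Longrightarrow> ph' (2 * e) = 2 * ph e \<or>
   (vk M (a e) = Cross \<and> ph' (2 * e) = Suc (2 * s (s (s (a e)))) \<and> ph' (ph' (2 * e)) = 2 * ph e)"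
proof -
  assume e: "e \<in> D"
  have ae: "a e \<in> D" using a_in e .
  show ?thesis
  proof (cases "vk M (a e) = Cross \<and> a e \<notin> F")
    case True
    have "ph' (ph' (2 * e)) = 2 * ph e" using True ae by simp
    then show ?thesis using True by simp
  next
    case False
    have "ph' (2 * e) = sig M' (2 * a e)" by simp
    also have "\<dots> = 2 * s (a e)" using False by (simp only: sm_sig_e if_False)
    finally show ?thesis by simp
  qed
qed

lemma ph'_reach: "d \<in> D \<Longrightarrow> 2 * (ph ^^ n) d \<in> orb ph' (2 * d)"
proof (induction n)
  case 0 then show ?case by simp
next
  case (Suc n)
  have e: "(ph ^^ n) d \<in> D" using funpow_in[OF ph_bij Suc.prems] .
  from ph'_step[OF e] have "2 * ph ((ph ^^ n) d) \<in> orb ph' (2 * d)"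
    using Suc orb_step by metis
  moreover have eq: "(ph ^^ Suc n) d = ph ((ph ^^ n) d)" by simp
  ultimately show ?case by (simp only: eq)
qed

lemma ph'_reach2: "d \<in> D \<Longrightarrow> e \<in> orb ph d \<Longrightarrow> 2 * e \<in> orb ph' (2 * d)"
  using ph'_reach unfolding orb_def by auto

lemma ph'_orb_sub: assumes d: "d \<in> D"
  shows "orb ph' (2 * d) \<subseteq> (\<lambda>e. 2 * e) ` orb ph d \<union>
     {Suc (2 * s (s (s (a e)))) | e. e \<in> orb ph d \<and> vk M (a e) = Cross}" (is "_ \<subseteq> ?S")
proof (rule orb_sub_closed)
  show "2 * d \<in> ?S" by simp
next
  fix x assume x: "x \<in> ?S"
  have oD: "orb ph d \<subseteq> D" using orb_subset_A[OF ph_bij d] .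
  show "ph' x \<in> ?S"
  proof (cases "x \<in> (\<lambda>e. 2 * e) ` orb ph d")
    case True
    then obtain e where e: "e \<in> orb ph d" "x = 2 * e" by auto
    have eD: "e \<in> D" using e oD by auto
    have pe: "ph e \<in> orb ph d" using orb_step[OF e(1)] .
    from ph'_step[OF eD] show ?thesis
    proof
      assume "ph' (2 * e) = 2 * ph e"
      hence "ph' x = 2 * ph e" using e by simp
      thus ?thesis using pe by (intro UnI1) (rule image_eqI)
    next
      assume h: "vk M (a e) = Cross \<and> ph' (2 * e) = Suc (2 * s (s (s (a e)))) \<and> ph' (ph' (2 * e)) = 2 * ph e"
      hence "ph' x = Suc (2 * s (s (s (a e))))" using e(2) by (simp only:)
      thus ?thesis using h e(1) by (intro UnI2) blast
    qed
  next
    case False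
    then obtain e where e: "e \<in> orb ph d" "vk M (a e) = Cross" "x = Suc (2 * s (s (s (a e))))"
      using x by auto
    have eD: "e \<in> D" using e oD by auto
    have ae: "a e \<in> D" using a_in eD .
    have "ph' x = 2 * ph e" using e ae by simp
    moreover have "ph e \<in> orb ph d" using orb_step[OF e(1)] .
    ultimately show ?thesis by (intro UnI1) (rule image_eqI)
  qed
qed

lemma ph'_back: "d \<in> D \<Longrightarrow> 2 * e \<in> orb ph' (2 * d) \<Longrightarrow> e \<in> orb ph d"
proof -
  assume d: "d \<in> D" and h: "2 * e \<in> orb ph' (2 * d)"
  have "2 * e \<in> (\<lambda>e. 2 * e) ` orb ph d \<union>
     {Suc (2 * s (s (s (a e)))) | e. e \<in> orb ph d \<and> vk M (a e) = Cross}"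
    using ph'_orb_sub[OF d] h by blast
  thus "e \<in> orb ph d" by auto
qed

lemma faces_card: "card (orb ph' ` darts M') = card (orb ph ` D)"
proof -
  have eq: "orb ph' ` darts M' = (\<lambda>d. orb ph' (2 * d)) ` D"
  proof
    show "(\<lambda>d. orb ph' (2 * d)) ` D \<subseteq> orb ph' ` darts M'" by auto
  next
    show "orb ph' ` darts M' \<subseteq> (\<lambda>d. orb ph' (2 * d)) ` D"
    proof
      fix Q assume "Q \<in> orb ph' ` darts M'"
      then obtain n where n: "n \<in> darts M'" "Q = orb ph' n" by auto
      show "Q \<in> (\<lambda>d. orb ph' (2 * d)) ` D"
      proof (rule dcases[OF n(1)])
        fix d assume "d \<in> D" "n = 2 * d" thus ?thesis using n by auto
      next
        fix x assume x: "x \<in> F" "n = Suc (2 * x)"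
        have xc: "x \<in> D" "vk M x = Cross" using F_sub x by auto
        have "ph' n = 2 * s (s x)" using x xc s_in F_s2 by simp
        hence "2 * s (s x) \<in> orb ph' n" using orb_step[OF orb_self[of n ph']] by simp
        hence "orb ph' (2 * s (s x)) = orb ph' n" by (rule orb_eq[OF ph'_bij finM' n(1)])
        hence "orb ph' (2 * s (s x)) = Q" using n(2) by simp
        moreover have "s (s x) \<in> D" using s_in xc by simp
        ultimately show ?thesis by auto
      qed
    qed
  qed
  have "card ((\<lambda>d. orb ph' (2 * d)) ` D) = card (orb ph ` D)"
  proof (rule card_eq_kernel)
    fix d e assume d: "d \<in> D" and e: "e \<in> D"
    show "(orb ph' (2 * d) = orb ph' (2 * e)) = (orb ph d = orb ph e)"
    proof
      assume h: "orb ph' (2 * d) = orb ph' (2 * e)"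
      have "2 * e \<in> orb ph' (2 * d)" using h by simp
      hence "e \<in> orb ph d" using ph'_back d by blast
      hence "orb ph e = orb ph d" by (rule orb_eq[OF ph_bij fin d])
      thus "orb ph d = orb ph e" by simp
    next
      assume h: "orb ph d = orb ph e"
      have "e \<in> orb ph d" using h by simp
      hence "2 * e \<in> orb ph' (2 * d)" using ph'_reach2 d by blast
      moreover have "2 * d \<in> darts M'" using d by simp
      ultimately have "orb ph' (2 * e) = orb ph' (2 * d)" using orb_eq[OF ph'_bij finM'] by blast
      thus "orb ph' (2 * d) = orb ph' (2 * e)" by simp
    qed
  qed
  thus ?thesis using eq by simp
qed

end

context sctx begin

abbreviation "NC \<equiv> {d \<in> D. vk M d \<noteq> Cross}"
abbreviation "CC \<equiv> {d \<in> D. vk M d = Cross}"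

lemma orb_s_eq: "d \<in> D \<Longrightarrow> e \<in> orb s d \<Longrightarrow> orb s e = orb s d"
  by (rule orb_eq[OF s_bij fin])

lemma cross_orb: assumes "x \<in> D" "vk M x = Cross"
  shows "orb s x = {x, s x, s (s x), s (s (s x))}"
proof
  show "orb s x \<subseteq> {x, s x, s (s x), s (s (s x))}"
    by (rule orb_sub_closed) (use assms in auto)
  have "s x \<in> orb s x" "s (s x) \<in> orb s x" "s (s (s x)) \<in> orb s x"
    by (auto intro!: orb_step)
  thus "{x, s x, s (s x), s (s (s x))} \<subseteq> orb s x" by auto
qed

lemma nc_orb': "d \<in> NC \<Longrightarrow> orb (sig M') (2 * d) = (\<lambda>e. 2 * e) ` orb s d"
  by (rule orb_image[where S = NC]) (auto simp: s_in)

lemma cr_orb': "x \<in> F \<Longrightarrow> orb (sig M') (Suc (2 * x)) \<subseteq> {Suc (2 * x), 2 * x, 2 * s x}"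
proof (rule orb_sub_closed)
  fix y assume x: "x \<in> F" and y: "y \<in> {Suc (2 * x), 2 * x, 2 * s x}"
  have xc: "x \<in> D" "vk M x = Cross" using F_sub x by auto
  have "s x \<notin> F" using F_s1 xc x by simp
  thus "sig M' y \<in> {Suc (2 * x), 2 * x, 2 * s x}" using y x xc s_in by auto
qed simp

lemma sig'_bij_orb: "n \<in> darts M' \<Longrightarrow> m \<in> orb (sig M') n \<Longrightarrow> orb (sig M') m = orb (sig M') n"
  by (rule orb_eq[OF sig_bij finM'])

lemma V'_eq: "orb (sig M') ` darts M' =
   (\<lambda>d. orb (sig M') (2 * d)) ` NC \<union> (\<lambda>x. orb (sig M') (Suc (2 * x))) ` F"
proof
  show "(\<lambda>d. orb (sig M') (2 * d)) ` NC \<union> (\<lambda>x. orb (sig M') (Suc (2 * x))) ` F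
        \<subseteq> orb (sig M') ` darts M'" by auto
next
  show "orb (sig M') ` darts M' \<subseteq>
     (\<lambda>d. orb (sig M') (2 * d)) ` NC \<union> (\<lambda>x. orb (sig M') (Suc (2 * x))) ` F"
  proof
    fix Q assume "Q \<in> orb (sig M') ` darts M'"
    then obtain n where n: "n \<in> darts M'" "Q = orb (sig M') n" by auto
    show "Q \<in> (\<lambda>d. orb (sig M') (2 * d)) ` NC \<union> (\<lambda>x. orb (sig M') (Suc (2 * x))) ` F"
    proof (rule dcases[OF n(1)])
      fix x assume "x \<in> F" "n = Suc (2 * x)" thus ?thesis using n by auto
    next
      fix d assume d: "d \<in> D" "n = 2 * d"
      show ?thesis
      proof (cases "vk M d = Cross")
        case False thus ?thesis using n d by auto
      next
        case c: True
        show ?thesis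
        proof (cases "d \<in> F")
          case True
          have "sig M' (Suc (2 * d)) = n" using d by simp
          hence "n \<in> orb (sig M') (Suc (2 * d))" using orb_step[OF orb_self] by metis
          hence "orb (sig M') n = orb (sig M') (Suc (2 * d))"
            by (rule sig'_bij_orb[rotated]) (simp add: True)
          thus ?thesis using n True by auto
        next
          case False
          have xF: "s (s (s d)) \<in> F" using F_s1 F_s2 d c False s_in vk_s by metis
          have "sig M' n = Suc (2 * s (s (s d)))" using d c False by simp
          hence "Suc (2 * s (s (s d))) \<in> orb (sig M') n" using orb_step[OF orb_self] by metis
          hence "orb (sig M') (Suc (2 * s (s (s d)))) = orb (sig M') n"
            by (rule sig'_bij_orb[OF n(1)])
          thus ?thesis using n xF by (intro UnI2) auto
        qed
      qed
    qed
  qed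
qed

lemma card_V': "card (orb (sig M') ` darts M') = card (orb s ` NC) + card F"
proof -
  have finNC: "finite NC" using fin by simp
  have finF: "finite F" using F_sub fin by (meson finite_subset subsetI)
  have disj: "(\<lambda>d. orb (sig M') (2 * d)) ` NC \<inter> (\<lambda>x. orb (sig M') (Suc (2 * x))) ` F = {}"
  proof (rule ccontr)
    assume "\<not> ?thesis"
    then obtain d x where d: "d \<in> NC" and x: "x \<in> F"
      and eq: "orb (sig M') (2 * d) = orb (sig M') (Suc (2 * x))" by auto
    have "Suc (2 * x) \<in> (\<lambda>e. 2 * e) ` orb s d" using eq nc_orb'[OF d] orb_self by metis
    thus False by auto
  qed
  have c1: "card ((\<lambda>d. orb (sig M') (2 * d)) ` NC) = card (orb s ` NC)"
  proof (rule card_eq_kernel)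
    fix d e assume "d \<in> NC" "e \<in> NC"
    thus "(orb (sig M') (2 * d) = orb (sig M') (2 * e)) = (orb s d = orb s e)"
      using nc_orb' by (simp add: inj_image_eq_iff inj_on_def)
  qed
  have c2: "card ((\<lambda>x. orb (sig M') (Suc (2 * x))) ` F) = card F"
  proof (rule card_image, rule inj_onI)
    fix x y assume x: "x \<in> F" and y: "y \<in> F" and eq: "orb (sig M') (Suc (2 * x)) = orb (sig M') (Suc (2 * y))"
    have "Suc (2 * y) \<in> {Suc (2 * x), 2 * x, 2 * s x}" using cr_orb'[OF x] eq orb_self by blast
    thus "x = y" by auto
  qed
  show ?thesis unfolding V'_eq
    using card_Un_disjoint[OF finite_imageI[OF finNC] finite_imageI[OF finF] disj] c1 c2 by simp
qed

lemma card_V: "card (orb s ` D) = card (orb s ` NC) + card (orb s ` CC)"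
proof -
  have "D = NC \<union> CC" by auto
  hence eq: "orb s ` D = orb s ` NC \<union> orb s ` CC" by auto
  have disj: "orb s ` NC \<inter> orb s ` CC = {}"
  proof (rule ccontr)
    assume "\<not> ?thesis"
    then obtain d c where d: "d \<in> NC" and c: "c \<in> CC" and e: "orb s d = orb s c" by auto
    have "orb s c \<subseteq> CC" by (rule orb_sub_closed) (use c s_in in auto)
    thus False using e d orb_self by blast
  qed
  show ?thesis unfolding eq by (rule card_Un_disjoint) (use fin disj in auto)
qed

lemma pair_props: "x \<in> F \<Longrightarrow> x \<in> D \<and> vk M x = Cross \<and> s (s x) \<in> F \<and> s (s (s (s x))) = x \<and> s (s x) \<noteq> x"
proof -
  assume x: "x \<in> F"
  have xc: "x \<in> D" "vk M x = Cross" using F_sub x by auto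
  show ?thesis using xc x F_s2[OF xc] c_ne2[OF xc] c4[OF xc] by simp
qed

lemma card_F: "card F = 2 * card (orb s ` CC)"
proof -
  have finF: "finite F" using F_sub fin by (meson finite_subset subsetI)
  let ?P = "(\<lambda>x. {x, s (s x)}) ` F"
  have un: "\<Union> ?P = F"
  proof
    show "\<Union> ?P \<subseteq> F" using pair_props by auto
    show "F \<subseteq> \<Union> ?P" by auto
  qed
  have "2 * card ?P = card (\<Union> ?P)"
  proof (rule card_partition)
    show "finite ?P" using finF by simp
    show "finite (\<Union> ?P)" using un finF by simp
  next
    fix c assume "c \<in> ?P"
    then obtain x where x: "x \<in> F" "c = {x, s (s x)}" by auto
    have "s (s x) \<noteq> x" using pair_props[OF x(1)] by simp
    thus "card c = 2" using x(2) by simp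
  next
    fix c1 c2 assume "c1 \<in> ?P" "c2 \<in> ?P" "c1 \<noteq> c2"
    then obtain x y where x: "x \<in> F" "c1 = {x, s (s x)}" and y: "y \<in> F" "c2 = {y, s (s y)}" by auto
    note px = pair_props[OF x(1)] and py = pair_props[OF y(1)]
    show "c1 \<inter> c2 = {}"
    proof (rule ccontr)
      assume "c1 \<inter> c2 \<noteq> {}"
      hence "x = y \<or> x = s (s y) \<or> s (s x) = y \<or> s (s x) = s (s y)" using x y by auto
      hence "c1 = c2"
      proof (elim disjE)
        assume "x = y" thus ?thesis using x y by simp
      next
        assume h: "x = s (s y)"
        hence "s (s x) = y" using py by simp
        thus ?thesis using x y h by auto
      next
        assume h: "s (s x) = y"
        thus ?thesis using x y px by auto
      next
        assume h: "s (s x) = s (s y)"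
        hence "x = y" using s_inj s_in px py by metis
        thus ?thesis using x y by simp
      qed
      thus False using \<open>c1 \<noteq> c2\<close> by simp
    qed
  qed
  hence cF: "card F = 2 * card ?P" using un by simp
  have "card ?P = card (orb s ` F)"
  proof (rule card_eq_kernel)
    fix x y assume x: "x \<in> F" and y: "y \<in> F"
    have xc: "x \<in> D" "vk M x = Cross" using F_sub x by auto
    note px = pair_props[OF x]
    show "({x, s (s x)} = {y, s (s y)}) = (orb s x = orb s y)"
    proof
      assume "{x, s (s x)} = {y, s (s y)}"
      hence "y = x \<or> y = s (s x)" by auto
      hence "y \<in> orb s x" using cross_orb[OF xc] by auto
      hence "orb s y = orb s x" by (rule orb_s_eq[OF xc(1)])
      thus "orb s x = orb s y" by simp
    next
      assume "orb s x = orb s y"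
      hence "y \<in> orb s x" using orb_self by metis
      hence "y \<in> {x, s x, s (s x), s (s (s x))}" using cross_orb[OF xc] by simp
      moreover have "s x \<notin> F" using F_s1[OF xc] x by simp
      moreover have "s (s (s x)) \<notin> F"
      proof -
        have "s x \<in> D" "vk M (s x) = Cross" using xc s_in by auto
        thus ?thesis using F_s2[of "s x"] F_s1[OF xc] x by simp
      qed
      ultimately have "y = x \<or> y = s (s x)" using y by auto
      thus "{x, s (s x)} = {y, s (s y)}" using px by auto
    qed
  qed
  moreover have "orb s ` F = orb s ` CC"
  proof
    show "orb s ` F \<subseteq> orb s ` CC" using F_sub by auto
  next
    show "orb s ` CC \<subseteq> orb s ` F"
    proof
      fix Q assume "Q \<in> orb s ` CC"
      then obtain c where c: "c \<in> CC" "Q = orb s c" by auto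
      show "Q \<in> orb s ` F"
      proof (cases "c \<in> F")
        case True thus ?thesis using c by auto
      next
        case False
        hence sc: "s c \<in> F" using F_s1 c by auto
        have "s c \<in> orb s c" by (rule orb_step[OF orb_self])
        hence "orb s (s c) = orb s c" using c by (intro orb_s_eq) auto
        thus ?thesis using c sc by (metis image_eqI)
      qed
    qed
  qed
  ultimately show ?thesis using cF by simp
qed

lemma card_darts': "card (darts M') = card D + card F"
proof -
  have finF: "finite F" using F_sub fin by (meson finite_subset subsetI)
  have "card (darts M') = card ((\<lambda>d. 2 * d) ` D) + card ((\<lambda>x. 2 * x + 1) ` F)"
    unfolding sm_darts by (rule card_Un_disjoint) (use fin finF in auto)
  also have "\<dots> = card D + card F" by (simp add: card_image inj_on_def)
  finally show ?thesis .
qed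

lemma spherical': "spherical_map M'"
proof -
  have sM: "spherical_map M" using wf by (simp add: wf_map_def)
  have "card (darts M') div 2 = card D div 2 + card (orb s ` CC)"
    using card_darts' card_F by simp
  thus ?thesis using sM card_V' card_V card_F faces_card unfolding spherical_map_def
    by (simp add: comp_def)
qed

lemma wf': "wf_map M'"
  unfolding wf_map_def
  using finM' alph_ok sig_bij vk_sig' thick_alph' dr_alph' conn' spherical' by blast

end

lemma deg4_props:
  assumes w: "wf_map M" and d: "d \<in> darts M" and dg: "deg M d = 4"
  shows "sig M (sig M (sig M (sig M d))) = d \<and> sig M d \<noteq> d \<and> sig M (sig M d) \<noteq> d
     \<and> sig M (sig M (sig M d)) \<noteq> d"
proof -
  let ?s = "sig M"
  have b: "bij_betw ?s (darts M) (darts M)" and fin: "finite (darts M)" using w by (auto simp: wf_map_def)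
  have sin: "\<And>x. x \<in> darts M \<Longrightarrow> ?s x \<in> darts M" using b by (meson bij_betwE)
  have inj: "\<And>x y. x \<in> darts M \<Longrightarrow> y \<in> darts M \<Longrightarrow> ?s x = ?s y \<Longrightarrow> x = y"
    using b by (meson bij_betw_imp_inj_on inj_onD)
  have c4: "card (orb ?s d) = 4" using dg by (simp add: deg_def)
  have finO: "finite (orb ?s d)" using orb_subset_A[OF b d] fin by (rule finite_subset)
  have n1: "?s d \<noteq> d"
  proof
    assume h: "?s d = d"
    have "orb ?s d \<subseteq> {d}" by (rule orb_sub_closed) (use h in auto)
    hence "card (orb ?s d) \<le> card {d}" by (rule card_mono[rotated]) simp
    thus False using c4 by simp
  qed
  have n2: "?s (?s d) \<noteq> d"
  proof
    assume h: "?s (?s d) = d"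
    have "orb ?s d \<subseteq> {d, ?s d}" by (rule orb_sub_closed) (use h in auto)
    hence "card (orb ?s d) \<le> card {d, ?s d}" by (rule card_mono[rotated]) simp
    also have "\<dots> \<le> 2" by (simp add: card_insert_le_m1)
    finally show False using c4 by simp
  qed
  have n3: "?s (?s (?s d)) \<noteq> d"
  proof
    assume h: "?s (?s (?s d)) = d"
    have "orb ?s d \<subseteq> {d, ?s d, ?s (?s d)}" by (rule orb_sub_closed) (use h in auto)
    hence "card (orb ?s d) \<le> card {d, ?s d, ?s (?s d)}" by (rule card_mono[rotated]) simp
    also have "\<dots> \<le> 3" by (simp add: card_insert_le_m1)
    finally show False using c4 by simp
  qed
  have sd: "?s d \<in> darts M" "?s (?s d) \<in> darts M" "?s (?s (?s d)) \<in> darts M" using sin d by auto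
  have dist1: "?s d \<noteq> ?s (?s d)"
  proof
    assume "?s d = ?s (?s d)" hence "d = ?s d" using inj sd d by blast
    thus False using n1 by simp
  qed
  have dist2: "?s d \<noteq> ?s (?s (?s d))"
  proof
    assume "?s d = ?s (?s (?s d))" hence "d = ?s (?s d)" using inj sd d by blast
    thus False using n2 by simp
  qed
  have dist3: "?s (?s d) \<noteq> ?s (?s (?s d))"
  proof
    assume "?s (?s d) = ?s (?s (?s d))" hence "?s d = ?s (?s d)" using inj sd d by blast
    thus False using dist1 by simp
  qed
  note dist = dist1 dist2 dist3
  have sub: "{d, ?s d, ?s (?s d), ?s (?s (?s d))} \<subseteq> orb ?s d"
    by (auto intro!: orb_step)
  have i1: "d \<notin> {?s d, ?s (?s d), ?s (?s (?s d))}" using n1 n2 n3 by force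
  have i2: "?s d \<notin> {?s (?s d), ?s (?s (?s d))}" using dist by force
  have i3: "?s (?s d) \<notin> {?s (?s (?s d))}" using dist by force
  have c4': "card {d, ?s d, ?s (?s d), ?s (?s (?s d))} = 4"
    using i1 i2 i3 by simp
  have eq: "{d, ?s d, ?s (?s d), ?s (?s (?s d))} = orb ?s d"
    by (rule card_subset_eq[OF finO sub]) (simp only: c4 c4')
  have "?s (?s (?s (?s d))) \<in> orb ?s d" by (auto intro!: orb_step)
  hence "?s (?s (?s (?s d))) \<in> {d, ?s d, ?s (?s d), ?s (?s (?s d))}" using eq by simp
  moreover have "?s (?s (?s (?s d))) \<noteq> ?s d" using inj[of "?s (?s (?s d))" d] sd d n3 by blast
  moreover have "?s (?s (?s (?s d))) \<noteq> ?s (?s d)" using inj[of "?s (?s (?s d))" "?s d"] inj[of "?s (?s d)" d] sd d n2 by blast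
  moreover have "?s (?s (?s (?s d))) \<noteq> ?s (?s (?s d))" using inj[of "?s (?s (?s d))" "?s (?s d)"] inj[of "?s (?s d)" "?s d"] inj[of "?s d" d] sd d n1 by blast
  ultimately have "?s (?s (?s (?s d))) = d" by blast
  thus ?thesis using n1 n2 n3 by simp
qed

lemma kd_cross_ok: "is_kd M \<Longrightarrow> cross_ok M"
  unfolding cross_ok_def
proof (intro ballI impI)
  fix d assume k: "is_kd M" and d: "d \<in> darts M" and c: "vk M d = Cross"
  have w: "wf_map M" using k by (simp add: is_kd_def)
  have "deg M d = 4 \<and> dr M (sig M (sig M d)) = opp (dr M d)" using k d c by (simp add: is_kd_def)
  moreover have "dr M d \<noteq> Unor" using k d by (simp add: is_kd_def)
  ultimately show "sig M (sig M (sig M (sig M d))) = d \<and> sig M d \<noteq> d \<and> sig M (sig M d) \<noteq> d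
     \<and> sig M (sig M (sig M d)) \<noteq> d \<and> dr M (sig M (sig M d)) = opp (dr M d) \<and> dr M d \<noteq> Unor"
    using deg4_props[OF w d] by simp
qed

context sctx begin

lemma cross_vertex: assumes n: "n \<in> darts M'" and c: "vk M (n div 2) = Cross"
  shows "\<exists>x\<in>F. orb (sig M') n = {Suc (2 * x), 2 * x, 2 * s x}"
proof -
  have T: "orb (sig M') (Suc (2 * x)) = {Suc (2 * x), 2 * x, 2 * s x}" if x: "x \<in> F" for x
  proof
    show "orb (sig M') (Suc (2 * x)) \<subseteq> {Suc (2 * x), 2 * x, 2 * s x}" by (rule cr_orb'[OF x])
    have "2 * x \<in> orb (sig M') (Suc (2 * x))" using orb_step[OF orb_self, of "sig M'" "Suc (2 * x)"] by simp
    moreover have "2 * s x \<in> orb (sig M') (Suc (2 * x))"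
      using orb_step[OF \<open>2 * x \<in> _\<close>] x by simp
    ultimately show "{Suc (2 * x), 2 * x, 2 * s x} \<subseteq> orb (sig M') (Suc (2 * x))" by auto
  qed
  show ?thesis
  proof (rule dcases[OF n])
    fix x assume "x \<in> F" "n = Suc (2 * x)" thus ?thesis using T by blast
  next
    fix d assume d: "d \<in> D" "n = 2 * d"
    have c': "vk M d = Cross" using c d by simp
    show ?thesis
    proof (cases "d \<in> F")
      case True
      have "sig M' (Suc (2 * d)) = n" using d by simp
      hence "n \<in> orb (sig M') (Suc (2 * d))" using orb_step[OF orb_self] by metis
      hence "orb (sig M') n = orb (sig M') (Suc (2 * d))"
        by (rule sig'_bij_orb[rotated]) (simp add: True)
      thus ?thesis using T True by blast
    next
      case False
      have xF: "s (s (s d)) \<in> F" using F_s1 F_s2 d c' False s_in vk_s by metis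
      have "sig M' n = Suc (2 * s (s (s d)))" using d c' False by simp
      hence "Suc (2 * s (s (s d))) \<in> orb (sig M') n" using orb_step[OF orb_self] by metis
      hence "orb (sig M') (Suc (2 * s (s (s d)))) = orb (sig M') n"
        by (rule sig'_bij_orb[OF n])
      thus ?thesis using T xF by metis
    qed
  qed
qed

lemma deg'_nc: "d \<in> D \<Longrightarrow> vk M d \<noteq> Cross \<Longrightarrow> deg M' (2 * d) = deg M d"
  unfolding deg_def using nc_orb'[of d] by (simp add: card_image inj_on_def)

end

lemma lg_smooth:
  assumes k: "is_kd M" and st: "F \<in> states M"
  shows "is_lg (smooth M F)"
proof -
  interpret sctx M F using k st kd_cross_ok by unfold_locales (auto simp: is_kd_def)
  have kvk: "\<And>d. d \<in> D \<Longrightarrow> vk M d \<in> {Tail, Head, Cross, Mark} \<and> thick M d \<and> dr M d \<noteq> Unor"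
    using k by (simp add: is_kd_def)
  have tail1: "\<exists>!d. d \<in> D \<and> vk M d = Tail" and head1: "\<exists>!d. d \<in> D \<and> vk M d = Head"
    using k by (simp_all add: is_kd_def)
  have kT: "\<And>d. d \<in> D \<Longrightarrow> vk M d = Tail \<Longrightarrow> deg M d = 1 \<and> dr M d = Out"
    and kH: "\<And>d. d \<in> D \<Longrightarrow> vk M d = Head \<Longrightarrow> deg M d = 1 \<and> dr M d = In"
    and kM: "\<And>d. d \<in> D \<Longrightarrow> vk M d = Mark \<Longrightarrow> deg M d = 2 \<and> dr M (s d) = opp (dr M d)"
    using k by (simp_all add: is_kd_def)
  have vkodd: "\<And>x. x \<in> F \<Longrightarrow> vk M' (Suc (2 * x)) \<in> {EmptyV, SolidV}"
    using F_sub by simp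
  have c1: "\<forall>n\<in>darts M'. vk M' n \<in> {Tail, Head, EmptyV, SolidV, Mark} \<and> \<not> over M' n"
  proof
    fix n assume "n \<in> darts M'"
    thus "vk M' n \<in> {Tail, Head, EmptyV, SolidV, Mark} \<and> \<not> over M' n"
      by (rule dcases) (use kvk F_sub in auto)
  qed
  have c2: "\<forall>n\<in>darts M'. thick M' n \<longrightarrow> dr M' n \<noteq> Unor"
  proof
    fix n assume "n \<in> darts M'"
    thus "thick M' n \<longrightarrow> dr M' n \<noteq> Unor" by (rule dcases) (use kvk in auto)
  qed
  have uniq: "\<exists>!n. n \<in> darts M' \<and> vk M' n = K" if u: "\<exists>!d. d \<in> D \<and> vk M d = K"
    and K: "K \<noteq> EmptyV" "K \<noteq> SolidV" "K \<noteq> Cross" for K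
  proof -
    obtain t where t: "t \<in> D" "vk M t = K" and tu: "\<And>d. d \<in> D \<Longrightarrow> vk M d = K \<Longrightarrow> d = t"
      using u by auto
    show ?thesis
    proof (rule ex1I[of _ "2 * t"])
      show "2 * t \<in> darts M' \<and> vk M' (2 * t) = K" using t K by simp
    next
      fix n assume n: "n \<in> darts M' \<and> vk M' n = K"
      show "n = 2 * t"
      proof (rule dcases[of n])
        show "n \<in> darts M'" using n by simp
      next
        fix x assume "x \<in> F" "n = Suc (2 * x)" thus ?thesis using n vkodd K by auto
      next
        fix d assume d: "d \<in> D" "n = 2 * d"
        have "vk M d = K" using n d K by (auto split: if_splits)
        thus ?thesis using tu d by simp
      qed
    qed
  qed
  have c3: "\<exists>!n. n \<in> darts M' \<and> vk M' n = Tail" by (rule uniq[OF tail1]) auto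
  have c4: "\<exists>!n. n \<in> darts M' \<and> vk M' n = Head" by (rule uniq[OF head1]) auto
  have evenK: "\<And>n K. n \<in> darts M' \<Longrightarrow> vk M' n = K \<Longrightarrow> K \<noteq> EmptyV \<Longrightarrow> K \<noteq> SolidV \<Longrightarrow>
       \<exists>d. d \<in> D \<and> n = 2 * d \<and> vk M d = K"
  proof -
    fix n K assume n: "n \<in> darts M'" and v: "vk M' n = K" and K: "K \<noteq> EmptyV" "K \<noteq> SolidV"
    show "\<exists>d. d \<in> D \<and> n = 2 * d \<and> vk M d = K"
    proof (rule dcases[OF n])
      fix x assume "x \<in> F" "n = Suc (2 * x)" thus ?thesis using v vkodd K by auto
    next
      fix d assume "d \<in> D" "n = 2 * d" thus ?thesis using v K by (auto split: if_splits)
    qed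
  qed
  have c5: "\<forall>n\<in>darts M'. vk M' n = Tail \<longrightarrow> deg M' n = 1 \<and> thick M' n \<and> dr M' n = Out"
  proof (intro ballI impI)
    fix n assume n: "n \<in> darts M'" and v: "vk M' n = Tail"
    obtain d where d: "d \<in> D" "n = 2 * d" "vk M d = Tail" using evenK[OF n v] by auto
    show "deg M' n = 1 \<and> thick M' n \<and> dr M' n = Out" using d kT kvk deg'_nc by simp
  qed
  have c6: "\<forall>n\<in>darts M'. vk M' n = Head \<longrightarrow> deg M' n = 1 \<and> thick M' n \<and> dr M' n = In"
  proof (intro ballI impI)
    fix n assume n: "n \<in> darts M'" and v: "vk M' n = Head"
    obtain d where d: "d \<in> D" "n = 2 * d" "vk M d = Head" using evenK[OF n v] by auto
    show "deg M' n = 1 \<and> thick M' n \<and> dr M' n = In" using d kH kvk deg'_nc by simp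
  qed
  have c8: "\<forall>n\<in>darts M'. vk M' n = Mark \<longrightarrow> deg M' n = 2 \<and> thick M' (sig M' n) = thick M' n
                                   \<and> dr M' (sig M' n) = opp (dr M' n)"
  proof (intro ballI impI)
    fix n assume n: "n \<in> darts M'" and v: "vk M' n = Mark"
    obtain d where d: "d \<in> D" "n = 2 * d" "vk M d = Mark" using evenK[OF n v] by auto
    show "deg M' n = 2 \<and> thick M' (sig M' n) = thick M' n \<and> dr M' (sig M' n) = opp (dr M' n)"
      using d kM kvk deg'_nc s_in by simp
  qed
  have c7: "\<forall>n\<in>darts M'. vk M' n \<in> {EmptyV, SolidV} \<longrightarrow> deg M' n = 3 \<and>
         card {e \<in> orb (sig M') n. \<not> thick M' e} = 1 \<and>
         (\<forall>e\<in>orb (sig M') n. \<not> thick M' e \<longrightarrow>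
            (let a = sig M' e; b = sig M' (sig M' e) in
              (dr M' a = opp (dr M' b) \<and> dr M' e = Unor) \<or> (dr M' a = dr M' b \<and> dr M' e = dr M' a)))"
  proof (intro ballI impI)
    fix n assume n: "n \<in> darts M'" and v: "vk M' n \<in> {EmptyV, SolidV}"
    have "vk M (n div 2) = Cross"
    proof (rule dcases[OF n])
      fix x assume "x \<in> F" "n = Suc (2 * x)" thus ?thesis using F_sub by simp
    next
      fix d assume d: "d \<in> D" "n = 2 * d"
      have "vk M d \<in> {Tail, Head, Cross, Mark}" using kvk d by simp
      thus ?thesis using v d by (auto split: if_splits)
    qed
    then obtain x where x: "x \<in> F" and o: "orb (sig M') n = {Suc (2 * x), 2 * x, 2 * s x}"
      using cross_vertex[OF n] by blast
    have xc: "x \<in> D" "vk M x = Cross" using F_sub x by auto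
    have sx: "s x \<in> D" "s x \<noteq> x" "s x \<notin> F" using s_in xc c_ne1 F_s1 x by auto
    have th: "thick M x" "thick M (s x)" using kvk xc sx by auto
    have "card {Suc (2 * x), 2 * x, 2 * s x} = 3" using sx by simp
    hence dg: "deg M' n = 3" using o by (simp add: deg_def)
    have "{e \<in> orb (sig M') n. \<not> thick M' e} = {Suc (2 * x)}" using o th by auto
    hence cd: "card {e \<in> orb (sig M') n. \<not> thick M' e} = 1" by simp
    have dU: "dr M x \<noteq> Unor" "dr M (s x) \<noteq> Unor" using kvk xc sx by auto
    have orient: "(dr M x = opp (dr M (s x)) \<and> (if dr M x = dr M (s x) then dr M x else Unor) = Unor)
       \<or> (dr M x = dr M (s x) \<and> (if dr M x = dr M (s x) then dr M x else Unor) = dr M x)"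
      using dU by (cases "dr M x"; cases "dr M (s x)") auto
    show "deg M' n = 3 \<and>
         card {e \<in> orb (sig M') n. \<not> thick M' e} = 1 \<and>
         (\<forall>e\<in>orb (sig M') n. \<not> thick M' e \<longrightarrow>
            (let a = sig M' e; b = sig M' (sig M' e) in
              (dr M' a = opp (dr M' b) \<and> dr M' e = Unor) \<or> (dr M' a = dr M' b \<and> dr M' e = dr M' a)))"
      using dg cd o th x orient by (auto simp: Let_def)
  qed
  show ?thesis unfolding is_lg_def using wf' c1 c2 c3 c4 c5 c6 c7 c8 by blast
qed

definition isom :: "(nat \<Rightarrow> nat) \<Rightarrow> dmap \<Rightarrow> dmap \<Rightarrow> bool" where
  "isom \<phi> M M' \<longleftrightarrow> bij_betw \<phi> (darts M) (darts M') \<and>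
     (\<forall>d\<in>darts M. \<phi> (alph M d) = alph M' (\<phi> d) \<and> \<phi> (sig M d) = sig M' (\<phi> d)
        \<and> vk M' (\<phi> d) = vk M d \<and> dr M' (\<phi> d) = dr M d
        \<and> thick M' (\<phi> d) = thick M d \<and> over M' (\<phi> d) = over M d)"

lemma iso_isom: "iso M N \<longleftrightarrow> (\<exists>\<phi>. isom \<phi> M N)"
  by (simp add: iso_def isom_def)

locale ictx =
  fixes \<phi> :: "nat \<Rightarrow> nat" and M N :: dmap
  assumes iso_ax: "isom \<phi> M N" and wfM: "wf_map M"
begin

abbreviation "D \<equiv> darts M"
abbreviation "D' \<equiv> darts N"

lemma bij: "bij_betw \<phi> D D'" using iso_ax by (simp add: isom_def)
lemma inj: "inj_on \<phi> D" using bij by (simp add: bij_betw_def)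
lemma img: "\<phi> ` D = D'" using bij by (simp add: bij_betw_def)
lemma phi_in: "d \<in> D \<Longrightarrow> \<phi> d \<in> D'" using img by auto
lemma phi_eq: "d \<in> D \<Longrightarrow> e \<in> D \<Longrightarrow> \<phi> d = \<phi> e \<longleftrightarrow> d = e" using inj by (meson inj_on_contraD)
lemma D'_cases: "d' \<in> D' \<Longrightarrow> (\<And>d. d \<in> D \<Longrightarrow> d' = \<phi> d \<Longrightarrow> P) \<Longrightarrow> P" using img by auto

lemma c_alph[simp]: "d \<in> D \<Longrightarrow> alph N (\<phi> d) = \<phi> (alph M d)" using iso_ax by (simp add: isom_def)
lemma c_sig[simp]: "d \<in> D \<Longrightarrow> sig N (\<phi> d) = \<phi> (sig M d)" using iso_ax by (simp add: isom_def)
lemma c_vk[simp]: "d \<in> D \<Longrightarrow> vk N (\<phi> d) = vk M d" using iso_ax by (simp add: isom_def)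
lemma c_dr[simp]: "d \<in> D \<Longrightarrow> dr N (\<phi> d) = dr M d" using iso_ax by (simp add: isom_def)
lemma c_thick[simp]: "d \<in> D \<Longrightarrow> thick N (\<phi> d) = thick M d" using iso_ax by (simp add: isom_def)
lemma c_over[simp]: "d \<in> D \<Longrightarrow> over N (\<phi> d) = over M d" using iso_ax by (simp add: isom_def)

lemma finD: "finite D" using wfM by (simp add: wf_map_def)
lemma finD': "finite D'" unfolding img[symmetric] using finD by simp
lemma a_in: "d \<in> D \<Longrightarrow> alph M d \<in> D" using wfM by (simp add: wf_map_def)
lemma s_bij: "bij_betw (sig M) D D" using wfM by (simp add: wf_map_def)
lemma s_in: "d \<in> D \<Longrightarrow> sig M d \<in> D" using s_bij by (meson bij_betwE)

lemma orb_sig: "d \<in> D \<Longrightarrow> orb (sig N) (\<phi> d) = \<phi> ` orb (sig M) d"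
  by (rule orb_image[where S = D]) (auto simp: s_in)
lemma orb_face: "d \<in> D \<Longrightarrow> orb (sig N \<circ> alph N) (\<phi> d) = \<phi> ` orb (sig M \<circ> alph M) d"
  by (rule orb_image[where S = D]) (auto simp: s_in a_in)

lemma deg_eq: "d \<in> D \<Longrightarrow> deg N (\<phi> d) = deg M d"
  unfolding deg_def using orb_sig orb_subset_A[OF s_bij] inj
  by (simp add: card_image inj_on_subset)

lemma card_orbits:
  assumes "\<And>d. d \<in> D \<Longrightarrow> orb g (\<phi> d) = \<phi> ` orb f d" "\<And>d. d \<in> D \<Longrightarrow> orb f d \<subseteq> D"
  shows "card (orb g ` D') = card (orb f ` D)"
proof -
  have "orb g ` D' = (\<lambda>d. orb g (\<phi> d)) ` D" unfolding img[symmetric] by (simp add: image_image)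
  also have "card \<dots> = card (orb f ` D)"
  proof (rule card_eq_kernel)
    fix d e assume d: "d \<in> D" and e: "e \<in> D"
    show "(orb g (\<phi> d) = orb g (\<phi> e)) = (orb f d = orb f e)"
      using assms d e inj_on_image_eq_iff[OF inj] by simp
  qed
  finally show ?thesis .
qed

lemma s'_inj: "inj_on (sig N) D'"
proof (rule inj_onI)
  fix x y assume "x \<in> D'" "y \<in> D'" "sig N x = sig N y"
  thus "x = y"
    by (elim D'_cases) (metis c_sig phi_eq s_in s_bij bij_betw_imp_inj_on inj_onD)
qed

lemma s'_bij: "bij_betw (sig N) D' D'"
proof -
  have "sig N ` D' \<subseteq> D'"
  proof
    fix y assume "y \<in> sig N ` D'"
    then obtain x where x: "x \<in> D'" "y = sig N x" by auto
    from x(1) show "y \<in> D'" by (rule D'_cases) (use x s_in phi_in in simp)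
  qed
  thus ?thesis using endo_inj_surj[OF finD' _ s'_inj] s'_inj by (simp add: bij_betw_def)
qed

lemma adj_lift: "(d, e) \<in> (adj M)\<^sup>* \<Longrightarrow> d \<in> D \<Longrightarrow> (\<phi> d, \<phi> e) \<in> (adj N)\<^sup>* \<and> e \<in> D"
proof (induction rule: rtrancl_induct)
  case base then show ?case by simp
next
  case (step e f)
  hence e: "e \<in> D" "(\<phi> d, \<phi> e) \<in> (adj N)\<^sup>*" by auto
  from step(2) have "f = sig M e \<or> f = alph M e" by (auto simp: adj_def)
  hence "(\<phi> e, \<phi> f) \<in> adj N \<and> f \<in> D"
    using e phi_in s_in a_in by (auto simp: adj_def)
  thus ?case using e by (meson rtrancl.rtrancl_into_rtrancl)
qed

lemma wfN: "wf_map N"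
proof -
  have w: "\<forall>d\<in>D. alph M d \<in> D \<and> alph M (alph M d) = d \<and> alph M d \<noteq> d"
    "\<forall>d\<in>D. vk M (sig M d) = vk M d \<and> thick M (alph M d) = thick M d \<and> dr M (alph M d) = opp (dr M d)"
    "connected_map M" "spherical_map M"
    using wfM by (auto simp: wf_map_def)
  have c1: "\<forall>d'\<in>D'. alph N d' \<in> D' \<and> alph N (alph N d') = d' \<and> alph N d' \<noteq> d'"
  proof
    fix d' assume "d' \<in> D'"
    then obtain d where d: "d \<in> D" "d' = \<phi> d" by (rule D'_cases)
    show "alph N d' \<in> D' \<and> alph N (alph N d') = d' \<and> alph N d' \<noteq> d'"
      using d w(1) phi_in phi_eq a_in by auto
  qed
  have c2: "\<forall>d'\<in>D'. vk N (sig N d') = vk N d' \<and> thick N (alph N d') = thick N d' \<and> dr N (alph N d') = opp (dr N d')"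
  proof
    fix d' assume "d' \<in> D'"
    then obtain d where d: "d \<in> D" "d' = \<phi> d" by (rule D'_cases)
    show "vk N (sig N d') = vk N d' \<and> thick N (alph N d') = thick N d' \<and> dr N (alph N d') = opp (dr N d')"
      using d w(2) s_in a_in by auto
  qed
  have c3: "connected_map N" unfolding connected_map_def
  proof (intro ballI)
    fix x y assume "x \<in> D'" "y \<in> D'"
    then obtain d e where "d \<in> D" "x = \<phi> d" "e \<in> D" "y = \<phi> e" by (metis D'_cases)
    thus "(x, y) \<in> (adj N)\<^sup>*" using adj_lift w(3) unfolding connected_map_def by blast
  qed
  have cV: "card (orb (sig N) ` D') = card (orb (sig M) ` D)"
    by (rule card_orbits[OF orb_sig orb_subset_A[OF s_bij]])
  have fb: "bij_betw (sig M \<circ> alph M) D D"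
    by (rule bij_betw_trans[OF invol_bij[OF finD] s_bij]) (use w(1) in auto)
  have cF: "card (orb (sig N \<circ> alph N) ` D') = card (orb (sig M \<circ> alph M) ` D)"
    by (rule card_orbits[OF orb_face orb_subset_A[OF fb]])
  have cD: "card D' = card D" using bij by (metis bij_betw_same_card)
  have c4: "spherical_map N" using w(4) cV cF cD by (simp add: spherical_map_def)
  show ?thesis unfolding wf_map_def using finD' c1 s'_bij c2 c3 c4 by blast
qed

end

context ictx begin

lemma uniq_transfer: "\<exists>!d. d \<in> D \<and> vk M d = K \<Longrightarrow> \<exists>!d'. d' \<in> D' \<and> vk N d' = K"
proof -
  assume "\<exists>!d. d \<in> D \<and> vk M d = K"
  then obtain t where t: "t \<in> D" "vk M t = K" and u: "\<And>d. d \<in> D \<Longrightarrow> vk M d = K \<Longrightarrow> d = t" by auto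
  show ?thesis
  proof (rule ex1I[of _ "\<phi> t"])
    show "\<phi> t \<in> D' \<and> vk N (\<phi> t) = K" using t phi_in by simp
  next
    fix y assume y: "y \<in> D' \<and> vk N y = K"
    hence "y \<in> D'" by simp
    thus "y = \<phi> t" by (rule D'_cases) (use y u in simp)
  qed
qed

lemma lg_transfer: assumes lg: "is_lg M" shows "is_lg N"
proof -
  note L0 = lg[unfolded is_lg_def]
  note L = L0[THEN conjunct2, THEN conjunct1]
    L0[THEN conjunct2, THEN conjunct2, THEN conjunct1]
    L0[THEN conjunct2, THEN conjunct2, THEN conjunct2, THEN conjunct1]
    L0[THEN conjunct2, THEN conjunct2, THEN conjunct2, THEN conjunct2, THEN conjunct1]
    L0[THEN conjunct2, THEN conjunct2, THEN conjunct2, THEN conjunct2, THEN conjunct2, THEN conjunct1]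
    L0[THEN conjunct2, THEN conjunct2, THEN conjunct2, THEN conjunct2, THEN conjunct2, THEN conjunct2, THEN conjunct1]
    L0[THEN conjunct2, THEN conjunct2, THEN conjunct2, THEN conjunct2, THEN conjunct2, THEN conjunct2, THEN conjunct2, THEN conjunct1]
    L0[THEN conjunct2, THEN conjunct2, THEN conjunct2, THEN conjunct2, THEN conjunct2, THEN conjunct2, THEN conjunct2, THEN conjunct2]
  have c1: "\<forall>d\<in>D'. vk N d \<in> {Tail, Head, EmptyV, SolidV, Mark} \<and> \<not> over N d"
    by (intro ballI, elim D'_cases) (use L(1) in simp)
  have c2: "\<forall>d\<in>D'. thick N d \<longrightarrow> dr N d \<noteq> Unor"
    by (intro ballI, elim D'_cases) (use L(2) in simp)
  have c5: "\<forall>d\<in>D'. vk N d = Tail \<longrightarrow> deg N d = 1 \<and> thick N d \<and> dr N d = Out"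
    by (intro ballI, elim D'_cases) (use L(5) deg_eq in simp)
  have c6: "\<forall>d\<in>D'. vk N d = Head \<longrightarrow> deg N d = 1 \<and> thick N d \<and> dr N d = In"
    by (intro ballI, elim D'_cases) (use L(6) deg_eq in simp)
  have c8: "\<forall>d\<in>D'. vk N d = Mark \<longrightarrow> deg N d = 2 \<and> thick N (sig N d) = thick N d
                                   \<and> dr N (sig N d) = opp (dr N d)"
    by (intro ballI, elim D'_cases) (use L(8) deg_eq s_in in simp)
  have c7: "\<forall>d'\<in>D'. vk N d' \<in> {EmptyV, SolidV} \<longrightarrow> deg N d' = 3 \<and>
         card {e \<in> orb (sig N) d'. \<not> thick N e} = 1 \<and>
         (\<forall>e\<in>orb (sig N) d'. \<not> thick N e \<longrightarrow>
            (let a = sig N e; b = sig N (sig N e) in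
              (dr N a = opp (dr N b) \<and> dr N e = Unor) \<or> (dr N a = dr N b \<and> dr N e = dr N a)))"
  proof (intro ballI impI)
    fix d' assume d': "d' \<in> D'" and v: "vk N d' \<in> {EmptyV, SolidV}"
    obtain d where d: "d \<in> D" "d' = \<phi> d" using d' by (rule D'_cases)
    have vd: "vk M d \<in> {EmptyV, SolidV}" using v d by simp
    have L7d: "deg M d = 3 \<and>
         card {e \<in> orb (sig M) d. \<not> thick M e} = 1 \<and>
         (\<forall>e\<in>orb (sig M) d. \<not> thick M e \<longrightarrow>
            (let a = sig M e; b = sig M (sig M e) in
              (dr M a = opp (dr M b) \<and> dr M e = Unor) \<or> (dr M a = dr M b \<and> dr M e = dr M a)))"
      by (rule mp[OF bspec[OF L(7) d(1)] vd])
    have oD: "orb (sig M) d \<subseteq> D" using orb_subset_A[OF s_bij d(1)] .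
    have o: "orb (sig N) d' = \<phi> ` orb (sig M) d" using orb_sig d by simp
    have "{e \<in> orb (sig N) d'. \<not> thick N e} = \<phi> ` {e \<in> orb (sig M) d. \<not> thick M e}"
    proof (intro equalityI subsetI)
      fix x assume "x \<in> {e \<in> orb (sig N) d'. \<not> thick N e}"
      hence x: "x \<in> \<phi> ` orb (sig M) d" "\<not> thick N x" using o by auto
      then obtain e where e: "e \<in> orb (sig M) d" "x = \<phi> e" by blast
      have "e \<in> D" using e oD by blast
      hence "\<not> thick M e" using x e by simp
      thus "x \<in> \<phi> ` {e \<in> orb (sig M) d. \<not> thick M e}" using e by blast
    next
      fix x assume "x \<in> \<phi> ` {e \<in> orb (sig M) d. \<not> thick M e}"
      then obtain e where e: "e \<in> orb (sig M) d" "\<not> thick M e" "x = \<phi> e" by blast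
      have "e \<in> D" using e oD by blast
      hence "\<not> thick N x" using e by simp
      moreover have "x \<in> orb (sig N) d'" using o e by blast
      ultimately show "x \<in> {e \<in> orb (sig N) d'. \<not> thick N e}" by blast
    qed
    hence cd: "card {e \<in> orb (sig N) d'. \<not> thick N e} = card {e \<in> orb (sig M) d. \<not> thick M e}"
    proof -
      assume eqs: "{e \<in> orb (sig N) d'. \<not> thick N e} = \<phi> ` {e \<in> orb (sig M) d. \<not> thick M e}"
      have sub: "{e \<in> orb (sig M) d. \<not> thick M e} \<subseteq> D" using oD by blast
      have "inj_on \<phi> {e \<in> orb (sig M) d. \<not> thick M e}" by (rule inj_on_subset[OF inj sub])
      hence "card (\<phi> ` {e \<in> orb (sig M) d. \<not> thick M e}) = card {e \<in> orb (sig M) d. \<not> thick M e}"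
        by (rule card_image)
      thus ?thesis unfolding eqs .
    qed
    have "\<forall>e\<in>orb (sig N) d'. \<not> thick N e \<longrightarrow>
            (let a = sig N e; b = sig N (sig N e) in
              (dr N a = opp (dr N b) \<and> dr N e = Unor) \<or> (dr N a = dr N b \<and> dr N e = dr N a))"
    proof (intro ballI impI)
      fix e' assume e': "e' \<in> orb (sig N) d'" "\<not> thick N e'"
      obtain e where e: "e \<in> orb (sig M) d" "e' = \<phi> e" using e' o by blast
      have eD: "e \<in> D" using e oD by blast
      have "(let a = sig M e; b = sig M (sig M e) in
              (dr M a = opp (dr M b) \<and> dr M e = Unor) \<or> (dr M a = dr M b \<and> dr M e = dr M a))"
      proof -
        have "\<not> thick M e" using e' e eD by simp
        thus ?thesis by (rule mp[OF bspec[OF L7d[THEN conjunct2, THEN conjunct2] e(1)]])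
      qed
      thus "let a = sig N e'; b = sig N (sig N e') in
              (dr N a = opp (dr N b) \<and> dr N e' = Unor) \<or> (dr N a = dr N b \<and> dr N e' = dr N a)"
        using e eD s_in by (simp add: Let_def)
    qed
    thus "deg N d' = 3 \<and>
         card {e \<in> orb (sig N) d'. \<not> thick N e} = 1 \<and>
         (\<forall>e\<in>orb (sig N) d'. \<not> thick N e \<longrightarrow>
            (let a = sig N e; b = sig N (sig N e) in
              (dr N a = opp (dr N b) \<and> dr N e = Unor) \<or> (dr N a = dr N b \<and> dr N e = dr N a)))"
    proof -
      have "deg N d' = 3" using L7d d deg_eq by simp
      moreover have "card {e \<in> orb (sig N) d'. \<not> thick N e} = 1" using L7d cd by simp
      ultimately show ?thesis using \<open>\<forall>e\<in>orb (sig N) d'. _\<close> by (intro conjI)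
    qed
  qed
  show ?thesis unfolding is_lg_def
    by (rule conjI[OF wfN conjI[OF c1 conjI[OF c2 conjI[OF uniq_transfer[OF L(3)]
      conjI[OF uniq_transfer[OF L(4)] conjI[OF c5 conjI[OF c6 conjI[OF c7 c8]]]]]]]])
qed

end

lemma isom_comp: "isom \<phi> M N \<Longrightarrow> isom \<psi> N P \<Longrightarrow> isom (\<psi> \<circ> \<phi>) M P"
  unfolding isom_def
proof (elim conjE, intro conjI ballI)
  assume b1: "bij_betw \<phi> (darts M) (darts N)" and b2: "bij_betw \<psi> (darts N) (darts P)"
    and h1: "\<forall>d\<in>darts M. \<phi> (alph M d) = alph N (\<phi> d) \<and> \<phi> (sig M d) = sig N (\<phi> d) \<and>
        vk N (\<phi> d) = vk M d \<and> dr N (\<phi> d) = dr M d \<and> thick N (\<phi> d) = thick M d \<and> over N (\<phi> d) = over M d"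
    and h2: "\<forall>d\<in>darts N. \<psi> (alph N d) = alph P (\<psi> d) \<and> \<psi> (sig N d) = sig P (\<psi> d) \<and>
        vk P (\<psi> d) = vk N d \<and> dr P (\<psi> d) = dr N d \<and> thick P (\<psi> d) = thick N d \<and> over P (\<psi> d) = over N d"
  show "bij_betw (\<psi> \<circ> \<phi>) (darts M) (darts P)" by (rule bij_betw_trans[OF b1 b2])
  fix d assume d: "d \<in> darts M"
  have pd: "\<phi> d \<in> darts N" using b1 d by (meson bij_betwE)
  show "(\<psi> \<circ> \<phi>) (alph M d) = alph P ((\<psi> \<circ> \<phi>) d)" using h1 h2 d pd by simp
  show "(\<psi> \<circ> \<phi>) (sig M d) = sig P ((\<psi> \<circ> \<phi>) d)" using h1 h2 d pd by simp
  show "vk P ((\<psi> \<circ> \<phi>) d) = vk M d" using h1 h2 d pd by simp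
  show "dr P ((\<psi> \<circ> \<phi>) d) = dr M d" using h1 h2 d pd by simp
  show "thick P ((\<psi> \<circ> \<phi>) d) = thick M d" using h1 h2 d pd by simp
  show "over P ((\<psi> \<circ> \<phi>) d) = over M d" using h1 h2 d pd by simp
qed

lemma iso_trans: "iso M N \<Longrightarrow> iso N P \<Longrightarrow> iso M P"
  unfolding iso_isom using isom_comp by blast

lemma isom_id: "isom id M M" by (simp add: isom_def)

context ictx begin

abbreviation "\<psi> \<equiv> inv_into D \<phi>"

lemma psi_phi[simp]: "d \<in> D \<Longrightarrow> \<psi> (\<phi> d) = d" using inj by simp

lemma isom_inv: "isom \<psi> N M"
  unfolding isom_def
proof (intro conjI ballI)
  show "bij_betw \<psi> D' D" using bij by (rule bij_betw_inv_into)
  fix d' assume "d' \<in> D'"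
  then obtain d where d: "d \<in> D" "d' = \<phi> d" by (rule D'_cases)
  show "\<psi> (alph N d') = alph M (\<psi> d')" using d a_in by simp
  show "\<psi> (sig N d') = sig M (\<psi> d')" using d s_in by simp
  show "vk M (\<psi> d') = vk N d'" using d by simp
  show "dr M (\<psi> d') = dr N d'" using d by simp
  show "thick M (\<psi> d') = thick N d'" using d by simp
  show "over M (\<psi> d') = over N d'" using d by simp
qed

lemma positive_eq: "d \<in> D \<Longrightarrow> positive N (\<phi> d) = positive M d"
proof -
  assume d: "d \<in> D"
  have oD: "orb (sig M) d \<subseteq> D" using orb_subset_A[OF s_bij d] .
  have "positive N (\<phi> d) \<longleftrightarrow> (\<exists>e\<in>orb (sig M) d. over N (\<phi> e) \<and> dr N (\<phi> e) = Out \<and> dr N (sig N (\<phi> e)) = Out)"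
    unfolding positive_def orb_sig[OF d] by blast
  also have "\<dots> \<longleftrightarrow> positive M d"
    unfolding positive_def
  proof (intro bex_cong refl)
    fix e assume "e \<in> orb (sig M) d"
    hence e: "e \<in> D" using oD by blast
    show "(over N (\<phi> e) \<and> dr N (\<phi> e) = Out \<and> dr N (sig N (\<phi> e)) = Out) =
          (over M e \<and> dr M e = Out \<and> dr M (sig M e) = Out)" using e s_in by simp
  qed
  finally show ?thesis .
qed

lemma smA_eq: "d \<in> D \<Longrightarrow> smA N (\<phi> d) = smA M d"
  unfolding smA_def using positive_eq s_in by simp

lemma states_map: "F \<in> states M \<Longrightarrow> \<phi> ` F \<in> states N"
  unfolding states_def
proof (elim CollectE conjE, intro CollectI conjI)
  assume F: "F \<subseteq> {d \<in> D. vk M d = Cross}" and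
    c: "\<forall>d\<in>D. vk M d = Cross \<longrightarrow> (d \<in> F) = (sig M (sig M d) \<in> F) \<and> (d \<in> F) = (sig M d \<notin> F)"
  show "\<phi> ` F \<subseteq> {d' \<in> D'. vk N d' = Cross}"
  proof
    fix y assume "y \<in> \<phi> ` F"
    then obtain x where x: "x \<in> F" "y = \<phi> x" by blast
    have "x \<in> D" "vk M x = Cross" using x F by blast+
    thus "y \<in> {d' \<in> D'. vk N d' = Cross}" using x phi_in by simp
  qed
  have memF: "\<phi> e \<in> \<phi> ` F \<longleftrightarrow> e \<in> F" if e: "e \<in> D" for e
  proof
    assume "\<phi> e \<in> \<phi> ` F"
    then obtain f where f: "f \<in> F" "\<phi> e = \<phi> f" by blast
    have "f \<in> D" using f F by blast
    thus "e \<in> F" using f e phi_eq by metis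
  qed blast
  show "\<forall>d'\<in>D'. vk N d' = Cross \<longrightarrow> (d' \<in> \<phi> ` F) = (sig N (sig N d') \<in> \<phi> ` F) \<and>
        (d' \<in> \<phi> ` F) = (sig N d' \<notin> \<phi> ` F)"
  proof (intro ballI impI)
    fix d' assume "d' \<in> D'" "vk N d' = Cross"
    then obtain d where d: "d \<in> D" "d' = \<phi> d" "vk M d = Cross" by (metis D'_cases c_vk)
    have sd: "sig M d \<in> D" "sig M (sig M d) \<in> D" using s_in d by auto
    have cd: "(d \<in> F) = (sig M (sig M d) \<in> F) \<and> (d \<in> F) = (sig M d \<notin> F)" using c d by blast
    have e1: "d' \<in> \<phi> ` F \<longleftrightarrow> d \<in> F" using memF[OF d(1)] d(2) by simp
    have e2: "sig N (sig N d') \<in> \<phi> ` F \<longleftrightarrow> sig M (sig M d) \<in> F"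
      using memF[OF sd(2)] d(1,2) sd(1) by simp
    have e3: "sig N d' \<in> \<phi> ` F \<longleftrightarrow> sig M d \<in> F" using memF[OF sd(1)] d(1,2) by simp
    show "(d' \<in> \<phi> ` F) = (sig N (sig N d') \<in> \<phi> ` F) \<and> (d' \<in> \<phi> ` F) = (sig N d' \<notin> \<phi> ` F)"
      using cd e1 e2 e3 by blast
  qed
qed

end

lemma ictx_inv: "ictx \<phi> M N \<Longrightarrow> ictx (inv_into (darts M) \<phi>) N M"
  using ictx.isom_inv ictx.wfN by (metis ictx.intro ictx_def)

definition phi2 :: "(nat \<Rightarrow> nat) \<Rightarrow> nat \<Rightarrow> nat" where
  "phi2 \<phi> n = (if even n then 2 * \<phi> (n div 2) else Suc (2 * \<phi> (n div 2)))"

lemma phi2_e[simp]: "phi2 \<phi> (2 * d) = 2 * \<phi> d" by (simp add: phi2_def)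
lemma phi2_o[simp]: "phi2 \<phi> (Suc (2 * d)) = Suc (2 * \<phi> d)" by (simp add: phi2_def)

lemma sm_dcases: "n \<in> darts (smooth M F) \<Longrightarrow> (\<And>d. d \<in> darts M \<Longrightarrow> n = 2 * d \<Longrightarrow> P) \<Longrightarrow>
   (\<And>x. x \<in> F \<Longrightarrow> n = Suc (2 * x) \<Longrightarrow> P) \<Longrightarrow> P"
  by (auto simp: sm_darts)

lemma sm_in_e[simp]: "2 * d \<in> darts (smooth M F) \<longleftrightarrow> d \<in> darts M"
  by (auto simp: sm_darts)
lemma sm_in_o[simp]: "Suc (2 * x) \<in> darts (smooth M F) \<longleftrightarrow> x \<in> F"
  by (auto simp: sm_darts)

context ictx begin

lemma smooth_isom:
  assumes st: "F \<in> states M"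
  shows "isom (phi2 \<phi>) (smooth M F) (smooth N (\<phi> ` F))"
proof -
  have FD: "\<And>x. x \<in> F \<Longrightarrow> x \<in> D" using st by (auto simp: states_def)
  have memF: "\<And>e. e \<in> D \<Longrightarrow> \<phi> e \<in> \<phi> ` F \<longleftrightarrow> e \<in> F"
  proof
    fix e assume e: "e \<in> D" and "\<phi> e \<in> \<phi> ` F"
    then obtain f where f: "f \<in> F" "\<phi> e = \<phi> f" by blast
    thus "e \<in> F" using FD[OF f(1)] e phi_eq by metis
  qed blast
  let ?M' = "smooth M F" and ?N' = "smooth N (\<phi> ` F)"
  have img2: "phi2 \<phi> ` darts ?M' = darts ?N'"
  proof -
    have "phi2 \<phi> ` darts ?M' = (\<lambda>d. 2 * \<phi> d) ` D \<union> (\<lambda>x. Suc (2 * \<phi> x)) ` F"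
      unfolding sm_darts image_Un image_image by simp
    also have "\<dots> = (\<lambda>d. 2 * d) ` (\<phi> ` D) \<union> (\<lambda>x. 2 * x + 1) ` (\<phi> ` F)"
      by (simp add: image_image)
    also have "\<dots> = darts ?N'" unfolding sm_darts img ..
    finally show ?thesis .
  qed
  have inj2: "inj_on (phi2 \<phi>) (darts ?M')"
  proof (rule inj_onI)
    fix n m assume n: "n \<in> darts ?M'" and m: "m \<in> darts ?M'" and eq: "phi2 \<phi> n = phi2 \<phi> m"
    show "n = m"
    proof (rule sm_dcases[OF n]; rule sm_dcases[OF m])
      fix d e assume "d \<in> D" "n = 2 * d" "e \<in> D" "m = 2 * e"
      thus "n = m" using eq phi_eq by simp
    next
      fix d x assume "d \<in> D" "n = 2 * d" "x \<in> F" "m = Suc (2 * x)"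
      thus "n = m" using eq by simp
    next
      fix x d assume "x \<in> F" "n = Suc (2 * x)" "d \<in> D" "m = 2 * d"
      thus "n = m" using eq by simp
    next
      fix x y assume "x \<in> F" "n = Suc (2 * x)" "y \<in> F" "m = Suc (2 * y)"
      thus "n = m" using eq phi_eq FD by simp
    qed
  qed
  have fd: "\<And>d. d \<in> D \<Longrightarrow> firstd N (\<phi> ` F) (\<phi> d) = \<phi> (firstd M F d)"
    using memF s_in by (simp add: firstd_simp)
  have fdD: "\<And>d. d \<in> D \<Longrightarrow> firstd M F d \<in> D"
    using s_in by (simp add: firstd_simp)
  show ?thesis unfolding isom_def
  proof (intro conjI ballI)
    show "bij_betw (phi2 \<phi>) (darts ?M') (darts ?N')" using inj2 img2 by (simp add: bij_betw_def)
  next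
    fix n assume n: "n \<in> darts ?M'"
    show "phi2 \<phi> (alph ?M' n) = alph ?N' (phi2 \<phi> n)"
      by (rule sm_dcases[OF n]) (use FD s_in a_in in simp_all)
    show "phi2 \<phi> (sig ?M' n) = sig ?N' (phi2 \<phi> n)"
      by (rule sm_dcases[OF n]) (use FD s_in memF in simp_all)
    show "vk ?N' (phi2 \<phi> n) = vk ?M' n"
      by (rule sm_dcases[OF n]) (use FD fd fdD smA_eq in simp_all)
    show "dr ?N' (phi2 \<phi> n) = dr ?M' n"
      by (rule sm_dcases[OF n]) (use FD s_in in simp_all)
    show "thick ?N' (phi2 \<phi> n) = thick ?M' n"
      by (rule sm_dcases[OF n]) (use FD in simp_all)
    show "over ?N' (phi2 \<phi> n) = over ?M' n" by simp
  qed
qed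

end

lemma lrel_sum: "(\<And>x. x \<in> A \<Longrightarrow> f x \<in> lrel s1 s2 ht or3) \<Longrightarrow> sum f A \<in> lrel s1 s2 ht or3"
proof (induction A rule: infinite_finite_induct)
  case (infinite A)
  have "sum f A = 0" using \<open>infinite A\<close> by simp
  then show ?case using lrel.rel_zero by metis
next
  case empty then show ?case by (simp only: sum.empty) (rule lrel.rel_zero)
next
  case (insert x F)
  have e: "sum f (insert x F) = f x + sum f F" using insert.hyps by (rule sum.insert)
  have "f x \<in> lrel s1 s2 ht or3" "sum f F \<in> lrel s1 s2 ht or3" using insert by blast+
  then show ?case unfolding e by (rule lrel.rel_add)
qed

lemma lrel_diff: "a \<in> lrel s1 s2 ht or3 \<Longrightarrow> b \<in> lrel s1 s2 ht or3 \<Longrightarrow> a - b \<in> lrel s1 s2 ht or3"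
  using lrel.rel_add[OF _ lrel.rel_neg] by (metis diff_conv_add_uminus)

lemma lrel_add3: "a - b \<in> lrel s1 s2 ht or3 \<Longrightarrow> b - c \<in> lrel s1 s2 ht or3 \<Longrightarrow> a - c \<in> lrel s1 s2 ht or3"
  using lrel.rel_add by fastforce

lemma lrel_neg': "a - b \<in> lrel s1 s2 ht or3 \<Longrightarrow> b - a \<in> lrel s1 s2 ht or3"
  using lrel.rel_neg by fastforce

context ictx begin

lemma states_img: "states N = (\<lambda>F. \<phi> ` F) ` states M"
proof
  show "(\<lambda>F. \<phi> ` F) ` states M \<subseteq> states N" using states_map by blast
next
  show "states N \<subseteq> (\<lambda>F. \<phi> ` F) ` states M"
  proof
    fix G assume G: "G \<in> states N"
    interpret inv: ictx "inv_into D \<phi>" N M using ictx_inv[OF ictx_axioms] .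
    have "inv_into D \<phi> ` G \<in> states M" using inv.states_map[OF G] .
    moreover have "G \<subseteq> D'" using G by (auto simp: states_def)
    hence "\<phi> ` (inv_into D \<phi> ` G) = G" using img by (simp add: image_inv_into_cancel)
    ultimately show "G \<in> (\<lambda>F. \<phi> ` F) ` states M" by (metis image_eqI)
  qed
qed

lemma states_inj: "inj_on (\<lambda>F. \<phi> ` F) (states M)"
proof (rule inj_onI)
  fix F G assume "F \<in> states M" "G \<in> states M" "\<phi> ` F = \<phi> ` G"
  moreover have "F \<subseteq> D" "G \<subseteq> D" using calculation by (auto simp: states_def)
  ultimately show "F = G" using inj by (meson inj_on_image_eq_iff)
qed

lemma lbr_iso:
  assumes lg: "\<And>F. F \<in> states M \<Longrightarrow> is_lg (smooth M F)"
  shows "lbracket M - lbracket N \<in> lrel s1 s2 ht or3"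
proof -
  have "lbracket N = (\<Sum>F\<in>states M. gen (smooth N (\<phi> ` F)))"
    unfolding lbracket_def states_img by (rule sum.reindex[OF states_inj, unfolded comp_def])
  hence "lbracket M - lbracket N = (\<Sum>F\<in>states M. gen (smooth M F) - gen (smooth N (\<phi> ` F)))"
    unfolding lbracket_def by (simp add: sum_subtractf)
  also have "\<dots> \<in> lrel s1 s2 ht or3"
  proof (rule lrel_sum)
    fix F assume F: "F \<in> states M"
    have l1: "is_lg (smooth M F)" using lg[OF F] .
    have w1: "wf_map (smooth M F)" using l1 by (simp add: is_lg_def)
    have is2: "isom (phi2 \<phi>) (smooth M F) (smooth N (\<phi> ` F))" using smooth_isom[OF F] .
    interpret s: ictx "phi2 \<phi>" "smooth M F" "smooth N (\<phi> ` F)" using is2 w1 by unfold_locales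
    have l2: "is_lg (smooth N (\<phi> ` F))" using s.lg_transfer[OF l1] .
    show "gen (smooth M F) - gen (smooth N (\<phi> ` F)) \<in> lrel s1 s2 ht or3"
      by (rule lrel.rel_iso[OF l1 l2]) (use is2 in \<open>auto simp: iso_isom\<close>)
  qed
  finally show ?thesis .
qed

end

lemma lbr_iso':
  assumes "iso M N" "wf_map M" "\<And>F. F \<in> states M \<Longrightarrow> is_lg (smooth M F)"
  shows "lbracket M - lbracket N \<in> lrel s1 s2 ht or3"
proof -
  obtain \<phi> where "isom \<phi> M N" using assms(1) by (auto simp: iso_isom)
  then interpret ictx \<phi> M N using assms(2) by unfold_locales
  show ?thesis using lbr_iso assms(3) by blast
qed

context ictx begin
lemma lg_states_transfer:
  assumes lg: "\<And>G. G \<in> states M \<Longrightarrow> is_lg (smooth M G)" and F: "F \<in> states N"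
  shows "is_lg (smooth N F)"
proof -
  obtain G where G: "G \<in> states M" "F = \<phi> ` G" using F states_img by auto
  have l1: "is_lg (smooth M G)" using lg[OF G(1)] .
  have w1: "wf_map (smooth M G)" using l1 by (simp add: is_lg_def)
  interpret s: ictx "phi2 \<phi>" "smooth M G" "smooth N (\<phi> ` G)" using smooth_isom[OF G(1)] w1 by unfold_locales
  show ?thesis using s.lg_transfer[OF l1] G(2) by simp
qed
end

lemma isom_idI:
  assumes "darts A = darts B"
    "\<And>n. n \<in> darts A \<Longrightarrow> alph A n = alph B n \<and> sig A n = sig B n \<and> vk A n = vk B n
       \<and> dr A n = dr B n \<and> thick A n = thick B n \<and> over A n = over B n"
  shows "isom id A B"
  using assms by (simp add: isom_def)

locale subctx =
  fixes M :: dmap and x a b :: nat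
  assumes wf: "wf_map M" and x: "x \<in> darts M" and a: "a \<notin> darts M" and b: "b \<notin> darts M" and ab: "a \<noteq> b"
begin

abbreviation "S \<equiv> subdivide M x a b"
abbreviation "D \<equiv> darts M"

lemma s_in: "d \<in> D \<Longrightarrow> sig M d \<in> D"
proof -
  assume d: "d \<in> D"
  have "bij_betw (sig M) D D" using wf by (simp add: wf_map_def)
  thus ?thesis using d by (meson bij_betwE)
qed
lemma a_in: "d \<in> D \<Longrightarrow> alph M d \<in> D" using wf by (simp add: wf_map_def)

lemma S_darts: "darts S = D \<union> {a, b}" by (simp add: subdivide_def)
lemma S_sig: "d \<in> D \<Longrightarrow> sig S d = sig M d" using a b by (auto simp: subdivide_def)
lemma S_vk: "d \<in> D \<Longrightarrow> vk S d = vk M d" using a b by (auto simp: subdivide_def)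
lemma S_dr: "d \<in> D \<Longrightarrow> dr S d = dr M d" using a b by (auto simp: subdivide_def)
lemma S_over: "d \<in> D \<Longrightarrow> over S d = over M d" using a b by (auto simp: subdivide_def)
lemma S_thick: "d \<in> D \<Longrightarrow> thick S d = thick M d" using a b by (auto simp: subdivide_def)

lemma S_orb: "d \<in> D \<Longrightarrow> orb (sig S) d = orb (sig M) d"
  by (rule orb_agree[where S = D]) (auto simp: S_sig s_in)

lemma S_positive: "d \<in> D \<Longrightarrow> positive S d = positive M d"
proof -
  assume d: "d \<in> D"
  have oD: "orb (sig M) d \<subseteq> D" by (rule orb_sub_closed) (use d s_in in auto)
  show ?thesis unfolding positive_def S_orb[OF d]
  proof (intro bex_cong refl)
    fix e assume "e \<in> orb (sig M) d"
    hence e: "e \<in> D" using oD by blast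
    show "(over S e \<and> dr S e = Out \<and> dr S (sig S e) = Out) = (over M e \<and> dr M e = Out \<and> dr M (sig M e) = Out)"
      using e s_in S_over S_dr S_sig by simp
  qed
qed

lemma S_smA: "d \<in> D \<Longrightarrow> smA S d = smA M d"
  unfolding smA_def using S_positive S_dr S_sig s_in by simp

lemma S_states: "states S = states M"
proof -
  have cr: "{d \<in> darts S. vk S d = Cross} = {d \<in> D. vk M d = Cross}"
    using S_vk by (auto simp: S_darts) (auto simp: subdivide_def)
  have "\<And>d. d \<in> darts S \<Longrightarrow> vk S d = Cross \<Longrightarrow> d \<in> D" using cr by blast
  show ?thesis unfolding states_def cr
  proof (intro Collect_cong conj_cong refl iffI ballI impI)
    fix F d assume h: "\<forall>d\<in>darts S. vk S d = Cross \<longrightarrow> (d \<in> F) = (sig S (sig S d) \<in> F) \<and> (d \<in> F) = (sig S d \<notin> F)"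
      and d: "d \<in> D" and c: "vk M d = Cross"
    have "d \<in> darts S" "vk S d = Cross" using d c S_vk by (auto simp: S_darts)
    thus "(d \<in> F) = (sig M (sig M d) \<in> F) \<and> (d \<in> F) = (sig M d \<notin> F)"
      using h d s_in S_sig by auto
  next
    fix F d assume h: "\<forall>d\<in>D. vk M d = Cross \<longrightarrow> (d \<in> F) = (sig M (sig M d) \<in> F) \<and> (d \<in> F) = (sig M d \<notin> F)"
      and d: "d \<in> darts S" and c: "vk S d = Cross"
    have dD: "d \<in> D" using d c cr by blast
    thus "(d \<in> F) = (sig S (sig S d) \<in> F) \<and> (d \<in> F) = (sig S d \<notin> F)"
      using h c S_vk S_sig s_in by auto
  qed
qed

end

context subctx begin

lemma nab: "d \<in> D \<Longrightarrow> d \<noteq> a \<and> d \<noteq> b" using a b by auto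

lemma S_alph: "d \<in> D \<Longrightarrow> alph S d = (if d = x then a else if d = alph M x then b else alph M d)"
  using nab by (simp add: subdivide_def)

lemma sub_smooth:
  assumes F: "F \<in> states M"
  shows "isom id (smooth S F) (subdivide (smooth M F) (2 * x) (2 * a) (2 * b))"
proof (rule isom_idI)
  have FD: "\<And>y. y \<in> F \<Longrightarrow> y \<in> D \<and> vk M y = Cross" using F by (auto simp: states_def)
  have FS: "F \<in> states S" using F S_states by simp
  have ax: "alph M x \<in> D" "alph M x \<noteq> x" using x wf by (auto simp: wf_map_def)
  show "darts (smooth S F) = darts (subdivide (smooth M F) (2 * x) (2 * a) (2 * b))"
    by (auto simp: sm_darts S_darts subdivide_def)
  fix n assume n: "n \<in> darts (smooth S F)"
  have fdS: "\<And>d. d \<in> D \<Longrightarrow> firstd S F d = firstd M F d" using S_sig s_in by (simp add: firstd_simp)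
  have fdD: "\<And>d. d \<in> D \<Longrightarrow> firstd M F d \<in> D" using s_in by (simp add: firstd_simp)
  have nd: "\<And>d. d \<in> D \<Longrightarrow> 2 * d \<noteq> 2 * a \<and> 2 * d \<noteq> 2 * b" using nab by simp
  let ?R = "subdivide (smooth M F) (2 * x) (2 * a) (2 * b)"
  have Ralph: "alph ?R n = (if n = 2 * x then 2 * a else if n = 2 * a then 2 * x else if n = 2 * b then 2 * alph M x
                    else if n = 2 * alph M x then 2 * b else alph (smooth M F) n)"
    by (simp add: subdivide_def)
  have Rsig: "sig ?R n = (if n = 2 * a then 2 * b else if n = 2 * b then 2 * a else sig (smooth M F) n)"
    by (simp add: subdivide_def)
  have Rvk: "vk ?R n = (if n = 2 * a \<or> n = 2 * b then Mark else vk (smooth M F) n)"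
    by (simp add: subdivide_def)
  have Rdr: "dr ?R n = (if n = 2 * a then opp (dr M x) else if n = 2 * b then dr M x else dr (smooth M F) n)"
    by (simp add: subdivide_def)
  have Rth: "thick ?R n = (if n = 2 * a \<or> n = 2 * b then thick M x else thick (smooth M F) n)"
    by (simp add: subdivide_def)
  have Rov: "over ?R n = False" by (simp add: subdivide_def)
  show "alph (smooth S F) n = alph ?R n \<and> sig (smooth S F) n = sig ?R n \<and> vk (smooth S F) n = vk ?R n
       \<and> dr (smooth S F) n = dr ?R n \<and> thick (smooth S F) n = thick ?R n \<and> over (smooth S F) n = over ?R n"
    unfolding Ralph Rsig Rvk Rdr Rth Rov
  proof (rule sm_dcases[OF n])
    fix y assume y: "y \<in> F" "n = Suc (2 * y)"
    have yD: "y \<in> D" "vk M y = Cross" using FD y by auto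
    have sy: "sig M y \<in> D" "sig M (sig M y) \<in> D" using s_in yD by auto
    show "alph (smooth S F) n = (if n = 2 * x then 2 * a else if n = 2 * a then 2 * x else if n = 2 * b then 2 * alph M x
                    else if n = 2 * alph M x then 2 * b else alph (smooth M F) n) \<and>
        sig (smooth S F) n = (if n = 2 * a then 2 * b else if n = 2 * b then 2 * a else sig (smooth M F) n) \<and>
        vk (smooth S F) n = (if n = 2 * a \<or> n = 2 * b then Mark else vk (smooth M F) n) \<and>
        dr (smooth S F) n = (if n = 2 * a then opp (dr M x) else if n = 2 * b then dr M x else dr (smooth M F) n) \<and>
        thick (smooth S F) n = (if n = 2 * a \<or> n = 2 * b then thick M x else thick (smooth M F) n) \<and>
        over (smooth S F) n = False"
      using y yD sy S_sig S_vk S_dr fdS fdD S_smA by simp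
  next
    fix d assume d: "d \<in> darts S" "n = 2 * d"
    show "alph (smooth S F) n = (if n = 2 * x then 2 * a else if n = 2 * a then 2 * x else if n = 2 * b then 2 * alph M x
                    else if n = 2 * alph M x then 2 * b else alph (smooth M F) n) \<and>
        sig (smooth S F) n = (if n = 2 * a then 2 * b else if n = 2 * b then 2 * a else sig (smooth M F) n) \<and>
        vk (smooth S F) n = (if n = 2 * a \<or> n = 2 * b then Mark else vk (smooth M F) n) \<and>
        dr (smooth S F) n = (if n = 2 * a then opp (dr M x) else if n = 2 * b then dr M x else dr (smooth M F) n) \<and>
        thick (smooth S F) n = (if n = 2 * a \<or> n = 2 * b then thick M x else thick (smooth M F) n) \<and>
        over (smooth S F) n = False"
    proof (cases "d \<in> D")
      case True
      have sd: "sig M d \<in> D" "sig M (sig M d) \<in> D" "sig M (sig M (sig M d)) \<in> D" using s_in True by auto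
      have dF: "d \<in> F \<Longrightarrow> d \<in> D" using True .
      have e1: "sig S d = sig M d" "sig S (sig M d) = sig M (sig M d)"
        "sig S (sig M (sig M d)) = sig M (sig M (sig M d))" using S_sig True sd by auto
      have e2: "vk S d = vk M d" "dr S d = dr M d" "thick S d = thick M d" "firstd S F d = firstd M F d"
        using S_vk S_dr S_thick fdS True by auto
      have e3: "smA S (firstd M F d) = smA M (firstd M F d)" using S_smA fdD True by auto
      have e4: "alph S d = (if d = x then a else if d = alph M x then b else alph M d)" using S_alph True by auto
      have e5: "(2 * d = 2 * alph M x) = (d = alph M x)" "(2 * d = 2 * x) = (d = x)" by auto
      show ?thesis using d nab[OF True] e1 e2 e3 e4 e5 by (simp only: sm_alph_e sm_sig_e sm_vk_e sm_dr_e sm_thick_e sm_over) auto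
    next
      case False
      hence "d = a \<or> d = b" using d S_darts by auto
      thus ?thesis using d ab x nab[OF x] by (auto simp: subdivide_def)
    qed
  qed
qed

end

lemma kd_wf: "is_kd M \<Longrightarrow> wf_map M" by (simp add: is_kd_def)

lemma step_iso: "is_kd M \<Longrightarrow> iso M M' \<Longrightarrow> lbracket M - lbracket M' \<in> lrel s1 s2 ht or3"
  using lbr_iso'[OF _ kd_wf lg_smooth] by blast

lemma step_subdiv:
  assumes k: "is_kd M" and k': "is_kd M'" and sd: "subdiv M M'"
  shows "lbracket M - lbracket M' \<in> lrel s1 s2 ht or3"
proof -
  obtain x a b where xab: "x \<in> darts M" "a \<notin> darts M" "b \<notin> darts M" "a \<noteq> b"
    and i: "iso M' (subdivide M x a b)" using sd by (auto simp: subdiv_def)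
  interpret subctx M x a b using kd_wf[OF k] xab by unfold_locales
  obtain \<phi> where ph: "isom \<phi> M' S" using i by (auto simp: iso_isom)
  interpret ii: ictx \<phi> M' S using ph kd_wf[OF k'] by unfold_locales
  have lgS: "\<And>F. F \<in> states S \<Longrightarrow> is_lg (smooth S F)"
    by (rule ii.lg_states_transfer[OF lg_smooth[OF k']])
  have d1: "lbracket M - lbracket S \<in> lrel s1 s2 ht or3"
  proof -
    have "lbracket M - lbracket S = (\<Sum>F\<in>states M. gen (smooth M F) - gen (smooth S F))"
      unfolding lbracket_def S_states by (simp add: sum_subtractf)
    also have "\<dots> \<in> lrel s1 s2 ht or3"
    proof (rule lrel_sum)
      fix F assume F: "F \<in> states M"
      have l1: "is_lg (smooth M F)" by (rule lg_smooth[OF k F])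
      have l2: "is_lg (smooth S F)" using lgS F S_states by simp
      have "subdiv (smooth M F) (smooth S F)"
        unfolding subdiv_def
        by (rule exI[of _ "2 * x"], rule exI[of _ "2 * a"], rule exI[of _ "2 * b"])
           (use xab sub_smooth[OF F] in \<open>auto simp: iso_isom\<close>)
      thus "gen (smooth M F) - gen (smooth S F) \<in> lrel s1 s2 ht or3"
        by (rule lrel.rel_sub[OF l1 l2])
    qed
    finally show ?thesis .
  qed
  have d2: "lbracket M' - lbracket S \<in> lrel s1 s2 ht or3"
    by (rule step_iso[OF k' i])
  have "lbracket M - lbracket M' = (lbracket M - lbracket S) - (lbracket M' - lbracket S)" by simp
  thus ?thesis using lrel_diff[OF d1 d2] by simp
qed

definition shiftm :: "nat \<Rightarrow> dmap \<Rightarrow> dmap" where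
  "shiftm K N = \<lparr>darts = (\<lambda>n. n + K) ` darts N, alph = (\<lambda>n. alph N (n - K) + K),
     sig = (\<lambda>n. sig N (n - K) + K), vk = (\<lambda>n. vk N (n - K)), dr = (\<lambda>n. dr N (n - K)),
     thick = (\<lambda>n. thick N (n - K)), over = (\<lambda>n. over N (n - K))\<rparr>"

lemma sh_darts: "darts (shiftm K N) = (\<lambda>n. n + K) ` darts N" by (simp add: shiftm_def)
lemma sh_in[simp]: "n + K \<in> darts (shiftm K N) \<longleftrightarrow> n \<in> darts N" by (auto simp: shiftm_def)
lemma sh_alph[simp]: "alph (shiftm K N) (n + K) = alph N n + K" by (simp add: shiftm_def)
lemma sh_sig[simp]: "sig (shiftm K N) (n + K) = sig N n + K" by (simp add: shiftm_def)
lemma sh_vk[simp]: "vk (shiftm K N) (n + K) = vk N n" by (simp add: shiftm_def)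
lemma sh_dr[simp]: "dr (shiftm K N) (n + K) = dr N n" by (simp add: shiftm_def)
lemma sh_thick[simp]: "thick (shiftm K N) (n + K) = thick N n" by (simp add: shiftm_def)
lemma sh_over[simp]: "over (shiftm K N) (n + K) = over N n" by (simp add: shiftm_def)

lemma sh_isom: "isom (\<lambda>n. n + K) N (shiftm K N)"
  unfolding isom_def by (auto simp: sh_darts bij_betw_def inj_on_def)

lemma sh_wf: "wf_map N \<Longrightarrow> wf_map (shiftm K N)"
proof -
  assume "wf_map N"
  then interpret ictx "\<lambda>n. n + K" N "shiftm K N" using sh_isom by unfold_locales
  show ?thesis by (rule wfN)
qed

lemma minv_eq: "x \<in> bdarts T \<Longrightarrow> inj_on m (bdarts T) \<Longrightarrow> minv T m (m x) = x"
  unfolding minv_def by (rule the_equality) (auto simp: inj_on_def)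

lemma glue_darts: "darts (glue T C m) = (darts T - bdarts T) \<union> (darts C - bdarts C)"
  by (simp add: glue_def)
lemma glue_sig: "sig (glue T C m) d = (if d \<in> darts T then sig T d else sig C d)"
  by (simp add: glue_def)
lemma glue_vk: "vk (glue T C m) d = (if d \<in> darts T then vk T d else vk C d)"
  by (simp add: glue_def)
lemma glue_dr: "dr (glue T C m) d = (if d \<in> darts T then dr T d else dr C d)"
  by (simp add: glue_def)
lemma glue_thick: "thick (glue T C m) d = (if d \<in> darts T then thick T d else thick C d)"
  by (simp add: glue_def)
lemma glue_over: "over (glue T C m) d = (if d \<in> darts T then over T d else over C d)"
  by (simp add: glue_def)
lemma glue_alph: "alph (glue T C m) x = (if x \<in> darts T then
                   (let y = alph T x in
                     if y \<in> bdarts T then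
                       (let z = alph C (m y) in if z \<in> bdarts C then alph T (minv T m z) else z)
                     else y)
                 else (let z = alph C x in if z \<in> bdarts C then alph T (minv T m z) else z))"
  by (simp add: glue_def)

lemma cross_ok_transfer: "isom \<phi> M N \<Longrightarrow> wf_map M \<Longrightarrow> cross_ok M \<Longrightarrow> cross_ok N"
proof -
  assume i: "isom \<phi> M N" and w: "wf_map M" and c: "cross_ok M"
  interpret ictx \<phi> M N using i w by unfold_locales
  show ?thesis unfolding cross_ok_def
  proof (intro ballI impI)
    fix d' assume "d' \<in> D'" "vk N d' = Cross"
    then obtain d where d: "d \<in> D" "d' = \<phi> d" "vk M d = Cross" by (metis D'_cases c_vk)
    have sd: "sig M d \<in> D" "sig M (sig M d) \<in> D" "sig M (sig M (sig M d)) \<in> D" using s_in d by auto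
    have cd: "sig M (sig M (sig M (sig M d))) = d \<and> sig M d \<noteq> d \<and> sig M (sig M d) \<noteq> d
     \<and> sig M (sig M (sig M d)) \<noteq> d \<and> dr M (sig M (sig M d)) = opp (dr M d) \<and> dr M d \<noteq> Unor"
      using c d by (simp add: cross_ok_def)
    show "sig N (sig N (sig N (sig N d'))) = d' \<and> sig N d' \<noteq> d' \<and> sig N (sig N d') \<noteq> d'
     \<and> sig N (sig N (sig N d')) \<noteq> d' \<and> dr N (sig N (sig N d')) = opp (dr N d') \<and> dr N d' \<noteq> Unor"
      using cd d sd phi_eq by simp
  qed
qed

locale gside =
  fixes T C :: dmap and m :: "nat \<Rightarrow> nat" and K :: nat
  assumes gok: "glue_ok T C m"
    and wfG: "wf_map (glue T C m)"
    and cokG: "cross_ok (glue T C m)"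
    and nobd: "\<And>d. d \<in> darts (glue T C m) \<Longrightarrow> vk (glue T C m) d \<noteq> Bdry"
    and lgG: "\<And>F. F \<in> states (glue T C m) \<Longrightarrow> is_lg (smooth (glue T C m) F)"
    and Kb: "\<And>d. d \<in> darts T \<Longrightarrow> d < K"
begin

abbreviation "G \<equiv> glue T C m"
abbreviation "bT \<equiv> bdarts T"
abbreviation "bC \<equiv> bdarts C"
abbreviation "TN \<equiv> darts T - bdarts T"
abbreviation "CN \<equiv> darts C - bdarts C"

definition stT :: "nat set set" where
  "stT = {A. A \<subseteq> {d \<in> darts T. vk T d = Cross} \<and>
     (\<forall>d\<in>darts T. vk T d = Cross \<longrightarrow>
        (d \<in> A \<longleftrightarrow> sig T (sig T d) \<in> A) \<and> (d \<in> A \<longleftrightarrow> sig T d \<notin> A))}"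

definition m' :: "nat \<Rightarrow> nat" where "m' x = 2 * m x + K"
definition C' :: "nat set \<Rightarrow> dmap" where "C' B = shiftm K (smooth C B)"
definition G2 :: "nat set \<Rightarrow> dmap" where "G2 B = glue T (C' B) m'"

lemma wfT: "wf_map T" and wfC: "wf_map C" using gok by (auto simp: glue_ok_def)
lemma m_bij: "bij_betw m bT bC" using gok by (simp add: glue_ok_def)
lemma m_sig: "x \<in> bT \<Longrightarrow> sig C (m (sig T x)) = m x" using gok by (simp add: glue_ok_def)
lemma bT_alph: "x \<in> bT \<Longrightarrow> alph T x \<notin> bT" using gok by (simp add: glue_ok_def)
lemma disjTC: "TN \<inter> CN = {}" using gok by (simp add: glue_ok_def)

lemma bT_vk: "x \<in> bT \<longleftrightarrow> x \<in> darts T \<and> vk T x = Bdry" by (simp add: bdarts_def)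
lemma bC_vk: "x \<in> bC \<longleftrightarrow> x \<in> darts C \<and> vk C x = Bdry" by (simp add: bdarts_def)

lemma G_darts: "darts G = TN \<union> CN" by (rule glue_darts)

lemma CN_notT: "c \<in> CN \<Longrightarrow> c \<notin> darts T"
proof
  assume c: "c \<in> CN" and cT: "c \<in> darts T"
  have "c \<in> bT" using c cT disjTC by blast
  hence "vk G c = Bdry" using cT by (simp add: glue_vk bdarts_def)
  moreover have "c \<in> darts G" using c G_darts by blast
  ultimately show False using nobd by blast
qed

lemma T_sig_in: "d \<in> darts T \<Longrightarrow> sig T d \<in> darts T"
  using wfT by (simp add: wf_map_def bij_betw_def) blast
lemma C_sig_in: "d \<in> darts C \<Longrightarrow> sig C d \<in> darts C"
  using wfC by (simp add: wf_map_def bij_betw_def) blast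
lemma T_alph_in: "d \<in> darts T \<Longrightarrow> alph T d \<in> darts T" using wfT by (simp add: wf_map_def)
lemma C_alph_in: "d \<in> darts C \<Longrightarrow> alph C d \<in> darts C" using wfC by (simp add: wf_map_def)
lemma T_vk_sig: "d \<in> darts T \<Longrightarrow> vk T (sig T d) = vk T d" using wfT by (simp add: wf_map_def)
lemma C_vk_sig: "d \<in> darts C \<Longrightarrow> vk C (sig C d) = vk C d" using wfC by (simp add: wf_map_def)

lemma TN_sig: "d \<in> TN \<Longrightarrow> sig T d \<in> TN" using T_sig_in T_vk_sig by (auto simp: bdarts_def)
lemma CN_sig: "d \<in> CN \<Longrightarrow> sig C d \<in> CN" using C_sig_in C_vk_sig by (auto simp: bdarts_def)

lemma G_sig_T: "d \<in> darts T \<Longrightarrow> sig G d = sig T d" by (simp add: glue_sig)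
lemma G_sig_C: "d \<in> CN \<Longrightarrow> sig G d = sig C d" using CN_notT by (simp add: glue_sig)
lemma G_vk_T: "d \<in> darts T \<Longrightarrow> vk G d = vk T d" by (simp add: glue_vk)
lemma G_vk_C: "d \<in> CN \<Longrightarrow> vk G d = vk C d" using CN_notT by (simp add: glue_vk)
lemma G_dr_T: "d \<in> darts T \<Longrightarrow> dr G d = dr T d" by (simp add: glue_dr)
lemma G_dr_C: "d \<in> CN \<Longrightarrow> dr G d = dr C d" using CN_notT by (simp add: glue_dr)
lemma G_thick_T: "d \<in> darts T \<Longrightarrow> thick G d = thick T d" by (simp add: glue_thick)
lemma G_thick_C: "d \<in> CN \<Longrightarrow> thick G d = thick C d" using CN_notT by (simp add: glue_thick)
lemma G_over_T: "d \<in> darts T \<Longrightarrow> over G d = over T d" by (simp add: glue_over)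
lemma G_over_C: "d \<in> CN \<Longrightarrow> over G d = over C d" using CN_notT by (simp add: glue_over)

lemma cokC: "cross_ok C"
  unfolding cross_ok_def
proof (intro ballI impI)
  fix d assume d: "d \<in> darts C" and c: "vk C d = Cross"
  have dN: "d \<in> CN" using d c by (simp add: bdarts_def)
  have s1: "sig C d \<in> CN" "sig C (sig C d) \<in> CN" "sig C (sig C (sig C d)) \<in> CN" using CN_sig dN by auto
  have dG: "d \<in> darts G" "vk G d = Cross" using dN G_darts G_vk_C c by auto
  have "sig G (sig G (sig G (sig G d))) = d \<and> sig G d \<noteq> d \<and> sig G (sig G d) \<noteq> d
     \<and> sig G (sig G (sig G d)) \<noteq> d \<and> dr G (sig G (sig G d)) = opp (dr G d) \<and> dr G d \<noteq> Unor"
    using cokG dG by (simp add: cross_ok_def)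
  thus "sig C (sig C (sig C (sig C d))) = d \<and> sig C d \<noteq> d \<and> sig C (sig C d) \<noteq> d
     \<and> sig C (sig C (sig C d)) \<noteq> d \<and> dr C (sig C (sig C d)) = opp (dr C d) \<and> dr C d \<noteq> Unor"
    using dN s1 G_sig_C G_dr_C by simp
qed

lemma m_in: "x \<in> bT \<Longrightarrow> m x \<in> bC" using m_bij by (meson bij_betwE)
lemma m_inj: "inj_on m bT" using m_bij by (simp add: bij_betw_def)

end

lemma sm_vk_notcross: "vk (smooth M F) n \<noteq> Cross"
  by (simp add: smooth_def Let_def)

context gside begin

lemma XT_TN: "d \<in> darts T \<Longrightarrow> vk T d = Cross \<Longrightarrow> d \<in> TN" by (simp add: bdarts_def)
lemma XC_CN: "d \<in> darts C \<Longrightarrow> vk C d = Cross \<Longrightarrow> d \<in> CN" by (simp add: bdarts_def)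

lemma states_split1:
  assumes F: "F \<in> states G"
  shows "F \<inter> darts T \<in> stT" "F - darts T \<in> states C"
proof -
  have Fs: "F \<subseteq> {d \<in> darts G. vk G d = Cross}"
    and Fc: "\<And>d. d \<in> darts G \<Longrightarrow> vk G d = Cross \<Longrightarrow>
        (d \<in> F \<longleftrightarrow> sig G (sig G d) \<in> F) \<and> (d \<in> F \<longleftrightarrow> sig G d \<notin> F)"
    using F by (auto simp: states_def)
  show "F \<inter> darts T \<in> stT" unfolding stT_def
  proof (intro CollectI conjI)
    show "F \<inter> darts T \<subseteq> {d \<in> darts T. vk T d = Cross}" using Fs G_vk_T by auto
  next
    show "\<forall>d\<in>darts T. vk T d = Cross \<longrightarrow> (d \<in> F \<inter> darts T) = (sig T (sig T d) \<in> F \<inter> darts T) \<and> (d \<in> F \<inter> darts T) = (sig T d \<notin> F \<inter> darts T)"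
    proof (intro ballI impI)
    fix d assume d: "d \<in> darts T" "vk T d = Cross"
    have dG: "d \<in> darts G" "vk G d = Cross" using XT_TN[OF d] G_darts G_vk_T d by auto
    have "sig T d \<in> darts T" "sig T (sig T d) \<in> darts T" using T_sig_in d by auto
    thus "(d \<in> F \<inter> darts T) = (sig T (sig T d) \<in> F \<inter> darts T) \<and> (d \<in> F \<inter> darts T) = (sig T d \<notin> F \<inter> darts T)"
      using Fc[OF dG] d G_sig_T by auto
    qed
  qed
  show "F - darts T \<in> states C" unfolding states_def
  proof (intro CollectI conjI)
    show "F - darts T \<subseteq> {d \<in> darts C. vk C d = Cross}"
    proof
      fix d assume d: "d \<in> F - darts T"
      hence "d \<in> darts G" "vk G d = Cross" "d \<notin> darts T" using Fs by auto
      thus "d \<in> {d \<in> darts C. vk C d = Cross}" using G_darts by (auto simp: glue_vk)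
    qed
  next
    show "\<forall>d\<in>darts C. vk C d = Cross \<longrightarrow> (d \<in> F - darts T) = (sig C (sig C d) \<in> F - darts T) \<and> (d \<in> F - darts T) = (sig C d \<notin> F - darts T)"
    proof (intro ballI impI)
    fix d assume d: "d \<in> darts C" "vk C d = Cross"
    have dN: "d \<in> CN" using XC_CN d by simp
    have dG: "d \<in> darts G" "vk G d = Cross" using dN G_darts G_vk_C d by auto
    have s: "sig C d \<in> CN" "sig C (sig C d) \<in> CN" using CN_sig dN by auto
    show "(d \<in> F - darts T) = (sig C (sig C d) \<in> F - darts T) \<and> (d \<in> F - darts T) = (sig C d \<notin> F - darts T)"
      using Fc[OF dG] dN s G_sig_C CN_notT by auto
    qed
  qed
qed

lemma stT_sub: "A \<in> stT \<Longrightarrow> A \<subseteq> darts T" by (auto simp: stT_def)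
lemma stC_sub: "B \<in> states C \<Longrightarrow> B \<subseteq> CN" by (auto simp: states_def bdarts_def)

lemma states_split2:
  assumes A: "A \<in> stT" and B: "B \<in> states C"
  shows "A \<union> B \<in> states G"
proof -
  have As: "A \<subseteq> {d \<in> darts T. vk T d = Cross}"
    and Ac: "\<And>d. d \<in> darts T \<Longrightarrow> vk T d = Cross \<Longrightarrow>
        (d \<in> A \<longleftrightarrow> sig T (sig T d) \<in> A) \<and> (d \<in> A \<longleftrightarrow> sig T d \<notin> A)"
    using A by (auto simp: stT_def)
  have Bs: "B \<subseteq> {d \<in> darts C. vk C d = Cross}"
    and Bc: "\<And>d. d \<in> darts C \<Longrightarrow> vk C d = Cross \<Longrightarrow>
        (d \<in> B \<longleftrightarrow> sig C (sig C d) \<in> B) \<and> (d \<in> B \<longleftrightarrow> sig C d \<notin> B)"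
    using B by (auto simp: states_def)
  have BT: "\<And>d. d \<in> B \<Longrightarrow> d \<notin> darts T" using stC_sub[OF B] CN_notT by blast
  show ?thesis unfolding states_def
  proof (intro CollectI conjI)
    show "A \<union> B \<subseteq> {d \<in> darts G. vk G d = Cross}"
    proof
      fix d assume "d \<in> A \<union> B"
      thus "d \<in> {d \<in> darts G. vk G d = Cross}"
      proof
        assume "d \<in> A" thus ?thesis using As XT_TN G_darts G_vk_T by auto
      next
        assume d: "d \<in> B" thus ?thesis using Bs XC_CN G_darts G_vk_C by auto
      qed
    qed
  next
    show "\<forall>d\<in>darts G. vk G d = Cross \<longrightarrow> (d \<in> A \<union> B) = (sig G (sig G d) \<in> A \<union> B) \<and> (d \<in> A \<union> B) = (sig G d \<notin> A \<union> B)"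
    proof (intro ballI impI)
    fix d assume d: "d \<in> darts G" "vk G d = Cross"
    show "(d \<in> A \<union> B) = (sig G (sig G d) \<in> A \<union> B) \<and> (d \<in> A \<union> B) = (sig G d \<notin> A \<union> B)"
    proof (cases "d \<in> darts T")
      case True
      have c: "vk T d = Cross" using d True G_vk_T by simp
      have s: "sig T d \<in> darts T" "sig T (sig T d) \<in> darts T" using T_sig_in True by auto
      have "d \<notin> B" "sig T d \<notin> B" "sig T (sig T d) \<notin> B" using BT True s by auto
      thus ?thesis using Ac[OF True c] G_sig_T True s by auto
    next
      case False
      hence dN: "d \<in> CN" using d G_darts by auto
      have c: "vk C d = Cross" using d dN G_vk_C by simp
      have s: "sig C d \<in> CN" "sig C (sig C d) \<in> CN" using CN_sig dN by auto
      have "d \<notin> A" "sig C d \<notin> A" "sig C (sig C d) \<notin> A" using As CN_notT dN s by auto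
      thus ?thesis using Bc[of d] dN c G_sig_C s by auto
    qed
    qed
  qed
qed

lemma sum_states_G:
  "(\<Sum>F\<in>states G. f F) = (\<Sum>B\<in>states C. \<Sum>A\<in>stT. f (A \<union> B))"
proof -
  have bij: "bij_betw (\<lambda>(B, A). A \<union> B) (states C \<times> stT) (states G)"
  proof (rule bij_betw_byWitness[where f' = "\<lambda>F. (F - darts T, F \<inter> darts T)"])
    show "\<forall>p\<in>states C \<times> stT. (\<lambda>F. (F - darts T, F \<inter> darts T)) ((\<lambda>(B, A). A \<union> B) p) = p"
    proof
      fix p assume "p \<in> states C \<times> stT"
      then obtain B A where p: "p = (B, A)" "B \<in> states C" "A \<in> stT" by auto
      have "A \<subseteq> darts T" "B \<inter> darts T = {}" using stT_sub[OF p(3)] stC_sub[OF p(2)] CN_notT by auto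
      thus "(\<lambda>F. (F - darts T, F \<inter> darts T)) ((\<lambda>(B, A). A \<union> B) p) = p" using p by auto
    qed
    show "\<forall>F\<in>states G. (\<lambda>(B, A). A \<union> B) ((\<lambda>F. (F - darts T, F \<inter> darts T)) F) = F" by auto
    show "(\<lambda>(B, A). A \<union> B) ` (states C \<times> stT) \<subseteq> states G" using states_split2 by auto
    show "(\<lambda>F. (F - darts T, F \<inter> darts T)) ` states G \<subseteq> states C \<times> stT" using states_split1 by auto
  qed
  have "(\<Sum>F\<in>states G. f F) = (\<Sum>p\<in>states C \<times> stT. f ((\<lambda>(B, A). A \<union> B) p))"
    using sum.reindex_bij_betw[OF bij, of f] by simp
  also have "\<dots> = (\<Sum>B\<in>states C. \<Sum>A\<in>stT. f (A \<union> B))"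
  proof -
    have fin1: "finite (states C)" "finite stT"
    proof -
      have "states C \<subseteq> Pow (darts C)" by (auto simp: states_def)
      moreover have "finite (darts C)" using wfC by (simp add: wf_map_def)
      ultimately show "finite (states C)" by (meson finite_Pow_iff finite_subset)
      have "stT \<subseteq> Pow (darts T)" by (auto simp: stT_def)
      moreover have "finite (darts T)" using wfT by (simp add: wf_map_def)
      ultimately show "finite stT" by (meson finite_Pow_iff finite_subset)
    qed
    show ?thesis by (simp add: sum.cartesian_product split_def)
  qed
  finally show ?thesis .
qed

lemma G2_darts: "darts (G2 B) = TN \<union> (darts (C' B) - bdarts (C' B))"
  by (simp add: G2_def glue_darts)

lemma C'_vk: "vk (C' B) n \<noteq> Cross"
proof -
  have "vk (C' B) n = vk (smooth C B) (n - K)" by (simp add: C'_def shiftm_def)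
  thus ?thesis using sm_vk_notcross by simp
qed

lemma states_G2: "states (G2 B) = stT"
proof -
  have cr: "{d \<in> darts (G2 B). vk (G2 B) d = Cross} = {d \<in> darts T. vk T d = Cross}"
  proof (intro equalityI subsetI)
    fix d assume d: "d \<in> {d \<in> darts (G2 B). vk (G2 B) d = Cross}"
    show "d \<in> {d \<in> darts T. vk T d = Cross}"
    proof (cases "d \<in> darts T")
      case True thus ?thesis using d by (simp add: G2_def glue_vk)
    next
      case False thus ?thesis using d C'_vk by (simp add: G2_def glue_vk)
    qed
  next
    fix d assume d: "d \<in> {d \<in> darts T. vk T d = Cross}"
    thus "d \<in> {d \<in> darts (G2 B). vk (G2 B) d = Cross}"
      using XT_TN G2_darts by (auto simp: G2_def glue_vk)
  qed
  have sg: "\<And>d. d \<in> darts T \<Longrightarrow> sig (G2 B) d = sig T d" by (simp add: G2_def glue_sig)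
  have vg: "\<And>d. d \<in> darts T \<Longrightarrow> vk (G2 B) d = vk T d" by (simp add: G2_def glue_vk)
  have crd: "\<And>d. d \<in> darts (G2 B) \<and> vk (G2 B) d = Cross \<longleftrightarrow> d \<in> darts T \<and> vk T d = Cross"
    using cr by blast
  have "(\<forall>d\<in>darts (G2 B). vk (G2 B) d = Cross \<longrightarrow>
        (d \<in> F \<longleftrightarrow> sig (G2 B) (sig (G2 B) d) \<in> F) \<and> (d \<in> F \<longleftrightarrow> sig (G2 B) d \<notin> F)) \<longleftrightarrow>
        (\<forall>d\<in>darts T. vk T d = Cross \<longrightarrow>
        (d \<in> F \<longleftrightarrow> sig T (sig T d) \<in> F) \<and> (d \<in> F \<longleftrightarrow> sig T d \<notin> F))" for F
  proof
    assume h: "\<forall>d\<in>darts (G2 B). vk (G2 B) d = Cross \<longrightarrow>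
        (d \<in> F \<longleftrightarrow> sig (G2 B) (sig (G2 B) d) \<in> F) \<and> (d \<in> F \<longleftrightarrow> sig (G2 B) d \<notin> F)"
    show "\<forall>d\<in>darts T. vk T d = Cross \<longrightarrow>
        (d \<in> F \<longleftrightarrow> sig T (sig T d) \<in> F) \<and> (d \<in> F \<longleftrightarrow> sig T d \<notin> F)"
    proof (intro ballI impI)
      fix d assume d: "d \<in> darts T" "vk T d = Cross"
      have "d \<in> darts (G2 B)" "vk (G2 B) d = Cross" using crd d by blast+
      moreover have "sig T d \<in> darts T" using T_sig_in d by simp
      ultimately show "(d \<in> F \<longleftrightarrow> sig T (sig T d) \<in> F) \<and> (d \<in> F \<longleftrightarrow> sig T d \<notin> F)"
        using h sg d by metis
    qed
  next
    assume h: "\<forall>d\<in>darts T. vk T d = Cross \<longrightarrow>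
        (d \<in> F \<longleftrightarrow> sig T (sig T d) \<in> F) \<and> (d \<in> F \<longleftrightarrow> sig T d \<notin> F)"
    show "\<forall>d\<in>darts (G2 B). vk (G2 B) d = Cross \<longrightarrow>
        (d \<in> F \<longleftrightarrow> sig (G2 B) (sig (G2 B) d) \<in> F) \<and> (d \<in> F \<longleftrightarrow> sig (G2 B) d \<notin> F)"
    proof (intro ballI impI)
      fix d assume d: "d \<in> darts (G2 B)" "vk (G2 B) d = Cross"
      have dT: "d \<in> darts T" "vk T d = Cross" using crd d by blast+
      moreover have "sig T d \<in> darts T" using T_sig_in dT by simp
      ultimately show "(d \<in> F \<longleftrightarrow> sig (G2 B) (sig (G2 B) d) \<in> F) \<and> (d \<in> F \<longleftrightarrow> sig (G2 B) d \<notin> F)"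
        using h sg by metis
    qed
  qed
  thus ?thesis unfolding states_def stT_def cr by blast
qed

end

context gside begin

lemma C'_darts: "darts (C' B) = (\<lambda>n. n + K) ` darts (smooth C B)"
  by (simp add: C'_def sh_darts)

lemma C'_fields: "alph (C' B) (n + K) = alph (smooth C B) n + K" "sig (C' B) (n + K) = sig (smooth C B) n + K"
  "vk (C' B) (n + K) = vk (smooth C B) n" "dr (C' B) (n + K) = dr (smooth C B) n"
  "thick (C' B) (n + K) = thick (smooth C B) n" "over (C' B) (n + K) = over (smooth C B) n"
  by (simp_all add: C'_def)

lemma C'_bd: assumes B: "B \<in> states C" shows "bdarts (C' B) = (\<lambda>d. 2 * d + K) ` bC"
proof (intro equalityI subsetI)
  fix n assume "n \<in> bdarts (C' B)"
  hence n: "n \<in> darts (C' B)" "vk (C' B) n = Bdry" by (auto simp: bdarts_def)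
  then obtain k where k: "k \<in> darts (smooth C B)" "n = k + K" using C'_darts by auto
  have vk: "vk (smooth C B) k = Bdry" using n k C'_fields by simp
  show "n \<in> (\<lambda>d. 2 * d + K) ` bC"
  proof (rule sm_dcases[OF k(1)])
    fix d assume d: "d \<in> darts C" "k = 2 * d"
    hence "vk C d = Bdry" using vk by (auto split: if_splits)
    thus ?thesis using d k by (auto simp: bdarts_def)
  next
    fix x assume x: "x \<in> B" "k = Suc (2 * x)"
    have "vk C x = Cross" using x B by (auto simp: states_def)
    thus ?thesis using vk x by (simp split: if_splits)
  qed
next
  fix n assume "n \<in> (\<lambda>d. 2 * d + K) ` bC"
  then obtain d where d: "d \<in> darts C" "vk C d = Bdry" "n = 2 * d + K" by (auto simp: bdarts_def)
  thus "n \<in> bdarts (C' B)" by (auto simp: bdarts_def C'_darts C'_fields[where n = "2 * d" and B = B])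
qed

lemma C'_wf: "B \<in> states C \<Longrightarrow> wf_map (C' B)"
proof -
  assume B: "B \<in> states C"
  interpret sctx C B using wfC cokC B by unfold_locales
  show ?thesis unfolding C'_def by (rule sh_wf[OF wf'])
qed

lemma glue_ok': assumes B: "B \<in> states C" shows "glue_ok T (C' B) m'"
  unfolding glue_ok_def
proof (intro conjI)
  show "wf_map T" by (rule wfT)
  show "wf_map (C' B)" by (rule C'_wf[OF B])
  show "\<exists>x\<in>bT. bT = orb (sig T) x" using gok by (simp add: glue_ok_def)
  have bij2: "bij_betw (\<lambda>d. 2 * d + K) bC ((\<lambda>d. 2 * d + K) ` bC)" by (auto simp: bij_betw_def inj_on_def)
  show "bij_betw m' bT (bdarts (C' B))"
  proof -
    have e: "m' = (\<lambda>x. 2 * m x + K)" by (simp add: m'_def fun_eq_iff)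
    show ?thesis unfolding C'_bd[OF B] e using bij_betw_trans[OF m_bij bij2] by (simp add: comp_def)
  qed
  show "\<forall>x\<in>bT. sig (C' B) (m' (sig T x)) = m' x"
  proof
    fix x assume x: "x \<in> bT"
    have sx: "sig T x \<in> bT" using x T_sig_in T_vk_sig by (auto simp: bdarts_def)
    have ms: "m (sig T x) \<in> bC" using m_in sx by simp
    hence "vk C (m (sig T x)) = Bdry" by (simp add: bdarts_def)
    hence "sig (smooth C B) (2 * m (sig T x)) = 2 * sig C (m (sig T x))" by simp
    thus "sig (C' B) (m' (sig T x)) = m' x"
      using m_sig[OF x] C'_fields(2)[where n = "2 * m (sig T x)" and B = B] by (simp add: m'_def)
  qed
  show "\<forall>x\<in>bT. alph T x \<notin> bT" using bT_alph by blast
  show "TN \<inter> (darts (C' B) - bdarts (C' B)) = {}"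
    using Kb by (auto simp: C'_darts)
qed

lemma C'_nocross: "\<forall>d\<in>darts (C' B). vk (C' B) d \<noteq> Cross" using C'_vk by blast

end

lemma smA_agree:
  assumes e: "e \<in> S" and cl: "\<And>d. d \<in> S \<Longrightarrow> sig M1 d \<in> S"
    and ag: "\<And>d. d \<in> S \<Longrightarrow> sig M2 d = sig M1 d \<and> dr M2 d = dr M1 d \<and> over M2 d = over M1 d"
  shows "smA M2 e = smA M1 e"
proof -
  have o: "orb (sig M2) e = orb (sig M1) e"
    by (rule orb_agree[where S = S]) (use e cl ag in auto)
  have oS: "orb (sig M1) e \<subseteq> S" by (rule orb_sub_closed) (use e cl in auto)
  have "positive M2 e = positive M1 e" unfolding positive_def o
  proof (intro bex_cong refl)
    fix f assume "f \<in> orb (sig M1) e"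
    hence f: "f \<in> S" using oS by blast
    show "(over M2 f \<and> dr M2 f = Out \<and> dr M2 (sig M2 f) = Out) = (over M1 f \<and> dr M1 f = Out \<and> dr M1 (sig M1 f) = Out)"
      using f ag cl by simp
  qed
  thus ?thesis unfolding smA_def using e ag cl by simp
qed

context gside begin

lemma minv': "minv T m' (2 * z + K) = minv T m z"
  by (simp add: minv_def m'_def)

lemma bdC'_e: "B \<in> states C \<Longrightarrow> 2 * z + K \<in> bdarts (C' B) \<longleftrightarrow> z \<in> bC"
  using C'_bd by auto
lemma bdC'_o: "B \<in> states C \<Longrightarrow> Suc (2 * z) + K \<notin> bdarts (C' B)"
  using C'_bd by auto

lemma G2_T: "d \<in> darts T \<Longrightarrow> sig (G2 B) d = sig T d \<and> vk (G2 B) d = vk T d \<and> dr (G2 B) d = dr T d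
   \<and> thick (G2 B) d = thick T d \<and> over (G2 B) d = over T d"
  by (simp add: G2_def glue_sig glue_vk glue_dr glue_thick glue_over)

lemma G2_C: "k + K \<notin> darts T"
  using Kb by fastforce

lemma G2_Cf: "sig (G2 B) (k + K) = sig (smooth C B) k + K \<and> vk (G2 B) (k + K) = vk (smooth C B) k
   \<and> dr (G2 B) (k + K) = dr (smooth C B) k \<and> thick (G2 B) (k + K) = thick (smooth C B) k
   \<and> over (G2 B) (k + K) = over (smooth C B) k"
  using G2_C[of k] by (simp add: G2_def glue_sig glue_vk glue_dr glue_thick glue_over C'_fields)

lemma G2_alph_T: assumes B: "B \<in> states C" and d: "d \<in> darts T"
  shows "alph (G2 B) d = (if alph T d \<in> bT then (if alph C (m (alph T d)) \<in> bC then alph T (minv T m (alph C (m (alph T d))))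
      else 2 * alph C (m (alph T d)) + K) else alph T d)"
proof -
  have "alph (C' B) (m' (alph T d)) = 2 * alph C (m (alph T d)) + K"
    using C'_fields(1)[where n = "2 * m (alph T d)" and B = B] by (simp add: m'_def)
  thus ?thesis using d bdC'_e[OF B] minv' by (simp add: G2_def glue_alph Let_def)
qed

lemma G2_alph_Ce: assumes B: "B \<in> states C"
  shows "alph (G2 B) (2 * c + K) = (if alph C c \<in> bC then alph T (minv T m (alph C c)) else 2 * alph C c + K)"
proof -
  have "alph (C' B) (2 * c + K) = 2 * alph C c + K" using C'_fields(1)[where n = "2 * c" and B = B] by simp
  thus ?thesis using G2_C[of "2 * c"] bdC'_e[OF B] minv' by (simp add: G2_def glue_alph Let_def)
qed

lemma G2_alph_Co: assumes B: "B \<in> states C"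
  shows "alph (G2 B) (Suc (2 * y) + K) = Suc (2 * sig C (sig C y)) + K"
proof -
  have "alph (C' B) (Suc (2 * y) + K) = Suc (2 * sig C (sig C y)) + K"
    using C'_fields(1)[where n = "Suc (2 * y)" and B = B] by simp
  thus ?thesis using G2_C[of "Suc (2 * y)"] bdC'_o[OF B] by (simp add: G2_def glue_alph Let_def)
qed

lemma G_alph_T: "d \<in> darts T \<Longrightarrow> alph G d = (if alph T d \<in> bT then (if alph C (m (alph T d)) \<in> bC then alph T (minv T m (alph C (m (alph T d))))
      else alph C (m (alph T d))) else alph T d)"
  by (simp add: glue_alph Let_def)

lemma G_alph_C: "c \<in> CN \<Longrightarrow> alph G c = (if alph C c \<in> bC then alph T (minv T m (alph C c)) else alph C c)"
  using CN_notT by (simp add: glue_alph Let_def)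

lemma minv_in: "z \<in> bC \<Longrightarrow> minv T m z \<in> bT"
proof -
  assume z: "z \<in> bC"
  obtain x where x: "x \<in> bT" "m x = z" using m_bij z by (metis bij_betw_iff_bijections)
  thus ?thesis using minv_eq[OF x(1) m_inj] by simp
qed

lemma bT_T: "x \<in> bT \<Longrightarrow> x \<in> darts T" by (simp add: bdarts_def)
lemma bC_C: "x \<in> bC \<Longrightarrow> x \<in> darts C" by (simp add: bdarts_def)

end

definition tw :: "nat \<Rightarrow> nat" where "tw k = 2 * k"

definition chi :: "nat set \<Rightarrow> nat \<Rightarrow> nat \<Rightarrow> nat" where
  "chi X K n = (if n div 2 \<in> X then n else tw (n + K))"

context gside begin

lemma chi_e_T[simp]: "t \<in> darts T \<Longrightarrow> chi (darts T) K (2 * t) = 2 * t" by (simp add: chi_def)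
lemma chi_o_T[simp]: "t \<in> darts T \<Longrightarrow> chi (darts T) K (Suc (2 * t)) = Suc (2 * t)" by (simp add: chi_def)
lemma chi_e_N[simp]: "t \<notin> darts T \<Longrightarrow> chi (darts T) K (2 * t) = tw (2 * t + K)" by (simp add: chi_def)
lemma chi_o_N[simp]: "t \<notin> darts T \<Longrightarrow> chi (darts T) K (Suc (2 * t)) = tw (Suc (2 * t) + K)" by (simp add: chi_def)

lemma S2C_fields: "alph (smooth N F) (tw k) = 2 * alph N k"
  "vk N k \<noteq> Cross \<Longrightarrow> sig (smooth N F) (tw k) = tw (sig N k)"
  "vk (smooth N F) (tw k) = (if vk N k = Cross then (if smA N (firstd N F k) then EmptyV else SolidV) else vk N k)"
  "dr (smooth N F) (tw k) = dr N k" "thick (smooth N F) (tw k) = thick N k" "over (smooth N F) (tw k) = False"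
  by (simp_all add: tw_def)

context
  fixes A B assumes A: "A \<in> stT" and B: "B \<in> states C"
begin

lemma AT: "x \<in> A \<Longrightarrow> x \<in> darts T \<and> vk T x = Cross" using A by (auto simp: stT_def)
lemma BC: "y \<in> B \<Longrightarrow> y \<in> CN \<and> vk C y = Cross" using B by (auto simp: states_def bdarts_def)
lemma B_notT: "y \<in> B \<Longrightarrow> y \<notin> darts T" using BC CN_notT by blast

lemma smA_GT: "e \<in> darts T \<Longrightarrow> smA G e = smA T e"
  by (rule smA_agree[where S = "darts T"]) (use T_sig_in G_sig_T G_dr_T G_over_T in auto)
lemma smA_G2T: "e \<in> darts T \<Longrightarrow> smA (G2 B) e = smA T e"
  by (rule smA_agree[where S = "darts T"]) (use T_sig_in G2_T in auto)
lemma smA_GC: "e \<in> CN \<Longrightarrow> smA G e = smA C e"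
  by (rule smA_agree[where S = CN]) (use CN_sig G_sig_C G_dr_C G_over_C in auto)

lemma fd_T: "t \<in> darts T \<Longrightarrow> firstd G (A \<union> B) t = firstd (G2 B) A t \<and> firstd (G2 B) A t \<in> darts T"
  using B_notT T_sig_in G_sig_T G2_T by (auto simp: firstd_simp)
lemma fd_C: "c \<in> CN \<Longrightarrow> firstd G (A \<union> B) c = firstd C B c \<and> firstd C B c \<in> CN"
  using AT CN_notT CN_sig G_sig_C by (auto simp: firstd_simp)

lemma vk_T: "t \<in> darts T \<Longrightarrow> vk (smooth G (A \<union> B)) (2 * t) = vk (smooth (G2 B) A) (2 * t)
    \<and> vk (smooth G (A \<union> B)) (Suc (2 * t)) = vk (smooth (G2 B) A) (Suc (2 * t))"
proof -
  assume t: "t \<in> darts T"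
  have f: "firstd G (A \<union> B) t = firstd (G2 B) A t" "firstd (G2 B) A t \<in> darts T" using fd_T[OF t] by auto
  show ?thesis using t f smA_GT smA_G2T G_vk_T G2_T by simp
qed


lemma G2_vkC: "vk (G2 B) (k + K) = vk (smooth C B) k" "vk (G2 B) (k + K) \<noteq> Cross"
  using G2_Cf[of B k] sm_vk_notcross[of C B k] by simp_all

lemma vk_C: "c \<in> CN \<Longrightarrow> vk (smooth G (A \<union> B)) (2 * c) = vk (smooth (G2 B) A) (tw (2 * c + K))"
proof -
  assume c: "c \<in> CN"
  have f: "firstd G (A \<union> B) c = firstd C B c" "firstd C B c \<in> CN" using fd_C[OF c] by auto
  have "vk (smooth (G2 B) A) (tw (2 * c + K)) = vk (smooth C B) (2 * c)"
    unfolding S2C_fields(3) using G2_vkC[of "2 * c"] by (simp only: if_False)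
  thus ?thesis using c f smA_GC G_vk_C by simp
qed

lemma vk_B: "y \<in> B \<Longrightarrow> vk (smooth G (A \<union> B)) (Suc (2 * y)) = vk (smooth (G2 B) A) (tw (Suc (2 * y) + K))"
proof -
  assume y: "y \<in> B"
  have c: "y \<in> CN" using BC y by blast
  have f: "firstd G (A \<union> B) y = firstd C B y" "firstd C B y \<in> CN" using fd_C[OF c] by auto
  have "vk (smooth (G2 B) A) (tw (Suc (2 * y) + K)) = vk (smooth C B) (Suc (2 * y))"
    unfolding S2C_fields(3) using G2_vkC[of "Suc (2 * y)"] by (simp only: if_False)
  thus ?thesis using c f smA_GC G_vk_C by simp
qed


lemma chi_isom: "isom (chi (darts T) K) (smooth G (A \<union> B)) (smooth (G2 B) A)"
proof -
  let ?S1 = "smooth G (A \<union> B)" and ?S2 = "smooth (G2 B) A" and ?c = "chi (darts T) K"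
  have d1: "darts ?S1 = (\<lambda>d. 2 * d) ` (TN \<union> CN) \<union> (\<lambda>x. 2 * x + 1) ` (A \<union> B)"
    by (simp add: sm_darts G_darts)
  have dC': "darts (C' B) - bdarts (C' B) = (\<lambda>c. 2 * c + K) ` CN \<union> (\<lambda>y. Suc (2 * y) + K) ` B"
  proof (intro equalityI subsetI)
    fix n assume n: "n \<in> darts (C' B) - bdarts (C' B)"
    then obtain k where k: "k \<in> darts (smooth C B)" "n = k + K" using C'_darts by auto
    have nb: "n \<notin> (\<lambda>d. 2 * d + K) ` bC" using n C'_bd[OF B] by blast
    show "n \<in> (\<lambda>c. 2 * c + K) ` CN \<union> (\<lambda>y. Suc (2 * y) + K) ` B"
    proof (rule sm_dcases[OF k(1)])
      fix d assume d: "d \<in> darts C" "k = 2 * d"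
      hence "d \<notin> bC" using nb k by auto
      thus ?thesis using d k by auto
    next
      fix x assume "x \<in> B" "k = Suc (2 * x)" thus ?thesis using k by auto
    qed
  next
    fix n assume n: "n \<in> (\<lambda>c. 2 * c + K) ` CN \<union> (\<lambda>y. Suc (2 * y) + K) ` B"
    show "n \<in> darts (C' B) - bdarts (C' B)"
    proof (rule UnE[OF n])
      assume "n \<in> (\<lambda>c. 2 * c + K) ` CN"
      then obtain c where c: "c \<in> CN" "n = 2 * c + K" by blast
      have "n \<in> darts (C' B)" using c by (auto simp: C'_darts sm_darts)
      moreover have "n \<notin> bdarts (C' B)" using c bdC'_e[OF B] by simp
      ultimately show ?thesis by blast
    next
      assume "n \<in> (\<lambda>y. Suc (2 * y) + K) ` B"
      then obtain y where y: "y \<in> B" "n = Suc (2 * y) + K" by blast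
      have "n \<in> darts (C' B)" using y by (auto simp: C'_darts sm_darts)
      moreover have "n \<notin> bdarts (C' B)" using y bdC'_o[OF B] by simp
      ultimately show ?thesis by blast
    qed
  qed
  have d2: "darts ?S2 = (\<lambda>d. 2 * d) ` (TN \<union> ((\<lambda>c. 2 * c + K) ` CN \<union> (\<lambda>y. Suc (2 * y) + K) ` B))
      \<union> (\<lambda>x. 2 * x + 1) ` A"
    by (simp add: sm_darts G2_darts dC')
  have img: "?c ` darts ?S1 = darts ?S2"
  proof -
    have e1: "?c ` darts ?S1 = (\<lambda>d. 2 * d) ` TN \<union> (\<lambda>c. 2 * (2 * c + K)) ` CN \<union>
        (\<lambda>x. 2 * x + 1) ` A \<union> (\<lambda>y. 2 * (Suc (2 * y) + K)) ` B"
      unfolding d1 image_Un image_image using CN_notT AT B_notT by (auto simp: image_iff chi_def tw_def)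
    have e2: "darts ?S2 = (\<lambda>d. 2 * d) ` TN \<union> ((\<lambda>c. 2 * (2 * c + K)) ` CN \<union> (\<lambda>y. 2 * (Suc (2 * y) + K)) ` B)
      \<union> (\<lambda>x. 2 * x + 1) ` A"
      unfolding d2 image_Un image_image by (rule refl)
    show ?thesis unfolding e1 e2 by blast
  qed
  have inj: "inj_on ?c (darts ?S1)"
  proof (rule inj_onI)
    fix n1 n2 assume n1: "n1 \<in> darts ?S1" and n2: "n2 \<in> darts ?S1" and eq: "?c n1 = ?c n2"
    show "n1 = n2"
    proof (cases "n1 div 2 \<in> darts T"; cases "n2 div 2 \<in> darts T")
      assume "n1 div 2 \<in> darts T" "n2 div 2 \<in> darts T" thus ?thesis using eq by (simp add: chi_def)
    next
      assume "n1 div 2 \<notin> darts T" "n2 div 2 \<notin> darts T" thus ?thesis using eq by (simp add: chi_def tw_def)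
    next
      assume h: "n1 div 2 \<in> darts T" "n2 div 2 \<notin> darts T"
      hence "n1 = 2 * (n2 + K)" using eq by (simp add: chi_def tw_def)
      hence "n1 div 2 = n2 + K" by simp
      thus ?thesis using h Kb by fastforce
    next
      assume h: "n1 div 2 \<notin> darts T" "n2 div 2 \<in> darts T"
      hence "n2 = 2 * (n1 + K)" using eq by (simp add: chi_def tw_def)
      hence "n2 div 2 = n1 + K" by simp
      thus ?thesis using h Kb by fastforce
    qed
  qed
  show ?thesis unfolding isom_def
  proof (rule conjI)
    show "bij_betw ?c (darts ?S1) (darts ?S2)" using inj img by (simp add: bij_betw_def)
  next
    show "\<forall>n\<in>darts ?S1. ?c (alph ?S1 n) = alph ?S2 (?c n) \<and> ?c (sig ?S1 n) = sig ?S2 (?c n)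
        \<and> vk ?S2 (?c n) = vk ?S1 n \<and> dr ?S2 (?c n) = dr ?S1 n
        \<and> thick ?S2 (?c n) = thick ?S1 n \<and> over ?S2 (?c n) = over ?S1 n"
    proof (rule ballI)
    fix n assume n: "n \<in> darts ?S1"
    show "?c (alph ?S1 n) = alph ?S2 (?c n) \<and> ?c (sig ?S1 n) = sig ?S2 (?c n)
        \<and> vk ?S2 (?c n) = vk ?S1 n \<and> dr ?S2 (?c n) = dr ?S1 n
        \<and> thick ?S2 (?c n) = thick ?S1 n \<and> over ?S2 (?c n) = over ?S1 n"
    proof (rule sm_dcases[OF n])
      fix d assume dG: "d \<in> darts G" and nd: "n = 2 * d"
      show ?thesis
      proof (cases "d \<in> darts T")
        case True
        note t = True
        have sT: "sig T d \<in> darts T" "sig T (sig T d) \<in> darts T" "sig T (sig T (sig T d)) \<in> darts T"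
          using T_sig_in t by auto
        have dB: "d \<notin> B" using B_notT t by blast
        have al: "?c (2 * alph G d) = 2 * alph (G2 B) d"
        proof -
          have aT: "alph T d \<in> darts T" using T_alph_in t by simp
          show ?thesis
          proof (cases "alph T d \<in> bT")
            case False thus ?thesis using t aT G_alph_T G2_alph_T[OF B] by simp
          next
            case y: True
            show ?thesis
            proof (cases "alph C (m (alph T d)) \<in> bC")
              case True
              have "minv T m (alph C (m (alph T d))) \<in> darts T" using minv_in[OF True] bT_T by blast
              hence "alph T (minv T m (alph C (m (alph T d)))) \<in> darts T" using T_alph_in by blast
              thus ?thesis using t y True G_alph_T G2_alph_T[OF B] by simp
            next
              case False
              have "alph C (m (alph T d)) \<in> darts C" using C_alph_in bC_C m_in y by blast
              hence "alph C (m (alph T d)) \<in> CN" using False by blast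
              hence "alph C (m (alph T d)) \<notin> darts T" using CN_notT by blast
              thus ?thesis using t y False G_alph_T G2_alph_T[OF B] by (simp add: tw_def)
            qed
          qed
        qed
        have sg: "?c (sig ?S1 (2 * d)) = sig ?S2 (2 * d)"
          using t sT dB G_sig_T G_vk_T G2_T by simp
        have oth: "dr ?S2 (2 * d) = dr ?S1 (2 * d) \<and> thick ?S2 (2 * d) = thick ?S1 (2 * d)"
          using t G_dr_T G_thick_T G2_T by simp
        show ?thesis using nd t al sg oth vk_T[OF t] by simp
      next
        case False
        note f = False
        hence c: "d \<in> CN" using dG G_darts by blast
        have sC: "sig C d \<in> CN" "sig C (sig C d) \<in> CN" "sig C (sig C (sig C d)) \<in> CN"
          using CN_sig c by auto
        have sCT: "sig C d \<notin> darts T" "sig C (sig C (sig C d)) \<notin> darts T" using sC CN_notT by auto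
        have dA: "d \<notin> A" using AT f by blast
        have cn: "?c n = tw (2 * d + K)" using nd f by simp
        have al: "?c (alph ?S1 n) = alph ?S2 (?c n)"
        proof -
          have r: "alph ?S2 (?c n) = 2 * (if alph C d \<in> bC then alph T (minv T m (alph C d)) else 2 * alph C d + K)"
            unfolding cn S2C_fields(1) using G2_alph_Ce[OF B] by simp
          show ?thesis
          proof (cases "alph C d \<in> bC")
            case True
            have "minv T m (alph C d) \<in> darts T" using minv_in[OF True] bT_T by blast
            hence "alph T (minv T m (alph C d)) \<in> darts T" using T_alph_in by blast
            thus ?thesis using r True G_alph_C[OF c] nd by simp
          next
            case False
            have "alph C d \<in> darts C" using C_alph_in c by blast
            hence "alph C d \<notin> darts T" using False CN_notT by blast
            thus ?thesis using r False G_alph_C[OF c] nd by (simp add: tw_def)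
          qed
        qed
        have sg: "?c (sig ?S1 n) = sig ?S2 (?c n)"
        proof -
          have "sig ?S2 (?c n) = tw (sig (G2 B) (2 * d + K))"
            unfolding cn by (rule S2C_fields(2)[OF G2_vkC(2)])
          also have "\<dots> = tw (sig (smooth C B) (2 * d) + K)" using G2_Cf[of B "2 * d"] by simp
          finally show ?thesis using nd c sC sCT dA G_sig_C G_vk_C by simp
        qed
        have oth: "dr ?S2 (?c n) = dr ?S1 n \<and> thick ?S2 (?c n) = thick ?S1 n
           \<and> over ?S2 (?c n) = over ?S1 n"
          unfolding cn S2C_fields using nd c G_dr_C G_thick_C G2_Cf[of B "2 * d"] by simp
        show ?thesis using al sg oth vk_C[OF c] cn nd by simp
      qed
    next
      fix x assume x: "x \<in> A \<union> B" and nx: "n = Suc (2 * x)"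
      show ?thesis
      proof (cases "x \<in> A")
        case True
        have t: "x \<in> darts T" using AT True by blast
        have sT: "sig T x \<in> darts T" "sig T (sig T x) \<in> darts T" using T_sig_in t by auto
        have "?c (alph ?S1 n) = alph ?S2 (?c n)" using nx t sT G_sig_T G2_T by simp
        moreover have "?c (sig ?S1 n) = sig ?S2 (?c n)" using nx t by simp
        moreover have "dr ?S2 (?c n) = dr ?S1 n \<and> thick ?S2 (?c n) = thick ?S1 n \<and> over ?S2 (?c n) = over ?S1 n"
          using nx t sT G_sig_T G_dr_T G2_T by simp
        ultimately show ?thesis using nx t vk_T[OF t] by simp
      next
        case False
        hence y: "x \<in> B" using x by blast
        have c: "x \<in> CN" using BC y by blast
        have xT: "x \<notin> darts T" using CN_notT c by blast
        have sC: "sig C x \<in> CN" "sig C (sig C x) \<in> CN" using CN_sig c by auto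
        have sCT: "sig C (sig C x) \<notin> darts T" using sC CN_notT by auto
        have cn: "?c n = tw (Suc (2 * x) + K)" using nx xT by simp
        have al: "?c (alph ?S1 n) = alph ?S2 (?c n)"
        proof -
          have "alph ?S2 (?c n) = 2 * (Suc (2 * sig C (sig C x)) + K)"
            unfolding cn S2C_fields(1) using G2_alph_Co[OF B] by simp
          thus ?thesis using nx c sC sCT G_sig_C by (simp add: tw_def)
        qed
        have sg: "?c (sig ?S1 n) = sig ?S2 (?c n)"
        proof -
          have "sig ?S2 (?c n) = tw (sig (G2 B) (Suc (2 * x) + K))"
            unfolding cn by (rule S2C_fields(2)[OF G2_vkC(2)])
          also have "\<dots> = tw (2 * x + K)" using G2_Cf[of B "Suc (2 * x)"] by simp
          finally show ?thesis using nx xT by simp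
        qed
        have oth: "dr ?S2 (?c n) = dr ?S1 n \<and> thick ?S2 (?c n) = thick ?S1 n \<and> over ?S2 (?c n) = over ?S1 n"
          unfolding cn S2C_fields using nx xT c sC G_dr_C G_sig_C G2_Cf[of B "Suc (2 * x)"] by simp
        show ?thesis using al sg oth vk_B[OF y] cn nx by simp
      qed
    qed
    qed
  qed
qed

end
end

context gside begin

lemma lg_pair: assumes A: "A \<in> stT" and B: "B \<in> states C"
  shows "is_lg (smooth G (A \<union> B)) \<and> is_lg (smooth (G2 B) A) \<and> iso (smooth G (A \<union> B)) (smooth (G2 B) A)"
proof -
  have l1: "is_lg (smooth G (A \<union> B))" using lgG states_split2[OF A B] by blast
  have w1: "wf_map (smooth G (A \<union> B))" using l1 by (simp add: is_lg_def)
  have i: "isom (chi (darts T) K) (smooth G (A \<union> B)) (smooth (G2 B) A)" by (rule chi_isom[OF A B])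
  interpret ictx "chi (darts T) K" "smooth G (A \<union> B)" "smooth (G2 B) A" using i w1 by unfold_locales
  show ?thesis using l1 lg_transfer i by (auto simp: iso_isom)
qed

lemma lg_G2: "B \<in> states C \<Longrightarrow> F \<in> states (G2 B) \<Longrightarrow> is_lg (smooth (G2 B) F)"
  using lg_pair states_G2 by blast

lemma decomp: "lbracket G - (\<Sum>B\<in>states C. lbracket (G2 B)) \<in> lrel s1 s2 ht or3"
proof -
  have "lbracket G - (\<Sum>B\<in>states C. lbracket (G2 B)) =
     (\<Sum>B\<in>states C. \<Sum>A\<in>stT. gen (smooth G (A \<union> B)) - gen (smooth (G2 B) A))"
    unfolding lbracket_def sum_states_G states_G2 by (simp add: sum_subtractf)
  also have "\<dots> \<in> lrel s1 s2 ht or3"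
  proof (rule lrel_sum, rule lrel_sum)
    fix B A assume B: "B \<in> states C" and A: "A \<in> stT"
    show "gen (smooth G (A \<union> B)) - gen (smooth (G2 B) A) \<in> lrel s1 s2 ht or3"
      using lg_pair[OF A B] lrel.rel_iso by blast
  qed
  finally show ?thesis .
qed

lemma G2_unf: "G2 B = glue T (shiftm K (smooth C B)) (\<lambda>x. 2 * m x + K)"
  by (simp add: G2_def C'_def m'_def[abs_def])

lemma glue_ok'': "B \<in> states C \<Longrightarrow> glue_ok T (shiftm K (smooth C B)) (\<lambda>x. 2 * m x + K)"
  using glue_ok' by (simp add: C'_def m'_def[abs_def])

lemma nocross'': "\<forall>d\<in>darts (shiftm K (smooth C B)). vk (shiftm K (smooth C B)) d \<noteq> Cross"
  using C'_nocross by (simp add: C'_def)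

lemma lg_G2'': "B \<in> states C \<Longrightarrow> \<forall>F\<in>states (glue T (shiftm K (smooth C B)) (\<lambda>x. 2 * m x + K)).
   is_lg (smooth (glue T (shiftm K (smooth C B)) (\<lambda>x. 2 * m x + K)) F)"
  using lg_G2 G2_unf by metis

lemma decomp'': "lbracket G - (\<Sum>B\<in>states C. lbracket (glue T (shiftm K (smooth C B)) (\<lambda>x. 2 * m x + K)))
   \<in> lrel s1 s2 ht or3"
  using decomp G2_unf by simp

end

lemma gside_from_kd:
  assumes k: "is_kd M" and i: "iso M (glue T C m)" and gok: "glue_ok T C m"
    and Kb: "\<And>d. d \<in> darts T \<Longrightarrow> d < K"
  shows "gside T C m K"
proof -
  obtain \<phi> where ph: "isom \<phi> M (glue T C m)" using i by (auto simp: iso_isom)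
  interpret ictx \<phi> M "glue T C m" using ph kd_wf[OF k] by unfold_locales
  show ?thesis
  proof (unfold_locales)
    show "glue_ok T C m" by (rule gok)
    show "wf_map (glue T C m)" by (rule wfN)
    show "cross_ok (glue T C m)" by (rule cross_ok_transfer[OF ph kd_wf[OF k] kd_cross_ok[OF k]])
    show "\<And>d. d \<in> darts (glue T C m) \<Longrightarrow> vk (glue T C m) d \<noteq> Bdry"
    proof -
      fix d assume "d \<in> darts (glue T C m)"
      then obtain e where e: "e \<in> darts M" "d = \<phi> e" by (rule D'_cases)
      have "vk M e \<in> {Tail, Head, Cross, Mark}" using k e by (simp add: is_kd_def)
      thus "vk (glue T C m) d \<noteq> Bdry" using e by auto
    qed
    show "\<And>F. F \<in> states (glue T C m) \<Longrightarrow> is_lg (smooth (glue T C m) F)"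
      by (rule lg_states_transfer[OF lg_smooth[OF k]])
    show "\<And>d. d \<in> darts T \<Longrightarrow> d < K" by (rule Kb)
  qed
qed

lemma step_rmove:
  assumes k: "is_kd M" and k': "is_kd M'" and TT: "(T, T') \<in> chosen_moves s1 s2 ht or3"
    and r: "rmove T T' M M'"
  shows "lbracket M - lbracket M' \<in> lrel s1 s2 ht or3"
proof -
  obtain C m where g1: "glue_ok T C m" and g2: "glue_ok T' C m"
    and i1: "iso M (glue T C m)" and i2: "iso M' (glue T' C m)"
    using r by (auto simp: rmove_def)
  have fT: "finite (darts T)" "finite (darts T')" using g1 g2 by (auto simp: glue_ok_def wf_map_def)
  define K where "K = Suc (Max (darts T \<union> darts T'))"
  have Kb1: "\<And>d. d \<in> darts T \<Longrightarrow> d < K" unfolding K_def using fT by (simp add: le_imp_less_Suc)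
  have Kb2: "\<And>d. d \<in> darts T' \<Longrightarrow> d < K" unfolding K_def using fT by (simp add: le_imp_less_Suc)
  interpret s1: gside T C m K by (rule gside_from_kd[OF k i1 g1 Kb1])
  interpret s2: gside T' C m K by (rule gside_from_kd[OF k' i2 g2 Kb2])
  let ?C' = "\<lambda>B. shiftm K (smooth C B)" and ?m' = "\<lambda>x. 2 * m x + K"
  have a1: "lbracket M - lbracket (glue T C m) \<in> lrel s1 s2 ht or3" by (rule step_iso[OF k i1])
  have a2: "lbracket M' - lbracket (glue T' C m) \<in> lrel s1 s2 ht or3" by (rule step_iso[OF k' i2])
  have b1: "lbracket (glue T C m) - (\<Sum>B\<in>states C. lbracket (glue T (?C' B) ?m')) \<in> lrel s1 s2 ht or3"
    by (rule s1.decomp'')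
  have b2: "lbracket (glue T' C m) - (\<Sum>B\<in>states C. lbracket (glue T' (?C' B) ?m')) \<in> lrel s1 s2 ht or3"
    by (rule s2.decomp'')
  have c: "(\<Sum>B\<in>states C. lbracket (glue T (?C' B) ?m') - lbracket (glue T' (?C' B) ?m')) \<in> lrel s1 s2 ht or3"
  proof (rule lrel_sum)
    fix B assume B: "B \<in> states C"
    show "lbracket (glue T (?C' B) ?m') - lbracket (glue T' (?C' B) ?m') \<in> lrel s1 s2 ht or3"
      by (rule lrel.rel_loc[OF TT s1.glue_ok''[OF B] s2.glue_ok''[OF B] s1.nocross'' s1.lg_G2''[OF B] s2.lg_G2''[OF B]])
  qed
  have eq: "lbracket M - lbracket M' =
     (lbracket M - lbracket (glue T C m)) - (lbracket M' - lbracket (glue T' C m))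
     + (lbracket (glue T C m) - (\<Sum>B\<in>states C. lbracket (glue T (?C' B) ?m')))
     - (lbracket (glue T' C m) - (\<Sum>B\<in>states C. lbracket (glue T' (?C' B) ?m')))
     + (\<Sum>B\<in>states C. lbracket (glue T (?C' B) ?m') - lbracket (glue T' (?C' B) ?m'))"
    by (simp add: sum_subtractf)
  show ?thesis unfolding eq
    by (intro lrel.rel_add lrel_diff a1 a2 b1 b2 c)
qed

lemma step_ok: "kd_step (chosen_moves s1 s2 ht or3) M M' \<Longrightarrow> lbracket M - lbracket M' \<in> lrel s1 s2 ht or3"
  unfolding kd_step_def using step_iso step_subdiv step_rmove by blast

theorem theorem8:
  fixes D D' :: dmap and s1 s2 :: bool and ht :: "nat \<Rightarrow> nat" and or3 :: "nat \<Rightarrow> bool"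
  assumes "heights_ok ht"
    and "generating s1 s2 ht or3"
    and "is_kd D" and "no_marks D"
    and "is_kd D'" and "no_marks D'"
    and "same_sph_knotoid D D'"
  shows "SG_eq s1 s2 ht or3 (lbracket D) (lbracket D')"
proof -
  have e: "equivclp (kd_step (chosen_moves s1 s2 ht or3)) D D'"
    using assms(2,7) by (simp add: generating_def)
  have "(symclp (kd_step (chosen_moves s1 s2 ht or3)))\<^sup>*\<^sup>* D D'" using e by (simp add: equivclp_def)
  hence "lbracket D - lbracket D' \<in> lrel s1 s2 ht or3"
  proof (induction rule: rtranclp_induct)
    case base
    have "lbracket D - lbracket D = 0" by simp
    then show ?case using lrel.rel_zero by metis
  next
    case (step y z)
    have "lbracket y - lbracket z \<in> lrel s1 s2 ht or3"
      using step(2) step_ok lrel_neg' unfolding symclp_def by blast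
    then show ?case using lrel_add3 step(3) by blast
  qed
  thus ?thesis by (simp add: SG_eq_def)
qed

end
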